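(* Let $X$, $Y_k$ ($k\in\mathbb N$) and norms $\|\cdot\|_{X\oplus Y_k}$ be as in the generalized $\ell^2$-sum setting, and suppose the dual of $(X\oplus Y_k,\|\cdot\|_{X\oplus Y_k})$ is Fréchet smooth for every $k\in\mathbb N$. Then the dual norm of $\|\cdot\|_\Sigma$ is Fréchet differentiable at every $z^*\in\Lambda(X\oplus Y_k)\cap S_{(\Sigma(X\oplus Y_k))^*}$, $z^*=x^*+\sum_ky_k^*$ (with $x^*\in X^*$, $y_k^*\in Y_k^*$), for which $\|x^*\|_X<1$.
   Context: Setting: $(X,\|\cdot\|_X)$ and $(Y_k,\|\cdot\|_{Y_k})$, $k\in\mathbb N$, are Banach spaces; for each $k$, $\|\cdot\|_{X\oplus Y_k}$ is a norm on $X\oplus Y_k$ coinciding with $\|\cdot\|_X$ on $X$ and with $\|\cdot\|_{Y_k}$ on $Y_k$, and monotone: $\|x+y_k\|_{X\oplus Y_k}\ge\|x\|_X$. Duals of direct sums are identified with direct sums of duals via $(x^*+y^* )(x+y)=x^*(x)+y^*(y)$. $\Lambda(X\oplus Y_k)$ is the set of functionals $x^*+\sum_k\alpha_ky_k^*$ with $x^*\in X^*$, $y_k^*\in Y_k^*$, $\|x^*+y_k^*\|_{X\oplus Y_k}\le1$ for all $k$, $0\le\alpha_k\le1$, $\sum\alpha_k^2\le1$. $\Sigma(X\oplus Y_k)=\{x+y_1+y_2+\dots:x\in X,y_k\in Y_k,\sum\|y_k\|_{Y_k}^2<\infty\}$ with $\|z\|_\Sigma=\sup\{|z^*(z)|:z^*\in\Lambda(X\oplus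 Y_k)\}$. $S_{(\Sigma(X\oplus Y_k))^*}$ is the unit sphere of the dual of $(\Sigma(X\oplus Y_k),\|\cdot\|_\Sigma)$. A dual is Fréchet smooth if the dual norm is Fréchet differentiable at every nonzero point. *)

theory Defs
  imports "HOL-Analysis.Analysis"
begin

text \<open>Generic machinery: a linear subspace V of a space with addition pl and scalar
  multiplication sc, carrying a norm n.  Continuous linear functionals on V are
  represented as real-valued functions that are linear and bounded on V and vanish off V.\<close>

definition lin_fun_on :: "('v \<Rightarrow> 'v \<Rightarrow> 'v) \<Rightarrow> (real \<Rightarrow> 'v \<Rightarrow> 'v) \<Rightarrow> 'v set \<Rightarrow> ('v \<Rightarrow> real) \<Rightarrow> bool" where
  "lin_fun_on pl sc V f \<longleftrightarrow>
     (\<forall>u\<in>V. \<forall>v\<in>V. f (pl u v) = f u + f v) \<and> (\<forall>a. \<forall>v\<in>V. f (sc a v) = a * f v)"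

definition dual_sp :: "('v \<Rightarrow> 'v \<Rightarrow> 'v) \<Rightarrow> (real \<Rightarrow> 'v \<Rightarrow> 'v) \<Rightarrow> 'v set \<Rightarrow> ('v \<Rightarrow> real) \<Rightarrow> ('v \<Rightarrow> real) set" where
  "dual_sp pl sc V n = {f. (\<forall>v. v \<notin> V \<longrightarrow> f v = 0) \<and> lin_fun_on pl sc V f \<and>
                          (\<exists>C. \<forall>v\<in>V. \<bar>f v\<bar> \<le> C * n v)}"

text \<open>Dual norm of a functional.\<close>
definition dual_norm :: "'v set \<Rightarrow> ('v \<Rightarrow> real) \<Rightarrow> ('v \<Rightarrow> real) \<Rightarrow> real" where
  "dual_norm V n f = (SUP v\<in>{v\<in>V. n v \<le> 1}. \<bar>f v\<bar>)"

text \<open>Frechet differentiability of the dual norm (as a function on the dual space) at f: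
  there is a bounded linear functional L on the dual space with
  dual_norm (f + h) - dual_norm f - L h = o(dual_norm h).\<close>
definition frechet_diff_dual_norm ::
  "('v \<Rightarrow> 'v \<Rightarrow> 'v) \<Rightarrow> (real \<Rightarrow> 'v \<Rightarrow> 'v) \<Rightarrow> 'v set \<Rightarrow> ('v \<Rightarrow> real) \<Rightarrow> ('v \<Rightarrow> real) \<Rightarrow> bool" where
  "frechet_diff_dual_norm pl sc V n f \<longleftrightarrow>
    (\<exists>L :: ('v \<Rightarrow> real) \<Rightarrow> real.
       (\<forall>g\<in>dual_sp pl sc V n. \<forall>h\<in>dual_sp pl sc V n. L (\<lambda>v. g v + h v) = L g + L h) \<and>
       (\<forall>a. \<forall>g\<in>dual_sp pl sc V n. L (\<lambda>v. a * g v) = a * L g) \<and>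
       (\<exists>C. \<forall>g\<in>dual_sp pl sc V n. \<bar>L g\<bar> \<le> C * dual_norm V n g) \<and>
       (\<forall>\<epsilon>>0. \<exists>\<delta>>0. \<forall>h\<in>dual_sp pl sc V n. dual_norm V n h < \<delta> \<longrightarrow>
          \<bar>dual_norm V n (\<lambda>v. f v + h v) - dual_norm V n f - L h\<bar> \<le> \<epsilon> * dual_norm V n h))"

text \<open>The dual of (V, n) is Frechet smooth: the dual norm is Frechet differentiable
  at every nonzero functional.\<close>
definition dual_frechet_smooth ::
  "('v \<Rightarrow> 'v \<Rightarrow> 'v) \<Rightarrow> (real \<Rightarrow> 'v \<Rightarrow> 'v) \<Rightarrow> 'v set \<Rightarrow> ('v \<Rightarrow> real) \<Rightarrow> bool" where
  "dual_frechet_smooth pl sc V n \<longleftrightarrow>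
     (\<forall>f\<in>dual_sp pl sc V n. (\<exists>v\<in>V. f v \<noteq> 0) \<longrightarrow> frechet_diff_dual_norm pl sc V n f)"

text \<open>n is a norm on the subspace V of a real vector space.\<close>
definition is_norm_on :: "'v::real_vector set \<Rightarrow> ('v \<Rightarrow> real) \<Rightarrow> bool" where
  "is_norm_on V n \<longleftrightarrow> (\<forall>v\<in>V. 0 \<le> n v \<and> (n v = 0 \<longleftrightarrow> v = 0)) \<and>
     (\<forall>a. \<forall>v\<in>V. n (a *\<^sub>R v) = \<bar>a\<bar> * n v) \<and> (\<forall>u\<in>V. \<forall>v\<in>V. n (u + v) \<le> n u + n v)"

text \<open>(V, n) is complete.\<close>
definition complete_norm_on :: "'v::real_vector set \<Rightarrow> ('v \<Rightarrow> real) \<Rightarrow> bool" where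
  "complete_norm_on V n \<longleftrightarrow>
     (\<forall>s. (\<forall>i. s i \<in> V) \<and> (\<forall>e>0. \<exists>M. \<forall>i\<ge>M. \<forall>j\<ge>M. n (s i - s j) < e) \<longrightarrow>
          (\<exists>l\<in>V. (\<lambda>i. n (s i - l)) \<longlonglongrightarrow> 0))"

text \<open>Setting: X is the Banach space 'x; Y_k is the subspace Yset k of 'y; the norm on
  X \<oplus> Y_k is N k on UNIV \<times> Yset k; the norm of Y_k is y \<mapsto> N k (0, y).\<close>

definition Ynorm :: "(nat \<Rightarrow> 'x::real_vector \<times> 'y::real_vector \<Rightarrow> real) \<Rightarrow> nat \<Rightarrow> 'y \<Rightarrow> real" where
  "Ynorm N k y = N k (0, y)"

text \<open>Sigma(X \<oplus> Y_k): pairs (x, (y_k)_k) with y_k in Y_k and sum of squared norms finite.\<close>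
definition SigmaSet :: "(nat \<Rightarrow> 'y set) \<Rightarrow> (nat \<Rightarrow> 'x::real_vector \<times> 'y::real_vector \<Rightarrow> real)
     \<Rightarrow> ('x \<times> (nat \<Rightarrow> 'y)) set" where
  "SigmaSet Yset N = {(x, y). (\<forall>k. y k \<in> Yset k) \<and> summable (\<lambda>k. (Ynorm N k (y k))\<^sup>2)}"

definition sadd :: "'x::real_vector \<times> (nat \<Rightarrow> 'y::real_vector) \<Rightarrow> 'x \<times> (nat \<Rightarrow> 'y) \<Rightarrow> 'x \<times> (nat \<Rightarrow> 'y)" where
  "sadd z w = (fst z + fst w, \<lambda>k. snd z k + snd w k)"

definition sscale :: "real \<Rightarrow> 'x::real_vector \<times> (nat \<Rightarrow> 'y::real_vector) \<Rightarrow> 'x \<times> (nat \<Rightarrow> 'y)" where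
  "sscale a z = (a *\<^sub>R fst z, \<lambda>k. a *\<^sub>R snd z k)"

text \<open>Functional x* + y_k* on X \<oplus> Y_k.\<close>
definition pair_fun :: "'y set \<Rightarrow> ('x \<Rightarrow> real) \<Rightarrow> ('y \<Rightarrow> real) \<Rightarrow> 'x \<times> 'y \<Rightarrow> real" where
  "pair_fun Yk xs ys = (\<lambda>(x, y). if y \<in> Yk then xs x + ys y else 0)"

text \<open>Membership of x* + sum_k alpha_k y_k* in Lambda(X \<oplus> Y_k).\<close>
definition in_Lambda :: "(nat \<Rightarrow> 'y set) \<Rightarrow> (nat \<Rightarrow> 'x::real_normed_vector \<times> 'y::real_vector \<Rightarrow> real)
     \<Rightarrow> ('x \<Rightarrow> real) \<Rightarrow> (nat \<Rightarrow> real) \<Rightarrow> (nat \<Rightarrow> 'y \<Rightarrow> real) \<Rightarrow> bool" where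
  "in_Lambda Yset N xs \<alpha> ys \<longleftrightarrow>
     bounded_linear xs \<and>
     (\<forall>k. ys k \<in> dual_sp (+) (*\<^sub>R) (Yset k) (Ynorm N k)) \<and>
     (\<forall>k. dual_norm (UNIV \<times> Yset k) (N k) (pair_fun (Yset k) xs (ys k)) \<le> 1) \<and>
     (\<forall>k. 0 \<le> \<alpha> k \<and> \<alpha> k \<le> 1) \<and> summable (\<lambda>k. (\<alpha> k)\<^sup>2) \<and> (\<Sum>k. (\<alpha> k)\<^sup>2) \<le> 1"

text \<open>The functional on Sigma induced by x* + sum_k alpha_k y_k*.\<close>
definition lam_fun :: "(nat \<Rightarrow> 'y set) \<Rightarrow> (nat \<Rightarrow> 'x::real_normed_vector \<times> 'y::real_vector \<Rightarrow> real)
     \<Rightarrow> ('x \<Rightarrow> real) \<Rightarrow> (nat \<Rightarrow> real) \<Rightarrow> (nat \<Rightarrow> 'y \<Rightarrow> real) \<Rightarrow> 'x \<times> (nat \<Rightarrow> 'y) \<Rightarrow> real" where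
  "lam_fun Yset N xs \<alpha> ys = (\<lambda>(x, y). if (x, y) \<in> SigmaSet Yset N
       then xs x + (\<Sum>k. \<alpha> k * ys k (y k)) else 0)"

text \<open>The norm of Sigma(X \<oplus> Y_k).\<close>
definition sigma_norm :: "(nat \<Rightarrow> 'y set) \<Rightarrow> (nat \<Rightarrow> 'x::real_normed_vector \<times> 'y::real_vector \<Rightarrow> real)
     \<Rightarrow> 'x \<times> (nat \<Rightarrow> 'y) \<Rightarrow> real" where
  "sigma_norm Yset N z = Sup {\<bar>lam_fun Yset N xs \<alpha> ys z\<bar> | xs \<alpha> ys. in_Lambda Yset N xs \<alpha> ys}"

end

theory Submission
  imports Defs
begin
(* from a/A.thy *)


section \<open>Generic dual norm lemmas\<close>

locale dn_space =
  fixes sc :: "real \<Rightarrow> 'v \<Rightarrow> 'v" and V :: "'v set" and n :: "'v \<Rightarrow> real" and z0 :: 'v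
  assumes sc_in: "\<And>c v. v \<in> V \<Longrightarrow> sc c v \<in> V"
    and n_sc: "\<And>c v. v \<in> V \<Longrightarrow> n (sc c v) = \<bar>c\<bar> * n v"
    and n_nonneg: "\<And>v. v \<in> V \<Longrightarrow> 0 \<le> n v"
    and z0_in: "z0 \<in> V" and n_z0: "n z0 = 0"
begin

definition bnd :: "('v \<Rightarrow> real) \<Rightarrow> bool" where
  "bnd f \<longleftrightarrow> (\<forall>c. \<forall>v\<in>V. f (sc c v) = c * f v) \<and> (\<exists>C. \<forall>v\<in>V. \<bar>f v\<bar> \<le> C * n v)"

lemma ball_ne: "{v\<in>V. n v \<le> 1} \<noteq> {}"
  using z0_in n_z0 by auto

lemma bdd: assumes "bnd f" shows "bdd_above ((\<lambda>v. \<bar>f v\<bar>) ` {v\<in>V. n v \<le> 1})"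
proof -
  obtain C where C: "\<forall>v\<in>V. \<bar>f v\<bar> \<le> C * n v" using assms unfolding bnd_def by auto
  have "\<bar>f v\<bar> \<le> max C 0" if "v \<in> V" "n v \<le> 1" for v
  proof -
    have "\<bar>f v\<bar> \<le> C * n v" using C that by auto
    also have "\<dots> \<le> max C 0 * n v" using n_nonneg[OF that(1)] by (simp add: mult_right_mono)
    also have "\<dots> \<le> max C 0" using that n_nonneg[OF that(1)] by (simp add: mult_left_le)
    finally show ?thesis .
  qed
  then show ?thesis by (intro bdd_aboveI[where M="max C 0"]) auto
qed

lemma dn_upper: assumes "bnd f" "v \<in> V" "n v \<le> 1" shows "\<bar>f v\<bar> \<le> dual_norm V n f"
  unfolding dual_norm_def using assms by (intro cSUP_upper bdd) auto

lemma dn_nonneg: assumes "bnd f" shows "0 \<le> dual_norm V n f"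
  using dn_upper[OF assms z0_in] n_z0 by (smt (verit) abs_ge_zero)

lemma dn_least: assumes "\<And>v. v \<in> V \<Longrightarrow> n v \<le> 1 \<Longrightarrow> \<bar>f v\<bar> \<le> M" shows "dual_norm V n f \<le> M"
  unfolding dual_norm_def using assms ball_ne by (intro cSUP_least) auto

lemma dn_bound: assumes "bnd f" "v \<in> V" shows "\<bar>f v\<bar> \<le> dual_norm V n f * n v"
proof (cases "n v = 0")
  case True
  obtain C where C: "\<forall>v\<in>V. \<bar>f v\<bar> \<le> C * n v" using assms unfolding bnd_def by auto
  then show ?thesis using True assms by fastforce
next
  case False
  then have pos: "n v > 0" using n_nonneg[OF assms(2)] by auto
  let ?w = "sc (1 / n v) v"
  have w: "?w \<in> V" "n ?w = 1" using sc_in[OF assms(2)] n_sc[OF assms(2)] pos by auto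
  have "f ?w = f v / n v" using assms unfolding bnd_def by auto
  moreover have "\<bar>f ?w\<bar> \<le> dual_norm V n f" using dn_upper[OF assms(1) w(1)] w by auto
  ultimately show ?thesis using pos by (simp add: abs_div divide_le_eq)
qed

lemma bnd_add: assumes "bnd f" "bnd g" shows "bnd (\<lambda>v. f v + g v)"
proof -
  obtain C where C: "\<forall>v\<in>V. \<bar>f v\<bar> \<le> C * n v" using assms unfolding bnd_def by auto
  obtain D where D: "\<forall>v\<in>V. \<bar>g v\<bar> \<le> D * n v" using assms unfolding bnd_def by auto
  have "\<forall>v\<in>V. \<bar>f v + g v\<bar> \<le> (C + D) * n v"
    using C D by (auto simp: distrib_right intro: order_trans[OF abs_triangle_ineq add_mono])
  then show ?thesis using assms unfolding bnd_def by (auto simp: distrib_left)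
qed

lemma bnd_scale: assumes "bnd f" shows "bnd (\<lambda>v. c * f v)"
proof -
  obtain C where C: "\<forall>v\<in>V. \<bar>f v\<bar> \<le> C * n v" using assms unfolding bnd_def by auto
  have "\<forall>v\<in>V. \<bar>c * f v\<bar> \<le> (\<bar>c\<bar> * C) * n v"
    using C by (auto simp: abs_mult mult.assoc intro: mult_left_mono)
  then show ?thesis using assms unfolding bnd_def by auto
qed

lemma dn_add: assumes "bnd f" "bnd g" shows "dual_norm V n (\<lambda>v. f v + g v) \<le> dual_norm V n f + dual_norm V n g"
proof (rule dn_least)
  fix v assume v: "v \<in> V" "n v \<le> 1"
  have "\<bar>f v + g v\<bar> \<le> \<bar>f v\<bar> + \<bar>g v\<bar>" by (rule abs_triangle_ineq)
  also have "\<dots> \<le> dual_norm V n f + dual_norm V n g"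
    using dn_upper[OF assms(1) v] dn_upper[OF assms(2) v] by simp
  finally show "\<bar>f v + g v\<bar> \<le> dual_norm V n f + dual_norm V n g" .
qed

lemma dn_scale_le: assumes "bnd f" shows "dual_norm V n (\<lambda>v. c * f v) \<le> \<bar>c\<bar> * dual_norm V n f"
proof (rule dn_least)
  fix v assume v: "v \<in> V" "n v \<le> 1"
  show "\<bar>c * f v\<bar> \<le> \<bar>c\<bar> * dual_norm V n f"
    using dn_upper[OF assms v] by (simp add: abs_mult mult_left_mono)
qed

lemma dn_scale: assumes "bnd f" shows "dual_norm V n (\<lambda>v. c * f v) = \<bar>c\<bar> * dual_norm V n f"
proof (cases "c = 0")
  case True
  then show ?thesis using dn_scale_le[OF assms, of 0] dn_nonneg[of "\<lambda>v. 0"] bnd_scale[OF assms, of 0] by auto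
next
  case False
  have "dual_norm V n f = dual_norm V n (\<lambda>v. (1/c) * (c * f v))" using False by simp
  also have "\<dots> \<le> \<bar>1/c\<bar> * dual_norm V n (\<lambda>v. c * f v)" by (rule dn_scale_le[OF bnd_scale[OF assms]])
  finally have "\<bar>c\<bar> * dual_norm V n f \<le> dual_norm V n (\<lambda>v. c * f v)"
    using False by (simp add: abs_div field_simps)
  with dn_scale_le[OF assms, of c] show ?thesis by linarith
qed

lemma dn_approx: assumes "bnd f" "e > 0"
  shows "\<exists>v\<in>V. n v \<le> 1 \<and> dual_norm V n f - e < \<bar>f v\<bar>"
proof -
  have "dual_norm V n f - e < dual_norm V n f" using assms by simp
  then show ?thesis unfolding dual_norm_def using less_cSUP_iff[OF ball_ne bdd[OF assms(1)]] by auto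
qed

lemma dn_zero_imp: assumes "bnd f" "dual_norm V n f = 0" "v \<in> V" shows "f v = 0"
  using dn_bound[OF assms(1,3)] assms(2) by simp

end


(* from b/B.thy *)

locale sset =
  fixes Yset :: "nat \<Rightarrow> 'y::real_vector set"
    and N :: "nat \<Rightarrow> 'x::banach \<times> 'y \<Rightarrow> real"
  assumes Ysub: "\<And>k. subspace (Yset k)"
    and Nnorm: "\<And>k. is_norm_on (UNIV \<times> Yset k) (N k)"
    and NX: "\<And>k x. N k (x, 0) = norm x"
    and Nmono: "\<And>k x y. y \<in> Yset k \<Longrightarrow> N k (x, y) \<ge> norm x"
begin

abbreviation "Z k \<equiv> (UNIV :: 'x set) \<times> Yset k"
abbreviation "DN k \<equiv> dual_norm (Z k) (N k)"
abbreviation "P k \<equiv> pair_fun (Yset k)"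

lemma Y0: "0 \<in> Yset k" using Ysub subspace_0 by blast
lemma Yadd: "y \<in> Yset k \<Longrightarrow> y' \<in> Yset k \<Longrightarrow> y + y' \<in> Yset k" using Ysub subspace_add by blast
lemma Ysc: "y \<in> Yset k \<Longrightarrow> c *\<^sub>R y \<in> Yset k" using Ysub subspace_scale by blast

lemma N_nonneg: "y \<in> Yset k \<Longrightarrow> 0 \<le> N k (x, y)"
  using Nnorm[of k] unfolding is_norm_on_def by auto
lemma N_sc: "y \<in> Yset k \<Longrightarrow> N k (c *\<^sub>R (x, y)) = \<bar>c\<bar> * N k (x, y)"
  using Nnorm[of k] unfolding is_norm_on_def by auto
lemma N_tri: "y \<in> Yset k \<Longrightarrow> y' \<in> Yset k \<Longrightarrow> N k ((x, y) + (x', y')) \<le> N k (x, y) + N k (x', y')"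
  using Nnorm[of k] unfolding is_norm_on_def by auto

lemma N0y: assumes "y \<in> Yset k" shows "N k (0, y) \<le> 2 * N k (x, y)"
proof -
  have "N k (0, y) = N k ((x, y) + (-x, 0))" by simp
  also have "\<dots> \<le> N k (x, y) + N k (-x, 0)" using N_tri[OF assms Y0] .
  also have "\<dots> \<le> 2 * N k (x, y)" using NX[of k "-x"] Nmono[OF assms, of x] by simp
  finally show ?thesis .
qed

lemma Nxy: assumes "y \<in> Yset k" shows "N k (x, y) \<le> norm x + N k (0, y)"
proof -
  have "N k (x, y) = N k ((x, 0) + (0, y))" by simp
  also have "\<dots> \<le> N k (x, 0) + N k (0, y)" using N_tri[OF Y0 assms] .
  finally show ?thesis using NX by simp
qed

lemma Ynorm_nonneg: "y \<in> Yset k \<Longrightarrow> 0 \<le> Ynorm N k y"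
  unfolding Ynorm_def by (rule N_nonneg)

sublocale Zs: dn_space "(*\<^sub>R)" "Z k" "N k" "(0, 0)"
proof
  fix c v assume v: "v \<in> Z k"
  then show "c *\<^sub>R v \<in> Z k" using Ysc by (cases v) auto
  show "N k (c *\<^sub>R v) = \<bar>c\<bar> * N k v" using v N_sc by (cases v) auto
next
  fix v assume v: "v \<in> Z k" then show "0 \<le> N k v" using N_nonneg by (cases v) auto
next
  show "(0, 0) \<in> Z k" using Y0 by auto
  show "N k (0, 0) = 0" using NX[of k 0] by simp
qed

definition yfun :: "nat \<Rightarrow> ('y \<Rightarrow> real) \<Rightarrow> real \<Rightarrow> bool" where
  "yfun k u b \<longleftrightarrow> 0 \<le> b \<and> (\<forall>y. y \<notin> Yset k \<longrightarrow> u y = 0) \<and>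
     (\<forall>y\<in>Yset k. \<forall>y'\<in>Yset k. u (y + y') = u y + u y') \<and> (\<forall>c. \<forall>y\<in>Yset k. u (c *\<^sub>R y) = c * u y) \<and>
     (\<forall>y\<in>Yset k. \<bar>u y\<bar> \<le> b * Ynorm N k y)"

lemma yfun_0: "yfun k u b \<Longrightarrow> u 0 = 0"
  unfolding yfun_def using Y0[of k] by (metis mult_zero_left scale_zero_left)

lemma yfun_zero: "b \<ge> 0 \<Longrightarrow> yfun k (\<lambda>_. 0) b" unfolding yfun_def using Ynorm_nonneg by auto

lemma yfun_mono: "yfun k u b \<Longrightarrow> b \<le> b' \<Longrightarrow> yfun k u b'"
proof -
  assume a: "yfun k u b" "b \<le> b'"
  have "\<bar>u y\<bar> \<le> b' * Ynorm N k y" if "y \<in> Yset k" for y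
  proof -
    have "\<bar>u y\<bar> \<le> b * Ynorm N k y" using a that unfolding yfun_def by auto
    also have "\<dots> \<le> b' * Ynorm N k y" using a(2) Ynorm_nonneg[OF that] by (rule mult_right_mono)
    finally show ?thesis .
  qed
  then show ?thesis using a unfolding yfun_def by auto
qed

lemma yfun_lin: assumes "yfun k u b" "yfun k u' b'"
  shows "yfun k (\<lambda>y. c * u y + c' * u' y) (\<bar>c\<bar> * b + \<bar>c'\<bar> * b')"
proof -
  have "\<bar>c * u y + c' * u' y\<bar> \<le> (\<bar>c\<bar> * b + \<bar>c'\<bar> * b') * Ynorm N k y" if "y \<in> Yset k" for y
  proof -
    have "\<bar>c * u y + c' * u' y\<bar> \<le> \<bar>c\<bar> * \<bar>u y\<bar> + \<bar>c'\<bar> * \<bar>u' y\<bar>"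
      by (metis abs_mult abs_triangle_ineq)
    also have "\<dots> \<le> \<bar>c\<bar> * (b * Ynorm N k y) + \<bar>c'\<bar> * (b' * Ynorm N k y)"
      using assms that unfolding yfun_def by (intro add_mono mult_left_mono) auto
    finally show ?thesis by (simp add: algebra_simps)
  qed
  then show ?thesis using assms unfolding yfun_def by (auto simp: algebra_simps)
qed

lemma yfun_dual: "u \<in> dual_sp (+) (*\<^sub>R) (Yset k) (Ynorm N k) \<Longrightarrow> \<exists>b\<ge>0. yfun k u b"
proof -
  assume u: "u \<in> dual_sp (+) (*\<^sub>R) (Yset k) (Ynorm N k)"
  then obtain C where C: "\<forall>v\<in>Yset k. \<bar>u v\<bar> \<le> C * Ynorm N k v" unfolding dual_sp_def by auto
  have "\<forall>v\<in>Yset k. \<bar>u v\<bar> \<le> max C 0 * Ynorm N k v"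
    using C Ynorm_nonneg by (meson max.cobounded1 mult_right_mono order_trans)
  then show ?thesis using u unfolding dual_sp_def lin_fun_on_def yfun_def
    by (intro exI[of _ "max C 0"]) auto
qed

lemma yfun_dual_sp: "yfun k u b \<Longrightarrow> u \<in> dual_sp (+) (*\<^sub>R) (Yset k) (Ynorm N k)"
  unfolding dual_sp_def lin_fun_on_def yfun_def by auto

lemma P_eq: "y \<in> Yset k \<Longrightarrow> P k g u (x, y) = g x + u y"
  unfolding pair_fun_def by simp
lemma P_out: "y \<notin> Yset k \<Longrightarrow> P k g u (x, y) = 0"
  unfolding pair_fun_def by simp

lemma P_bound: assumes g: "bounded_linear g" and u: "yfun k u b" and y: "y \<in> Yset k"
  shows "\<bar>P k g u (x, y)\<bar> \<le> (onorm g + 2 * b) * N k (x, y)"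
proof -
  have b: "b \<ge> 0" using u unfolding yfun_def by auto
  have "\<bar>P k g u (x, y)\<bar> \<le> \<bar>g x\<bar> + \<bar>u y\<bar>" using y by (simp add: P_eq abs_triangle_ineq)
  also have "\<bar>g x\<bar> \<le> onorm g * N k (x, y)"
  proof -
    have "\<bar>g x\<bar> \<le> onorm g * norm x" using onorm[OF g, of x] by simp
    also have "\<dots> \<le> onorm g * N k (x, y)" using Nmono[OF y, of x] onorm_pos_le[OF g] by (rule mult_left_mono)
    finally show ?thesis .
  qed
  also have "\<bar>u y\<bar> \<le> b * (2 * N k (x, y))"
  proof -
    have "\<bar>u y\<bar> \<le> b * N k (0, y)" using u y unfolding yfun_def Ynorm_def by auto
    also have "\<dots> \<le> b * (2 * N k (x, y))" using N0y[OF y, of x] b by (rule mult_left_mono)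
    finally show ?thesis .
  qed
  finally show ?thesis by (simp add: algebra_simps)
qed

lemma P_lin: assumes g: "bounded_linear g" and u: "yfun k u b"
  shows "lin_fun_on (+) (*\<^sub>R) (Z k) (P k g u)"
proof -
  interpret g: bounded_linear g by fact
  show ?thesis using u unfolding lin_fun_on_def yfun_def pair_fun_def
    by (auto simp: Yadd Ysc g.add g.scale distrib_left)
qed

lemma P_bnd: assumes g: "bounded_linear g" and u: "yfun k u b"
  shows "Zs.bnd k (P k g u)"
proof -
  have "\<forall>v\<in>Z k. \<bar>P k g u v\<bar> \<le> (onorm g + 2 * b) * N k v" using P_bound[OF g u] by auto
  then show ?thesis using P_lin[OF g u] unfolding Zs.bnd_def lin_fun_on_def by blast
qed

lemma P_dual: assumes g: "bounded_linear g" and u: "yfun k u b"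
  shows "P k g u \<in> dual_sp (+) (*\<^sub>R) (Z k) (N k)"
proof -
  have "\<forall>v\<in>Z k. \<bar>P k g u v\<bar> \<le> (onorm g + 2 * b) * N k v" using P_bound[OF g u] by auto
  then show ?thesis using P_lin[OF g u] unfolding dual_sp_def by (auto simp: P_out)
qed

lemma P_lincomb: "P k (\<lambda>x. c * g x + c' * g' x) (\<lambda>y. c * u y + c' * u' y) = (\<lambda>v. c * P k g u v + c' * P k g' u' v)"
  unfolding pair_fun_def by (auto simp: algebra_simps)

lemma P_add: "P k (\<lambda>x. g x + g' x) (\<lambda>y. u y + u' y) = (\<lambda>v. P k g u v + P k g' u' v)"
  unfolding pair_fun_def by (auto simp: algebra_simps)

lemma P_scale: "P k (\<lambda>x. c * g x) (\<lambda>y. c * u y) = (\<lambda>v. c * P k g u v)"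
  unfolding pair_fun_def by (auto simp: algebra_simps)

lemma P_split: "P k g u = (\<lambda>v. P k g (\<lambda>_. 0) v + P k (\<lambda>_. 0) u v)"
  unfolding pair_fun_def by auto

lemma dn_Pg: assumes g: "bounded_linear g" shows "DN k (P k g (\<lambda>_. 0)) \<le> onorm g"
proof (rule Zs.dn_least)
  fix v assume v: "v \<in> Z k" "N k v \<le> 1"
  obtain x y where xy: "v = (x, y)" by fastforce
  have y: "y \<in> Yset k" using v xy by auto
  have "\<bar>P k g (\<lambda>_. 0) (x, y)\<bar> \<le> (onorm g + 2 * 0) * N k (x, y)"
    by (rule P_bound[OF g yfun_zero y]) simp
  also have "\<dots> = onorm g * N k (x, y)" by simp
  also have "\<dots> \<le> onorm g * 1" using v xy onorm_pos_le[OF g] by (intro mult_left_mono) auto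
  finally show "\<bar>P k g (\<lambda>_. 0) v\<bar> \<le> onorm g" using xy by simp
qed

lemma dn_Pu: assumes u: "yfun k u b" and b: "b \<ge> 0" shows "DN k (P k (\<lambda>_. 0) u) \<le> 2 * b"
proof (rule Zs.dn_least)
  fix v assume v: "v \<in> Z k" "N k v \<le> 1"
  obtain x y where xy: "v = (x, y)" by fastforce
  have y: "y \<in> Yset k" using v xy by auto
  have bl: "bounded_linear (\<lambda>_::'x. 0::real)" by simp
  have "\<bar>P k (\<lambda>_. 0) u (x, y)\<bar> \<le> (onorm (\<lambda>_::'x. 0::real) + 2 * b) * N k (x, y)"
    by (rule P_bound[OF bl u y])
  also have "\<dots> = (2 * b) * N k (x, y)" by (simp add: onorm_zero)
  also have "\<dots> \<le> (2 * b) * 1" using v xy b by (intro mult_left_mono) auto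
  finally show "\<bar>P k (\<lambda>_. 0) u v\<bar> \<le> 2 * b" using xy by simp
qed

text \<open>From a bound on the dual norm of a pair functional.\<close>
lemma from_dnP: assumes g: "bounded_linear g" and u: "yfun k u b" and d: "DN k (P k g u) \<le> 1"
  shows "onorm g \<le> 1" and "yfun k u 1"
proof -
  have bnd: "Zs.bnd k (P k g u)" by (rule P_bnd[OF g u])
  have "norm (g x) \<le> 1 * norm x" for x
  proof -
    have "\<bar>P k g u (x, 0)\<bar> \<le> DN k (P k g u) * N k (x, 0)" using Zs.dn_bound[OF bnd] Y0 by auto
    also have "\<dots> \<le> 1 * norm x" unfolding NX using d by (intro mult_right_mono) auto
    moreover have "P k g u (x, 0) = g x" using Y0 yfun_0[OF u] by (auto simp: P_eq)
    ultimately show ?thesis by simp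
  qed
  then show "onorm g \<le> 1" by (intro onorm_bound) auto
  have "\<bar>u y\<bar> \<le> 1 * Ynorm N k y" if "y \<in> Yset k" for y
  proof -
    have "\<bar>P k g u (0, y)\<bar> \<le> DN k (P k g u) * N k (0, y)" using Zs.dn_bound[OF bnd] that by auto
    also have "\<dots> \<le> 1 * N k (0, y)" using d N_nonneg[OF that] by (intro mult_right_mono) auto
    moreover have "P k g u (0, y) = u y" using that linear_0[OF bounded_linear.linear[OF g]] by (simp add: P_eq)
    ultimately show ?thesis by (simp add: Ynorm_def)
  qed
  then show "yfun k u 1" using u unfolding yfun_def by auto
qed

end

(* from c/C.thy *)


lemma summable_prod_abs:
  fixes p q :: "nat \<Rightarrow> real"
  assumes "summable (\<lambda>k. (p k)\<^sup>2)" "summable (\<lambda>k. (q k)\<^sup>2)"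
  shows "summable (\<lambda>k. \<bar>p k * q k\<bar>)"
    and "(\<Sum>k. \<bar>p k * q k\<bar>) \<le> ((\<Sum>k. (p k)\<^sup>2) + (\<Sum>k. (q k)\<^sup>2)) / 2"
proof -
  have le: "\<bar>p k * q k\<bar> \<le> ((p k)\<^sup>2 + (q k)\<^sup>2) / 2" for k
  proof -
    have "0 \<le> (\<bar>p k\<bar> - \<bar>q k\<bar>)\<^sup>2" by simp
    then show ?thesis by (simp add: power2_eq_square abs_mult algebra_simps)
  qed
  have s: "summable (\<lambda>k. ((p k)\<^sup>2 + (q k)\<^sup>2) / 2)"
    using assms by (intro summable_divide summable_add)
  show "summable (\<lambda>k. \<bar>p k * q k\<bar>)"
    by (rule summable_comparison_test[OF _ s]) (use le in auto)
  then have "(\<Sum>k. \<bar>p k * q k\<bar>) \<le> (\<Sum>k. ((p k)\<^sup>2 + (q k)\<^sup>2) / 2)"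
    by (intro suminf_le s le)
  also have "\<dots> = (\<Sum>k. (p k)\<^sup>2 + (q k)\<^sup>2) / 2"
    by (rule suminf_divide[OF summable_add[OF assms]])
  also have "\<dots> = ((\<Sum>k. (p k)\<^sup>2) + (\<Sum>k. (q k)\<^sup>2)) / 2"
    by (simp only: suminf_add[OF assms])
  finally show "(\<Sum>k. \<bar>p k * q k\<bar>) \<le> ((\<Sum>k. (p k)\<^sup>2) + (\<Sum>k. (q k)\<^sup>2)) / 2" .
qed

context sset
begin

abbreviation "SS \<equiv> SigmaSet Yset N"
abbreviation "Lam \<equiv> in_Lambda Yset N"
abbreviation "lam \<equiv> lam_fun Yset N"
abbreviation "snorm \<equiv> sigma_norm Yset N"
abbreviation "Yn k y \<equiv> Ynorm N k y"

lemma SS_iff: "(x, y) \<in> SS \<longleftrightarrow> (\<forall>k. y k \<in> Yset k) \<and> summable (\<lambda>k. (Yn k (y k))\<^sup>2)"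
  unfolding SigmaSet_def by auto

lemma Lam_props: assumes "Lam g \<beta> u"
  shows "bounded_linear g" "onorm g \<le> 1" "\<And>k. yfun k (u k) 1" "\<And>k. 0 \<le> \<beta> k" "\<And>k. \<beta> k \<le> 1"
    "summable (\<lambda>k. (\<beta> k)\<^sup>2)" "(\<Sum>k. (\<beta> k)\<^sup>2) \<le> 1" "\<And>k. DN k (P k g (u k)) \<le> 1"
proof -
  show g: "bounded_linear g" using assms unfolding in_Lambda_def by auto
  show d: "\<And>k. DN k (P k g (u k)) \<le> 1" using assms unfolding in_Lambda_def by auto
  have "\<And>k. \<exists>b. yfun k (u k) b" using assms yfun_dual unfolding in_Lambda_def by blast
  then show "\<And>k. yfun k (u k) 1" using from_dnP(2)[OF g _ d] by blast
  show "onorm g \<le> 1" using from_dnP(1)[OF g _ d] \<open>\<And>k. \<exists>b. yfun k (u k) b\<close> by blast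
  show "\<And>k. 0 \<le> \<beta> k" "\<And>k. \<beta> k \<le> 1" "summable (\<lambda>k. (\<beta> k)\<^sup>2)" "(\<Sum>k. (\<beta> k)\<^sup>2) \<le> 1"
    using assms unfolding in_Lambda_def by auto
qed

lemma lam_val: "(x, y) \<in> SS \<Longrightarrow> lam g \<beta> u (x, y) = g x + (\<Sum>k. \<beta> k * u k (y k))"
  unfolding lam_fun_def by simp

lemma lam_out: "z \<notin> SS \<Longrightarrow> lam g \<beta> u z = 0"
  unfolding lam_fun_def by (cases z) auto

lemma Yn_sq_summable: "(x, y) \<in> SS \<Longrightarrow> summable (\<lambda>k. (Yn k (y k))\<^sup>2)"
  by (simp add: SS_iff)

text \<open>Generic: coefficient sequence c with |c k| \<le> b, square summable weight.\<close>
lemma ser_summable: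
  assumes yS: "(x, y) \<in> SS" and w: "summable (\<lambda>k. (w k)\<^sup>2)"
    and u: "\<And>k. yfun k (u k) b"
  shows "summable (\<lambda>k. w k * u k (y k))"
    and "\<bar>\<Sum>k. w k * u k (y k)\<bar> \<le> b * (((\<Sum>k. (w k)\<^sup>2) + (\<Sum>k. (Yn k (y k))\<^sup>2)) / 2)"
proof -
  have b: "b \<ge> 0" using u[of 0] unfolding yfun_def by auto
  have yk: "y k \<in> Yset k" for k using yS by (simp add: SS_iff)
  have Y: "summable (\<lambda>k. (Yn k (y k))\<^sup>2)" using yS by (simp add: SS_iff)
  note pq = summable_prod_abs[OF w Y]
  have le: "\<bar>w k * u k (y k)\<bar> \<le> b * \<bar>w k * Yn k (y k)\<bar>" for k
  proof -
    have "\<bar>u k (y k)\<bar> \<le> b * Yn k (y k)" using u[of k] yk[of k] unfolding yfun_def by auto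
    then have "\<bar>w k\<bar> * \<bar>u k (y k)\<bar> \<le> \<bar>w k\<bar> * (b * Yn k (y k))" by (rule mult_left_mono) simp
    then show ?thesis using Ynorm_nonneg[OF yk[of k]] b by (simp add: abs_mult algebra_simps)
  qed
  have s2: "summable (\<lambda>k. b * \<bar>w k * Yn k (y k)\<bar>)" using pq(1) by (rule summable_mult)
  show s: "summable (\<lambda>k. w k * u k (y k))"
    by (rule summable_comparison_test[OF _ s2]) (use le in auto)
  have "\<bar>\<Sum>k. w k * u k (y k)\<bar> \<le> (\<Sum>k. \<bar>w k * u k (y k)\<bar>)"
    by (rule summable_rabs[OF summable_comparison_test[OF _ s2]]) (use le in auto)
  also have "\<dots> \<le> (\<Sum>k. b * \<bar>w k * Yn k (y k)\<bar>)"
    by (intro suminf_le s2 le summable_comparison_test[OF _ s2]) (use le in auto)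
  also have "\<dots> = b * (\<Sum>k. \<bar>w k * Yn k (y k)\<bar>)" using pq(1) by (rule suminf_mult)
  also have "\<dots> \<le> b * (((\<Sum>k. (w k)\<^sup>2) + (\<Sum>k. (Yn k (y k))\<^sup>2)) / 2)"
    using pq(2) b by (rule mult_left_mono)
  finally show "\<bar>\<Sum>k. w k * u k (y k)\<bar> \<le> b * (((\<Sum>k. (w k)\<^sup>2) + (\<Sum>k. (Yn k (y k))\<^sup>2)) / 2)" .
qed

lemma lam_bound: assumes L: "Lam g \<beta> u" and z: "(x, y) \<in> SS"
  shows "\<bar>lam g \<beta> u (x, y)\<bar> \<le> norm x + (1 + (\<Sum>k. (Yn k (y k))\<^sup>2)) / 2"
proof -
  note LP = Lam_props[OF L]
  have "\<bar>lam g \<beta> u (x, y)\<bar> \<le> \<bar>g x\<bar> + \<bar>\<Sum>k. \<beta> k * u k (y k)\<bar>"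
    using z by (simp add: lam_val abs_triangle_ineq)
  also have "\<bar>g x\<bar> \<le> norm x"
  proof -
    have "\<bar>g x\<bar> \<le> onorm g * norm x" using onorm[OF LP(1)] by simp
    also have "\<dots> \<le> 1 * norm x" using LP(2) by (intro mult_right_mono) auto
    finally show ?thesis by simp
  qed
  also have "\<bar>\<Sum>k. \<beta> k * u k (y k)\<bar> \<le> 1 * (((\<Sum>k. (\<beta> k)\<^sup>2) + (\<Sum>k. (Yn k (y k))\<^sup>2)) / 2)"
    by (rule ser_summable(2)[OF z LP(6) LP(3)])
  also have "\<dots> \<le> (1 + (\<Sum>k. (Yn k (y k))\<^sup>2)) / 2" using LP(7) by simp
  finally show ?thesis by simp
qed

lemma Lam_zero: "Lam (\<lambda>_. 0) (\<lambda>_. 0) (\<lambda>_ _. 0)"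
proof -
  have "DN k (P k (\<lambda>_. 0) (\<lambda>_. 0)) \<le> 1" for k
    by (rule Zs.dn_least) (simp add: pair_fun_def split: prod.splits)
  moreover have "(\<lambda>_. 0) \<in> dual_sp (+) (*\<^sub>R) (Yset k) (Ynorm N k)" for k
    by (rule yfun_dual_sp[OF yfun_zero[of 0]]) simp
  ultimately show ?thesis unfolding in_Lambda_def by auto
qed

lemma snorm_set_ne: "{\<bar>lam g \<beta> u z\<bar> | g \<beta> u. Lam g \<beta> u} \<noteq> {}"
  using Lam_zero by blast

lemma snorm_bdd: "bdd_above {\<bar>lam g \<beta> u z\<bar> | g \<beta> u. Lam g \<beta> u}"
proof (cases "z \<in> SS")
  case True
  obtain x y where z: "z = (x, y)" by fastforce
  show ?thesis using lam_bound True z by (intro bdd_aboveI[where M="norm x + (1 + (\<Sum>k. (Yn k (y k))\<^sup>2)) / 2"]) auto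
next
  case False
  then show ?thesis using lam_out by (intro bdd_aboveI[where M=0]) auto
qed

lemma lam_le_snorm: "Lam g \<beta> u \<Longrightarrow> \<bar>lam g \<beta> u z\<bar> \<le> snorm z"
  unfolding sigma_norm_def by (rule cSup_upper[OF _ snorm_bdd]) blast

lemma snorm_least: "(\<And>g \<beta> u. Lam g \<beta> u \<Longrightarrow> \<bar>lam g \<beta> u z\<bar> \<le> M) \<Longrightarrow> snorm z \<le> M"
  unfolding sigma_norm_def by (rule cSup_least[OF snorm_set_ne]) blast

lemma snorm_nonneg: "0 \<le> snorm z"
  using lam_le_snorm[OF Lam_zero, of z] by (meson abs_ge_zero order_trans)

lemma SS_add: assumes "z \<in> SS" "w \<in> SS" shows "sadd z w \<in> SS"
proof -
  obtain x y where z: "z = (x, y)" by fastforce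
  obtain x' y' where w: "w = (x', y')" by fastforce
  have yk: "y k \<in> Yset k" "y' k \<in> Yset k" for k using assms z w by (auto simp: SS_iff)
  have le: "(Yn k (y k + y' k))\<^sup>2 \<le> 2 * (Yn k (y k))\<^sup>2 + 2 * (Yn k (y' k))\<^sup>2" for k
  proof -
    have t: "Yn k (y k + y' k) \<le> Yn k (y k) + Yn k (y' k)"
      using N_tri[OF yk(1) yk(2), of k 0 0] unfolding Ynorm_def by simp
    have "0 \<le> Yn k (y k + y' k)" using Ynorm_nonneg Yadd[OF yk(1) yk(2)] by auto
    then have "(Yn k (y k + y' k))\<^sup>2 \<le> (Yn k (y k) + Yn k (y' k))\<^sup>2" using t by (intro power_mono) auto
    also have "\<dots> \<le> 2 * (Yn k (y k))\<^sup>2 + 2 * (Yn k (y' k))\<^sup>2"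
      using sum_squares_bound[of "Yn k (y k)" "Yn k (y' k)"] by (simp add: power2_eq_square algebra_simps)
    finally show ?thesis .
  qed
  have "summable (\<lambda>k. 2 * (Yn k (y k))\<^sup>2 + 2 * (Yn k (y' k))\<^sup>2)"
    using assms z w by (intro summable_add summable_mult) (auto simp: SS_iff)
  then have "summable (\<lambda>k. (Yn k (y k + y' k))\<^sup>2)"
    by (rule summable_comparison_test[rotated]) (use le in auto)
  then show ?thesis using z w yk Yadd unfolding sadd_def by (auto simp: SS_iff)
qed

lemma Yn_sc: "y \<in> Yset k \<Longrightarrow> Yn k (c *\<^sub>R y) = \<bar>c\<bar> * Yn k y"
  using N_sc[of y k c 0] unfolding Ynorm_def by simp

lemma SS_sc: assumes "z \<in> SS" shows "sscale c z \<in> SS"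
proof -
  obtain x y where z: "z = (x, y)" by fastforce
  have yk: "y k \<in> Yset k" for k using assms z by (auto simp: SS_iff)
  have "summable (\<lambda>k. c\<^sup>2 * (Yn k (y k))\<^sup>2)" using assms z by (intro summable_mult) (auto simp: SS_iff)
  then have "summable (\<lambda>k. (Yn k (c *\<^sub>R y k))\<^sup>2)" using yk by (simp add: Yn_sc power_mult_distrib)
  then show ?thesis using z yk Ysc unfolding sscale_def by (auto simp: SS_iff)
qed

lemma lam_add: assumes L: "Lam g \<beta> u" and "z \<in> SS" "w \<in> SS"
  shows "lam g \<beta> u (sadd z w) = lam g \<beta> u z + lam g \<beta> u w"
proof -
  note LP = Lam_props[OF L]
  obtain x y where z: "z = (x, y)" by fastforce
  obtain x' y' where w: "w = (x', y')" by fastforce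
  have yk: "y k \<in> Yset k" "y' k \<in> Yset k" for k using assms z w by (auto simp: SS_iff)
  have s1: "summable (\<lambda>k. \<beta> k * u k (y k))" using ser_summable(1)[OF _ LP(6) LP(3)] assms z by auto
  have s2: "summable (\<lambda>k. \<beta> k * u k (y' k))" using ser_summable(1)[OF _ LP(6) LP(3)] assms w by auto
  have "u k (y k + y' k) = u k (y k) + u k (y' k)" for k using LP(3)[of k] yk unfolding yfun_def by auto
  then have "(\<Sum>k. \<beta> k * u k (y k + y' k)) = (\<Sum>k. \<beta> k * u k (y k)) + (\<Sum>k. \<beta> k * u k (y' k))"
    using suminf_add[OF s1 s2] by (simp add: distrib_left)
  moreover have "g (x + x') = g x + g x'" using LP(1) by (simp add: linear_add bounded_linear.linear)
  moreover have "sadd z w \<in> SS" using SS_add assms by auto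
  ultimately show ?thesis using assms z w by (simp add: lam_val sadd_def)
qed

lemma lam_sc: assumes L: "Lam g \<beta> u" and "z \<in> SS"
  shows "lam g \<beta> u (sscale c z) = c * lam g \<beta> u z"
proof -
  note LP = Lam_props[OF L]
  obtain x y where z: "z = (x, y)" by fastforce
  have yk: "y k \<in> Yset k" for k using assms z by (auto simp: SS_iff)
  have s1: "summable (\<lambda>k. \<beta> k * u k (y k))" using ser_summable(1)[OF _ LP(6) LP(3)] assms z by auto
  have "u k (c *\<^sub>R y k) = c * u k (y k)" for k using LP(3)[of k] yk unfolding yfun_def by auto
  then have "(\<Sum>k. \<beta> k * u k (c *\<^sub>R y k)) = c * (\<Sum>k. \<beta> k * u k (y k))"
    using suminf_mult[OF s1, of c] by (simp add: algebra_simps)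
  moreover have "g (c *\<^sub>R x) = c * g x" using LP(1) by (simp add: linear_scale bounded_linear.linear)
  moreover have "sscale c z \<in> SS" using SS_sc assms by auto
  ultimately show ?thesis using assms z by (simp add: lam_val sscale_def algebra_simps)
qed

lemma snorm_sc_le: assumes "z \<in> SS" shows "snorm (sscale c z) \<le> \<bar>c\<bar> * snorm z"
proof (rule snorm_least)
  fix g \<beta> u assume L: "Lam g \<beta> u"
  show "\<bar>lam g \<beta> u (sscale c z)\<bar> \<le> \<bar>c\<bar> * snorm z"
    using lam_sc[OF L assms] lam_le_snorm[OF L, of z] by (simp add: abs_mult mult_left_mono)
qed

lemma sscale_inv: "c \<noteq> 0 \<Longrightarrow> sscale (1 / c) (sscale c z) = z"
  unfolding sscale_def by (cases z) auto

lemma snorm_sc: assumes "z \<in> SS" shows "snorm (sscale c z) = \<bar>c\<bar> * snorm z"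
proof (cases "c = 0")
  case True
  then show ?thesis using snorm_sc_le[OF assms, of 0] snorm_nonneg[of "sscale 0 z"] by simp
next
  case False
  have "snorm z = snorm (sscale (1 / c) (sscale c z))" by (simp only: sscale_inv[OF False])
  also have "\<dots> \<le> \<bar>1 / c\<bar> * snorm (sscale c z)" by (rule snorm_sc_le[OF SS_sc[OF assms]])
  finally have "\<bar>c\<bar> * snorm z \<le> snorm (sscale c z)" using False by (simp add: field_simps)
  with snorm_sc_le[OF assms, of c] show ?thesis by linarith
qed

lemma z0_SS: "(0, \<lambda>_. 0) \<in> SS"
  using Y0 by (auto simp: SS_iff Ynorm_def NX)

lemma snorm_z0: "snorm (0, \<lambda>_. 0) = 0"
proof -
  have "snorm (0, \<lambda>_. 0) \<le> 0"
  proof (rule snorm_least)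
    fix g \<beta> u assume L: "Lam g \<beta> u"
    note LP = Lam_props[OF L]
    have "u k 0 = 0" for k using yfun_0[OF LP(3)] .
    then show "\<bar>lam g \<beta> u (0, \<lambda>_. 0)\<bar> \<le> 0"
      using z0_SS linear_0[OF bounded_linear.linear[OF LP(1)]] by (simp add: lam_val)
  qed
  then show ?thesis using snorm_nonneg[of "(0, \<lambda>_. 0)"] by simp
qed

sublocale Ss: dn_space sscale SS snorm "(0, \<lambda>_. 0)"
  by unfold_locales (auto simp: SS_sc snorm_sc snorm_nonneg z0_SS snorm_z0)

end

(* from e/E.thy *)


context sset
begin

abbreviation "SD \<equiv> dual_sp sadd sscale SS snorm"
abbreviation "DS \<equiv> dual_norm SS snorm"

lemma sdiff_SS: "w \<in> SS \<Longrightarrow> w' \<in> SS \<Longrightarrow> sadd w (sscale (-1) w') \<in> SS"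
  by (intro SS_add SS_sc)

lemma SD_bnd: assumes "h \<in> SD" shows "Ss.bnd h"
  using assms unfolding dual_sp_def lin_fun_on_def Ss.bnd_def by auto

lemma SD_diff: assumes "h \<in> SD" "w \<in> SS" "w' \<in> SS"
  shows "h (sadd w (sscale (-1) w')) = h w - h w'"
  using assms SS_sc unfolding dual_sp_def lin_fun_on_def by auto

lemma SD_add: assumes "g \<in> SD" "h \<in> SD" shows "(\<lambda>v. g v + h v) \<in> SD"
proof -
  obtain C where C: "\<forall>v\<in>SS. \<bar>g v\<bar> \<le> C * snorm v" using assms unfolding dual_sp_def by auto
  obtain D where D: "\<forall>v\<in>SS. \<bar>h v\<bar> \<le> D * snorm v" using assms unfolding dual_sp_def by auto
  have "\<forall>v\<in>SS. \<bar>g v + h v\<bar> \<le> (C + D) * snorm v"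
    using C D by (auto simp: distrib_right intro: order_trans[OF abs_triangle_ineq add_mono])
  then show ?thesis using assms unfolding dual_sp_def lin_fun_on_def by (auto simp: distrib_left)
qed

lemma SD_scale: assumes "g \<in> SD" shows "(\<lambda>v. a * g v) \<in> SD"
proof -
  obtain C where C: "\<forall>v\<in>SS. \<bar>g v\<bar> \<le> C * snorm v" using assms unfolding dual_sp_def by auto
  have "\<forall>v\<in>SS. \<bar>a * g v\<bar> \<le> (\<bar>a\<bar> * C) * snorm v"
    using C by (auto simp: abs_mult mult.assoc intro: mult_left_mono)
  then have "\<exists>C. \<forall>v\<in>SS. \<bar>a * g v\<bar> \<le> C * snorm v" by blast
  then show ?thesis using assms unfolding dual_sp_def lin_fun_on_def by (simp add: algebra_simps)
qed

lemma frechet_from_Q: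
  fixes f :: "'x \<times> (nat \<Rightarrow> 'y) \<Rightarrow> real"
  assumes fb: "Ss.bnd f" and f1: "DS f = 1"
    and Q: "\<And>\<epsilon>. \<epsilon> > 0 \<Longrightarrow> \<exists>\<delta>>0. \<forall>w w'. w \<in> SS \<longrightarrow> snorm w \<le> 1 \<longrightarrow> w' \<in> SS \<longrightarrow> snorm w' \<le> 1 \<longrightarrow>
              f w \<ge> 1 - \<delta> \<longrightarrow> f w' \<ge> 1 - \<delta> \<longrightarrow> snorm (sadd w (sscale (-1) w')) \<le> \<epsilon>"
  shows "frechet_diff_dual_norm sadd sscale SS snorm f"
proof -
  have fneg: "f (sscale (-1) v) = - f v" if "v \<in> SS" for v
    using fb that unfolding Ss.bnd_def by auto
  have fle: "f v \<le> 1" if "v \<in> SS" "snorm v \<le> 1" for v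
    using Ss.dn_upper[OF fb that] f1 by simp
  have "\<exists>z. z \<in> SS \<and> snorm z \<le> 1 \<and> f z > 1 - 1 / (Suc n)" for n
  proof -
    obtain v where v: "v \<in> SS" "snorm v \<le> 1" "DS f - 1 / Suc n < \<bar>f v\<bar>"
      using Ss.dn_approx[OF fb, of "1 / Suc n"] by auto
    show ?thesis
    proof (cases "f v \<ge> 0")
      case True
      have "1 - 1 / Suc n < f v" using v f1 True by auto
      then show ?thesis using v by blast
    next
      case False
      then show ?thesis using v f1 fneg[OF v(1)] SS_sc[OF v(1), of "-1"] snorm_sc[OF v(1), of "-1"]
        by (intro exI[of _ "sscale (-1) v"]) auto
    qed
  qed
  then obtain zs where zs: "\<And>n. zs n \<in> SS" "\<And>n. snorm (zs n) \<le> 1" "\<And>n. f (zs n) > 1 - 1 / Suc n"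
    by metis
  have fzs: "(\<lambda>n. f (zs n)) \<longlonglongrightarrow> 1"
  proof (rule real_tendsto_sandwich[of "\<lambda>n. 1 - 1 / Suc n" _ _ "\<lambda>n. 1"])
    show "\<forall>\<^sub>F n in sequentially. 1 - 1 / real (Suc n) \<le> f (zs n)" using zs(3) by (simp add: less_imp_le)
    show "\<forall>\<^sub>F n in sequentially. f (zs n) \<le> 1" using fle zs by auto
    show "(\<lambda>n. 1 - 1 / real (Suc n)) \<longlonglongrightarrow> 1"
      using tendsto_diff[OF tendsto_const LIMSEQ_inverse_real_of_nat] by (simp add: inverse_eq_divide)
  qed simp
  text \<open>Eventually close.\<close>
  have close: "\<exists>M. \<forall>n\<ge>M. \<forall>w. w \<in> SS \<longrightarrow> snorm w \<le> 1 \<longrightarrow> f w \<ge> 1 - \<delta> \<longrightarrow>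
                 snorm (sadd w (sscale (-1) (zs n))) \<le> \<epsilon>"
    if "\<epsilon> > 0" "\<forall>w w'. w \<in> SS \<longrightarrow> snorm w \<le> 1 \<longrightarrow> w' \<in> SS \<longrightarrow> snorm w' \<le> 1 \<longrightarrow>
              f w \<ge> 1 - \<delta> \<longrightarrow> f w' \<ge> 1 - \<delta> \<longrightarrow> snorm (sadd w (sscale (-1) w')) \<le> \<epsilon>" "\<delta> > 0"
    for \<epsilon> \<delta>
  proof -
    obtain M where M: "1 / Suc M < \<delta>" using reals_Archimedean[OF \<open>\<delta> > 0\<close>] by (auto simp: inverse_eq_divide)
    have "f (zs n) \<ge> 1 - \<delta>" if "n \<ge> M" for n
    proof -
      have "1 / real (Suc n) \<le> 1 / Suc M" using that by (intro divide_left_mono) auto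
      then show ?thesis using zs(3)[of n] M by linarith
    qed
    then show ?thesis using that zs by blast
  qed
  have hC: "\<bar>h w - h w'\<bar> \<le> DS h * snorm (sadd w (sscale (-1) w'))"
    if "h \<in> SD" "w \<in> SS" "w' \<in> SS" for h w w'
    using Ss.dn_bound[OF SD_bnd[OF that(1)] sdiff_SS[OF that(2,3)]] SD_diff[OF that] by simp
  have conv: "convergent (\<lambda>n. h (zs n))" if h: "h \<in> SD" for h
  proof -
    have "Cauchy (\<lambda>n. h (zs n))"
    proof (rule metric_CauchyI)
      fix e :: real assume e: "e > 0"
      define \<epsilon> where "\<epsilon> = e / (DS h + 1)"
      have DSn: "DS h \<ge> 0" by (rule Ss.dn_nonneg[OF SD_bnd[OF h]])
      have \<epsilon>: "\<epsilon> > 0" using e DSn by (simp add: \<epsilon>_def)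
      obtain \<delta> where \<delta>: "\<delta> > 0" "\<forall>w w'. w \<in> SS \<longrightarrow> snorm w \<le> 1 \<longrightarrow> w' \<in> SS \<longrightarrow> snorm w' \<le> 1 \<longrightarrow>
              f w \<ge> 1 - \<delta> \<longrightarrow> f w' \<ge> 1 - \<delta> \<longrightarrow> snorm (sadd w (sscale (-1) w')) \<le> \<epsilon>"
        using Q[OF \<epsilon>] by auto
      obtain M where M: "1 / Suc M < \<delta>" using reals_Archimedean[OF \<open>\<delta> > 0\<close>] by (auto simp: inverse_eq_divide)
      have fz: "f (zs n) \<ge> 1 - \<delta>" if "n \<ge> M" for n
      proof -
        have "1 / real (Suc n) \<le> 1 / Suc M" using that by (intro divide_left_mono) auto
        then show ?thesis using zs(3)[of n] M by linarith
      qed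
      show "\<exists>M. \<forall>m\<ge>M. \<forall>n\<ge>M. dist (h (zs m)) (h (zs n)) < e"
      proof (intro exI allI impI)
        fix m n assume mn: "M \<le> m" "M \<le> n"
        have "\<bar>h (zs m) - h (zs n)\<bar> \<le> DS h * snorm (sadd (zs m) (sscale (-1) (zs n)))"
          by (rule hC[OF h zs(1) zs(1)])
        also have "\<dots> \<le> DS h * \<epsilon>"
        proof (rule mult_left_mono[OF _ DSn])
          show "snorm (sadd (zs m) (sscale (-1) (zs n))) \<le> \<epsilon>"
            using \<delta>(2)[rule_format, OF zs(1) zs(2) zs(1) zs(2) fz fz] mn by blast
        qed
        also have "\<dots> < e" using e DSn by (simp add: \<epsilon>_def field_simps)
        finally show "dist (h (zs m)) (h (zs n)) < e" by (simp add: dist_real_def)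
      qed
    qed
    then show ?thesis by (simp add: Cauchy_convergent_iff)
  qed
  define L where "L h = lim (\<lambda>n. h (zs n))" for h :: "'x \<times> (nat \<Rightarrow> 'y) \<Rightarrow> real"
  have Lt: "(\<lambda>n. h (zs n)) \<longlonglongrightarrow> L h" if "h \<in> SD" for h
    using conv[OF that] unfolding L_def by (simp add: convergent_LIMSEQ_iff)
  have Lbound: "\<bar>L h\<bar> \<le> DS h" if h: "h \<in> SD" for h
  proof -
    have "\<bar>h (zs n)\<bar> \<le> DS h" for n using Ss.dn_upper[OF SD_bnd[OF h] zs(1) zs(2)] .
    then show ?thesis using tendsto_rabs[OF Lt[OF h]] by (intro LIMSEQ_le_const2[of "\<lambda>n. \<bar>h (zs n)\<bar>"]) auto
  qed
  show ?thesis unfolding frechet_diff_dual_norm_def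
  proof (intro exI[of _ L] conjI)
    show "\<forall>g\<in>SD. \<forall>h\<in>SD. L (\<lambda>v. g v + h v) = L g + L h"
    proof (intro ballI)
      fix g h assume g: "g \<in> SD" and h: "h \<in> SD"
      have "(\<lambda>v. g v + h v) \<in> SD" by (rule SD_add[OF g h])
      then have "(\<lambda>n. g (zs n) + h (zs n)) \<longlonglongrightarrow> L (\<lambda>v. g v + h v)" using Lt by auto
      moreover have "(\<lambda>n. g (zs n) + h (zs n)) \<longlonglongrightarrow> L g + L h" using Lt[OF g] Lt[OF h] by (rule tendsto_add)
      ultimately show "L (\<lambda>v. g v + h v) = L g + L h" by (rule LIMSEQ_unique)
    qed
    show "\<forall>a. \<forall>g\<in>SD. L (\<lambda>v. a * g v) = a * L g"
    proof (intro allI ballI)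
      fix a g assume g: "g \<in> SD"
      have "(\<lambda>v. a * g v) \<in> SD" by (rule SD_scale[OF g])
      then have "(\<lambda>n. a * g (zs n)) \<longlonglongrightarrow> L (\<lambda>v. a * g v)" using Lt by auto
      moreover have "(\<lambda>n. a * g (zs n)) \<longlonglongrightarrow> a * L g" using Lt[OF g] by (rule tendsto_mult_left)
      ultimately show "L (\<lambda>v. a * g v) = a * L g" by (rule LIMSEQ_unique)
    qed
    show "\<exists>C. \<forall>g\<in>SD. \<bar>L g\<bar> \<le> C * DS g" using Lbound by (intro exI[of _ 1]) auto
    show "\<forall>\<epsilon>>0. \<exists>\<delta>>0. \<forall>h\<in>SD. DS h < \<delta> \<longrightarrow> \<bar>DS (\<lambda>v. f v + h v) - DS f - L h\<bar> \<le> \<epsilon> * DS h"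
    proof (intro allI impI)
      fix \<epsilon> :: real assume \<epsilon>: "\<epsilon> > 0"
      obtain \<delta> where \<delta>: "\<delta> > 0" "\<forall>w w'. w \<in> SS \<longrightarrow> snorm w \<le> 1 \<longrightarrow> w' \<in> SS \<longrightarrow> snorm w' \<le> 1 \<longrightarrow>
              f w \<ge> 1 - \<delta> \<longrightarrow> f w' \<ge> 1 - \<delta> \<longrightarrow> snorm (sadd w (sscale (-1) w')) \<le> \<epsilon>"
        using Q[OF \<epsilon>] by auto
      obtain M where M: "\<forall>n\<ge>M. \<forall>w. w \<in> SS \<longrightarrow> snorm w \<le> 1 \<longrightarrow> f w \<ge> 1 - \<delta> \<longrightarrow>
                 snorm (sadd w (sscale (-1) (zs n))) \<le> \<epsilon>"
        using close[OF \<epsilon> \<delta>(2) \<delta>(1)] by auto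
      show "\<exists>\<delta>>0. \<forall>h\<in>SD. DS h < \<delta> \<longrightarrow> \<bar>DS (\<lambda>v. f v + h v) - DS f - L h\<bar> \<le> \<epsilon> * DS h"
      proof (intro exI[of _ "\<delta> / 3"] conjI ballI impI)
        show "\<delta> / 3 > 0" using \<delta> by simp
        fix h assume h: "h \<in> SD" and hs: "DS h < \<delta> / 3"
        define F where "F = (\<lambda>v. f v + h v)"
        have hb: "Ss.bnd h" by (rule SD_bnd[OF h])
        have Fb: "Ss.bnd F" unfolding F_def by (rule Ss.bnd_add[OF fb hb])
        have DSn: "DS h \<ge> 0" by (rule Ss.dn_nonneg[OF hb])
        have "DS f \<le> DS F + DS (\<lambda>v. (-1) * h v)"
        proof -
          have "f = (\<lambda>v. F v + (-1) * h v)" unfolding F_def by auto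
          then show ?thesis using Ss.dn_add[OF Fb Ss.bnd_scale[OF hb, of "-1"]] by simp
        qed
        then have lowF: "DS F \<ge> 1 - DS h" using Ss.dn_scale[OF hb, of "-1"] f1 by simp
        have lower: "1 + L h \<le> DS F"
        proof -
          have "(\<lambda>n. F (zs n)) \<longlonglongrightarrow> 1 + L h" unfolding F_def by (rule tendsto_add[OF fzs Lt[OF h]])
          moreover have "F (zs n) \<le> DS F" for n using Ss.dn_upper[OF Fb zs(1) zs(2), of n] by linarith
          ultimately show ?thesis by (intro LIMSEQ_le_const2) auto
        qed
        have upper: "DS F \<le> 1 + L h + \<epsilon> * DS h + \<eta>" if \<eta>: "\<eta> > 0" "\<eta> < \<delta> / 3" for \<eta>
        proof -
          obtain v where v: "v \<in> SS" "snorm v \<le> 1" "DS F - \<eta> < \<bar>F v\<bar>"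
            using Ss.dn_approx[OF Fb \<eta>(1)] by auto
          have "\<exists>w. w \<in> SS \<and> snorm w \<le> 1 \<and> DS F - \<eta> < F w"
          proof (cases "F v \<ge> 0")
            case True then have "DS F - \<eta> < F v" using v by auto
            then show ?thesis using v by blast
          next
            case False
            have "F (sscale (-1) v) = - F v" using Fb v unfolding Ss.bnd_def by auto
            then show ?thesis using v False SS_sc[OF v(1), of "-1"] snorm_sc[OF v(1), of "-1"]
              by (intro exI[of _ "sscale (-1) v"]) auto
          qed
          then obtain w where w: "w \<in> SS" "snorm w \<le> 1" "DS F - \<eta> < F w" by auto
          have hw: "\<bar>h w\<bar> \<le> DS h" using Ss.dn_upper[OF hb w(1) w(2)] .
          have fw: "f w \<ge> 1 - \<delta>" using w(3) lowF hw \<eta> hs unfolding F_def by linarith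
          have ev: "DS F - 1 - \<epsilon> * DS h - \<eta> \<le> h (zs n)" if n: "n \<ge> M" for n
          proof -
            have "\<bar>h w - h (zs n)\<bar> \<le> DS h * snorm (sadd w (sscale (-1) (zs n)))" by (rule hC[OF h w(1) zs(1)])
            also have "\<dots> \<le> DS h * \<epsilon>"
              using mult_left_mono[OF M[rule_format, OF n w(1) w(2) fw] DSn] .
            finally have "h w \<le> h (zs n) + \<epsilon> * DS h" by (simp add: algebra_simps)
            moreover have "f w \<le> 1" using fle w by auto
            ultimately show ?thesis using w(3) unfolding F_def by linarith
          qed
          have "DS F - 1 - \<epsilon> * DS h - \<eta> \<le> L h"
            by (rule LIMSEQ_le_const[OF Lt[OF h]]) (use ev in auto)
          then show ?thesis by linarith
        qed
        have "DS F \<le> 1 + L h + \<epsilon> * DS h"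
        proof (rule field_le_epsilon)
          fix e :: real assume e: "e > 0"
          show "DS F \<le> 1 + L h + \<epsilon> * DS h + e"
          proof (cases "e < \<delta> / 3")
            case True then show ?thesis using upper e by auto
          next
            case False
            then have "\<delta> / 6 \<le> e" using e by simp
            moreover have "DS F \<le> 1 + L h + \<epsilon> * DS h + \<delta> / 6" using upper \<delta> by auto
            ultimately show ?thesis by linarith
          qed
        qed
        moreover have "0 \<le> \<epsilon> * DS h" using \<epsilon> DSn by simp
        ultimately show "\<bar>DS (\<lambda>v. f v + h v) - DS f - L h\<bar> \<le> \<epsilon> * DS h"
          using lower f1 unfolding F_def by (simp add: abs_le_iff)
      qed
    qed
  qed
qed

end

(* from f/F.thy *)


context sset
begin

abbreviation "ZD k \<equiv> dual_sp (+) (*\<^sub>R) (Z k) (N k)"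

lemma ZD_bnd: "h \<in> ZD k \<Longrightarrow> Zs.bnd k h"
  unfolding dual_sp_def lin_fun_on_def Zs.bnd_def by auto

lemma ZD_add: assumes "g \<in> ZD k" "h \<in> ZD k" shows "(\<lambda>v. g v + h v) \<in> ZD k"
proof -
  obtain C where C: "\<forall>v\<in>Z k. \<bar>g v\<bar> \<le> C * N k v" using assms unfolding dual_sp_def by auto
  obtain D where D: "\<forall>v\<in>Z k. \<bar>h v\<bar> \<le> D * N k v" using assms unfolding dual_sp_def by auto
  have "\<forall>v\<in>Z k. \<bar>g v + h v\<bar> \<le> (C + D) * N k v"
    using C D by (auto simp: distrib_right intro: order_trans[OF abs_triangle_ineq add_mono])
  then have "\<exists>C. \<forall>v\<in>Z k. \<bar>g v + h v\<bar> \<le> C * N k v" by blast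
  then show ?thesis using assms unfolding dual_sp_def lin_fun_on_def by (simp add: distrib_left)
qed

lemma ZD_scale: assumes "g \<in> ZD k" shows "(\<lambda>v. a * g v) \<in> ZD k"
proof -
  obtain C where C: "\<forall>v\<in>Z k. \<bar>g v\<bar> \<le> C * N k v" using assms unfolding dual_sp_def by auto
  have "\<forall>v\<in>Z k. \<bar>a * g v\<bar> \<le> (\<bar>a\<bar> * C) * N k v"
    using C by (auto simp: abs_mult mult.assoc intro: mult_left_mono)
  then have "\<exists>C. \<forall>v\<in>Z k. \<bar>a * g v\<bar> \<le> C * N k v" by blast
  then show ?thesis using assms unfolding dual_sp_def lin_fun_on_def by (simp add: algebra_simps)
qed

definition goodL :: "nat \<Rightarrow> ('x \<times> 'y \<Rightarrow> real) \<Rightarrow> (('x \<times> 'y \<Rightarrow> real) \<Rightarrow> real) \<Rightarrow> bool" where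
  "goodL k \<phi> L \<longleftrightarrow>
     (\<forall>g\<in>ZD k. \<forall>h\<in>ZD k. L (\<lambda>v. g v + h v) = L g + L h) \<and>
     (\<forall>c. \<forall>g\<in>ZD k. L (\<lambda>v. c * g v) = c * L g) \<and>
     (\<forall>h\<in>ZD k. \<bar>L h\<bar> \<le> DN k h) \<and> DN k \<phi> \<le> L \<phi> \<and>
     (\<forall>\<epsilon>>0. \<exists>\<delta>>0. \<forall>h\<in>ZD k. DN k h < \<delta> \<longrightarrow> DN k (\<lambda>v. \<phi> v + h v) \<le> DN k \<phi> + L h + \<epsilon> * DN k h)"

lemma goodL_exists:
  assumes phi: "\<phi> \<in> ZD k" and fr: "frechet_diff_dual_norm (+) (*\<^sub>R) (Z k) (N k) \<phi>"
  shows "\<exists>L. goodL k \<phi> L"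
proof -
  obtain L where Ladd: "\<forall>g\<in>ZD k. \<forall>h\<in>ZD k. L (\<lambda>v. g v + h v) = L g + L h"
    and Lsc: "\<forall>c. \<forall>g\<in>ZD k. L (\<lambda>v. c * g v) = c * L g"
    and Fr: "\<forall>\<epsilon>>0. \<exists>\<delta>>0. \<forall>h\<in>ZD k. DN k h < \<delta> \<longrightarrow> \<bar>DN k (\<lambda>v. \<phi> v + h v) - DN k \<phi> - L h\<bar> \<le> \<epsilon> * DN k h"
    using fr unfolding frechet_diff_dual_norm_def by blast
  have pb: "Zs.bnd k \<phi>" by (rule ZD_bnd[OF phi])
  have up: "L h \<le> DN k h" if h: "h \<in> ZD k" for h
  proof (rule field_le_epsilon)
    fix \<epsilon> :: real assume \<epsilon>: "\<epsilon> > 0"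
    have hb: "Zs.bnd k h" by (rule ZD_bnd[OF h])
    have dh: "DN k h \<ge> 0" by (rule Zs.dn_nonneg[OF hb])
    define \<epsilon>' where "\<epsilon>' = \<epsilon> / (DN k h + 1)"
    have \<epsilon>': "\<epsilon>' > 0" using \<epsilon> dh by (simp add: \<epsilon>'_def)
    obtain \<delta> where \<delta>: "\<delta> > 0" "\<forall>h\<in>ZD k. DN k h < \<delta> \<longrightarrow> \<bar>DN k (\<lambda>v. \<phi> v + h v) - DN k \<phi> - L h\<bar> \<le> \<epsilon>' * DN k h"
      using Fr \<epsilon>' by blast
    define \<tau> where "\<tau> = \<delta> / (2 * (DN k h + 1))"
    have \<tau>: "\<tau> > 0" using \<delta> dh by (simp add: \<tau>_def)
    have th: "(\<lambda>v. \<tau> * h v) \<in> ZD k" by (rule ZD_scale[OF h])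
    have dth: "DN k (\<lambda>v. \<tau> * h v) = \<tau> * DN k h" using Zs.dn_scale[OF hb, of \<tau>] \<tau> by simp
    have "\<tau> * DN k h < \<delta>"
    proof -
      have "\<tau> * DN k h \<le> \<tau> * (DN k h + 1)" using \<tau> by simp
      also have "\<dots> = \<delta> / 2" using dh by (simp add: \<tau>_def field_simps)
      finally show ?thesis using \<delta> by simp
    qed
    then have "\<bar>DN k (\<lambda>v. \<phi> v + \<tau> * h v) - DN k \<phi> - L (\<lambda>v. \<tau> * h v)\<bar> \<le> \<epsilon>' * (\<tau> * DN k h)"
      using \<delta>(2) th dth by auto
    moreover have "DN k (\<lambda>v. \<phi> v + \<tau> * h v) \<le> DN k \<phi> + \<tau> * DN k h"
      using Zs.dn_add[OF pb Zs.bnd_scale[OF hb, of \<tau>]] dth by simp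
    moreover have "L (\<lambda>v. \<tau> * h v) = \<tau> * L h" using Lsc h by auto
    ultimately have "\<tau> * L h \<le> \<tau> * DN k h + \<epsilon>' * (\<tau> * DN k h)" by (simp add: abs_le_iff)
    then have "\<tau> * L h \<le> \<tau> * (DN k h + \<epsilon>' * DN k h)" by (simp add: algebra_simps)
    then have "L h \<le> DN k h + \<epsilon>' * DN k h" using \<tau> by (rule mult_left_le_imp_le)
    moreover have "\<epsilon>' * DN k h \<le> \<epsilon>"
    proof -
      have "\<epsilon>' * DN k h \<le> \<epsilon>' * (DN k h + 1)" using \<epsilon>' by simp
      also have "\<dots> = \<epsilon>" using dh by (simp add: \<epsilon>'_def)
      finally show ?thesis .
    qed
    ultimately show "L h \<le> DN k h + \<epsilon>" by linarith
  qed
  have abs: "\<bar>L h\<bar> \<le> DN k h" if h: "h \<in> ZD k" for h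
  proof -
    have hb: "Zs.bnd k h" by (rule ZD_bnd[OF h])
    have "L (\<lambda>v. (-1) * h v) \<le> DN k (\<lambda>v. (-1) * h v)" by (rule up[OF ZD_scale[OF h]])
    moreover have "L (\<lambda>v. (-1) * h v) = (-1) * L h" using Lsc h by blast
    moreover have "DN k (\<lambda>v. (-1) * h v) = DN k h" using Zs.dn_scale[OF hb, of "-1"] by simp
    ultimately have "- L h \<le> DN k h" by simp
    then show ?thesis using up[OF h] by (simp add: abs_le_iff)
  qed
  have lphi: "DN k \<phi> \<le> L \<phi>"
  proof (rule field_le_epsilon)
    fix \<epsilon> :: real assume \<epsilon>: "\<epsilon> > 0"
    have dp: "DN k \<phi> \<ge> 0" by (rule Zs.dn_nonneg[OF pb])
    define \<epsilon>' where "\<epsilon>' = \<epsilon> / (DN k \<phi> + 1)"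
    have \<epsilon>': "\<epsilon>' > 0" using \<epsilon> dp by (simp add: \<epsilon>'_def)
    obtain \<delta> where \<delta>: "\<delta> > 0" "\<forall>h\<in>ZD k. DN k h < \<delta> \<longrightarrow> \<bar>DN k (\<lambda>v. \<phi> v + h v) - DN k \<phi> - L h\<bar> \<le> \<epsilon>' * DN k h"
      using Fr \<epsilon>' by blast
    define \<tau> where "\<tau> = min (1/2) (\<delta> / (2 * (DN k \<phi> + 1)))"
    have \<tau>: "\<tau> > 0" "\<tau> < 1" using \<delta> dp by (auto simp: \<tau>_def)
    have th: "(\<lambda>v. (-\<tau>) * \<phi> v) \<in> ZD k" by (rule ZD_scale[OF phi])
    have dth: "DN k (\<lambda>v. (-\<tau>) * \<phi> v) = \<tau> * DN k \<phi>" using Zs.dn_scale[OF pb, of "-\<tau>"] \<tau> by simp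
    have "\<tau> * DN k \<phi> < \<delta>"
    proof -
      have t1: "\<tau> \<le> \<delta> / (2 * (DN k \<phi> + 1))" unfolding \<tau>_def by simp
      have "\<tau> * DN k \<phi> \<le> \<tau> * (DN k \<phi> + 1)" using \<tau> by simp
      also have "\<dots> \<le> (\<delta> / (2 * (DN k \<phi> + 1))) * (DN k \<phi> + 1)"
        using t1 dp by (intro mult_right_mono) auto
      finally have "\<tau> * DN k \<phi> \<le> (\<delta> / (2 * (DN k \<phi> + 1))) * (DN k \<phi> + 1)" .
      also have "\<dots> = \<delta> / 2" using dp by (simp add: field_simps)
      finally show ?thesis using \<delta> by simp
    qed
    then have "\<bar>DN k (\<lambda>v. \<phi> v + (-\<tau>) * \<phi> v) - DN k \<phi> - L (\<lambda>v. (-\<tau>) * \<phi> v)\<bar> \<le> \<epsilon>' * (\<tau> * DN k \<phi>)"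
      using \<delta>(2) th dth by auto
    moreover have "DN k (\<lambda>v. \<phi> v + (-\<tau>) * \<phi> v) = (1 - \<tau>) * DN k \<phi>"
    proof -
      have "(\<lambda>v. \<phi> v + (-\<tau>) * \<phi> v) = (\<lambda>v. (1 - \<tau>) * \<phi> v)" by (auto simp: algebra_simps)
      then show ?thesis using Zs.dn_scale[OF pb, of "1 - \<tau>"] \<tau> by simp
    qed
    moreover have "L (\<lambda>v. (-\<tau>) * \<phi> v) = (-\<tau>) * L \<phi>" using Lsc phi by blast
    ultimately have "\<tau> * DN k \<phi> \<le> \<tau> * L \<phi> + \<epsilon>' * (\<tau> * DN k \<phi>)" by (simp add: abs_le_iff algebra_simps)
    then have "\<tau> * DN k \<phi> \<le> \<tau> * (L \<phi> + \<epsilon>' * DN k \<phi>)" by (simp add: algebra_simps)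
    then have "DN k \<phi> \<le> L \<phi> + \<epsilon>' * DN k \<phi>" using \<tau>(1) by (rule mult_left_le_imp_le)
    moreover have "\<epsilon>' * DN k \<phi> \<le> \<epsilon>"
    proof -
      have "\<epsilon>' * DN k \<phi> \<le> \<epsilon>' * (DN k \<phi> + 1)" using \<epsilon>' by simp
      also have "\<dots> = \<epsilon>" using dp by (simp add: \<epsilon>'_def)
      finally show ?thesis .
    qed
    ultimately show "DN k \<phi> \<le> L \<phi> + \<epsilon>" by linarith
  qed
  have fr2: "\<forall>\<epsilon>>0. \<exists>\<delta>>0. \<forall>h\<in>ZD k. DN k h < \<delta> \<longrightarrow> DN k (\<lambda>v. \<phi> v + h v) \<le> DN k \<phi> + L h + \<epsilon> * DN k h"
  proof (intro allI impI)
    fix \<epsilon> :: real assume "\<epsilon> > 0"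
    then obtain \<delta> where "\<delta> > 0" "\<forall>h\<in>ZD k. DN k h < \<delta> \<longrightarrow> \<bar>DN k (\<lambda>v. \<phi> v + h v) - DN k \<phi> - L h\<bar> \<le> \<epsilon> * DN k h"
      using Fr by blast
    then show "\<exists>\<delta>>0. \<forall>h\<in>ZD k. DN k h < \<delta> \<longrightarrow> DN k (\<lambda>v. \<phi> v + h v) \<le> DN k \<phi> + L h + \<epsilon> * DN k h"
      by (intro exI[of _ \<delta>]) (auto simp: abs_le_iff)
  qed
  show ?thesis unfolding goodL_def using Ladd Lsc abs lphi fr2 by blast
qed

end

(* from g/G.thy *)


context sset
begin

lemma yfun_scale: "yfun k u b \<Longrightarrow> yfun k (\<lambda>y. c * u y) (\<bar>c\<bar> * b)"
  using yfun_lin[of k u b u b c 0] by simp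

lemma Lam_construct:
  assumes G: "bounded_linear G" and m: "m > 0" and s: "s \<ge> 1"
    and \<gamma>0: "\<And>k. 0 \<le> \<gamma> k" and \<gamma>s: "summable (\<lambda>k. (\<gamma> k)\<^sup>2)" and \<gamma>le: "(\<Sum>k. (\<gamma> k)\<^sup>2) \<le> s\<^sup>2"
    and v: "\<And>k. yfun k (v k) B"
    and dn: "\<And>k. DN k (P k G (\<lambda>y. s * v k y)) \<le> m"
  shows "Lam (\<lambda>x. (1/m) * G x) (\<lambda>k. \<gamma> k / s) (\<lambda>k y. (1/m) * (s * v k y))"
proof -
  have bl: "bounded_linear (\<lambda>x. (1/m) * G x)" by (rule bounded_linear_const_mult[OF G])
  have yf: "yfun k (\<lambda>y. (1/m) * (s * v k y)) (\<bar>1/m\<bar> * (\<bar>s\<bar> * B))" for k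
    by (rule yfun_scale[OF yfun_scale[OF v]])
  have dn': "DN k (P k (\<lambda>x. (1/m) * G x) (\<lambda>y. (1/m) * (s * v k y))) \<le> 1" for k
  proof -
    have yf2: "yfun k (\<lambda>y. s * v k y) (\<bar>s\<bar> * B)" by (rule yfun_scale[OF v])
    have pb: "Zs.bnd k (P k G (\<lambda>y. s * v k y))" by (rule P_bnd[OF G yf2])
    have "DN k (P k (\<lambda>x. (1/m) * G x) (\<lambda>y. (1/m) * (s * v k y))) = DN k (\<lambda>w. (1/m) * P k G (\<lambda>y. s * v k y) w)"
      by (simp only: P_scale)
    also have "\<dots> = (1/m) * DN k (P k G (\<lambda>y. s * v k y))" using Zs.dn_scale[OF pb, of "1/m"] m by simp
    also have "\<dots> \<le> (1/m) * m" using dn[of k] m by (intro mult_left_mono) auto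
    finally show ?thesis using m by simp
  qed
  have gk: "\<gamma> k \<le> s" for k
  proof -
    have "(\<gamma> k)\<^sup>2 = (\<Sum>i\<in>{k}. (\<gamma> i)\<^sup>2)" by simp
    also have "\<dots> \<le> (\<Sum>i. (\<gamma> i)\<^sup>2)" by (rule sum_le_suminf[OF \<gamma>s]) auto
    also have "\<dots> \<le> s\<^sup>2" by (rule \<gamma>le)
    finally show ?thesis using s \<gamma>0[of k] by (meson abs_le_square_iff abs_of_nonneg order_trans zero_le_one power2_le_imp_le)
  qed
  have sq: "(\<lambda>k. (\<gamma> k / s)\<^sup>2) = (\<lambda>k. (\<gamma> k)\<^sup>2 / s\<^sup>2)" by (simp add: power_divide)
  have sm: "summable (\<lambda>k. (\<gamma> k / s)\<^sup>2)" unfolding sq by (rule summable_divide[OF \<gamma>s])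
  have "(\<Sum>k. (\<gamma> k / s)\<^sup>2) = (\<Sum>k. (\<gamma> k)\<^sup>2) / s\<^sup>2" unfolding sq by (rule suminf_divide[OF \<gamma>s])
  also have "\<dots> \<le> 1" using \<gamma>le s by simp
  finally have sl: "(\<Sum>k. (\<gamma> k / s)\<^sup>2) \<le> 1" .
  show ?thesis unfolding in_Lambda_def
    using bl yf[THEN yfun_dual_sp] dn' \<gamma>0 gk s sm sl by (auto simp: field_simps)
qed

lemma lam_construct_val:
  assumes L: "Lam (\<lambda>x. (1/m) * G x) (\<lambda>k. \<gamma> k / s) (\<lambda>k y. (1/m) * (s * v k y))"
    and m: "m > 0" and s: "s \<ge> 1" and \<gamma>s: "summable (\<lambda>k. (\<gamma> k)\<^sup>2)" and v: "\<And>k. yfun k (v k) B"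
    and w: "(x, y) \<in> SS"
  shows "summable (\<lambda>k. \<gamma> k * v k (y k))"
    and "lam (\<lambda>x. (1/m) * G x) (\<lambda>k. \<gamma> k / s) (\<lambda>k y. (1/m) * (s * v k y)) (x, y)
         = (1/m) * (G x + (\<Sum>k. \<gamma> k * v k (y k)))"
proof -
  show sm: "summable (\<lambda>k. \<gamma> k * v k (y k))" by (rule ser_summable(1)[OF w \<gamma>s v])
  have eq: "(\<lambda>k. \<gamma> k / s * ((1/m) * (s * v k (y k)))) = (\<lambda>k. (1/m) * (\<gamma> k * v k (y k)))"
    using s by (auto simp: field_simps)
  have "(\<Sum>k. \<gamma> k / s * ((1/m) * (s * v k (y k)))) = (1/m) * (\<Sum>k. \<gamma> k * v k (y k))"
    unfolding eq by (rule suminf_mult[OF sm])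
  then show "lam (\<lambda>x. (1/m) * G x) (\<lambda>k. \<gamma> k / s) (\<lambda>k y. (1/m) * (s * v k y)) (x, y)
         = (1/m) * (G x + (\<Sum>k. \<gamma> k * v k (y k)))"
    using w by (simp add: lam_val distrib_left)
qed

end

locale fset = sset Yset N
  for Yset :: "nat \<Rightarrow> 'y::real_vector set" and N :: "nat \<Rightarrow> 'x::banach \<times> 'y \<Rightarrow> real" +
  fixes xs :: "'x \<Rightarrow> real" and \<alpha> :: "nat \<Rightarrow> real" and ys :: "nat \<Rightarrow> 'y \<Rightarrow> real"
  assumes smooth: "\<And>k. dual_frechet_smooth (+) (*\<^sub>R) (UNIV \<times> Yset k) (N k)"
    and zLam: "in_Lambda Yset N xs \<alpha> ys"
    and zS: "dual_norm (SigmaSet Yset N) (sigma_norm Yset N) (lam_fun Yset N xs \<alpha> ys) = 1"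
    and xsmall: "onorm xs < 1"
begin

abbreviation "a \<equiv> onorm xs"
abbreviation "\<phi> k \<equiv> P k xs (ys k)"
abbreviation "nn k \<equiv> DN k (\<phi> k)"

lemmas ZP = Lam_props[OF zLam]

lemma a_nonneg: "0 \<le> a" using onorm_pos_le[OF ZP(1)] .

lemma phi_ZD: "\<phi> k \<in> ZD k" by (rule P_dual[OF ZP(1) ZP(3)])
lemma nn_le: "nn k \<le> 1" by (rule ZP(8))
lemma nn_nonneg: "0 \<le> nn k" by (rule Zs.dn_nonneg[OF ZD_bnd[OF phi_ZD]])

definition big :: "nat \<Rightarrow> bool" where "big k \<longleftrightarrow> \<alpha> k > 0 \<and> nn k > (1 + a) / 2"

definition Lf :: "nat \<Rightarrow> ('x \<times> 'y \<Rightarrow> real) \<Rightarrow> real" where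
  "Lf k = (SOME L. goodL k (\<phi> k) L)"

lemma Lf_good: assumes "big k" shows "goodL k (\<phi> k) (Lf k)"
proof -
  have "(1 + a) / 2 > 0" using a_nonneg by simp
  then have pos: "nn k > 0" using assms unfolding big_def by linarith
  have "\<exists>v\<in>Z k. \<phi> k v \<noteq> 0"
  proof (rule ccontr)
    assume "\<not> ?thesis"
    then have "nn k \<le> 0" by (intro Zs.dn_least) auto
    with pos show False by simp
  qed
  then have "frechet_diff_dual_norm (+) (*\<^sub>R) (Z k) (N k) (\<phi> k)"
    using smooth[of k] phi_ZD unfolding dual_frechet_smooth_def by blast
  then have "\<exists>L. goodL k (\<phi> k) L" by (rule goodL_exists[OF phi_ZD])
  then show ?thesis unfolding Lf_def by (rule someI_ex)
qed

lemma goodL_D: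
  assumes "goodL k \<phi>' L"
  shows "\<And>g h. g \<in> ZD k \<Longrightarrow> h \<in> ZD k \<Longrightarrow> L (\<lambda>v. g v + h v) = L g + L h"
    and "\<And>c g. g \<in> ZD k \<Longrightarrow> L (\<lambda>v. c * g v) = c * L g"
    and "\<And>h. h \<in> ZD k \<Longrightarrow> \<bar>L h\<bar> \<le> DN k h"
    and "DN k \<phi>' \<le> L \<phi>'"
    and "\<And>\<epsilon>. \<epsilon> > 0 \<Longrightarrow> \<exists>\<delta>>0. \<forall>h\<in>ZD k. DN k h < \<delta> \<longrightarrow> DN k (\<lambda>v. \<phi>' v + h v) \<le> DN k \<phi>' + L h + \<epsilon> * DN k h"
  using assms unfolding goodL_def by blast+

abbreviation "ly k \<equiv> Lf k (P k (\<lambda>_. 0) (ys k))"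
abbreviation "lg k g \<equiv> Lf k (P k g (\<lambda>_. 0))"
abbreviation "lu k u \<equiv> Lf k (P k (\<lambda>_. 0) u)"

lemma ly_bounds: assumes "big k" shows "(1 - a) / 2 < ly k" "ly k \<le> 2"
proof -
  note gl = goodL_D[OF Lf_good[OF assms]]
  have bl0: "bounded_linear (\<lambda>_::'x. 0::real)" by simp
  have d1: "P k xs (\<lambda>_. 0) \<in> ZD k" by (rule P_dual[OF ZP(1) yfun_zero[of 0]]) simp
  have d2: "P k (\<lambda>_. 0) (ys k) \<in> ZD k" by (rule P_dual[OF bl0 ZP(3)])
  have e1: "Lf k (\<phi> k) = Lf k (P k xs (\<lambda>_. 0)) + ly k"
    by (subst P_split) (rule gl(1)[OF d1 d2])
  have e2: "Lf k (P k xs (\<lambda>_. 0)) \<le> a"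
    using gl(3)[OF d1] dn_Pg[OF ZP(1), of k] by linarith
  have e3: "nn k \<le> Lf k (\<phi> k)" by (rule gl(4))
  have e4: "nn k > (1 + a) / 2" using assms unfolding big_def by blast
  have e5: "nn k - a \<le> ly k" using e1 e2 e3 by linarith
  have e6: "(1 - a) / 2 = (1 + a) / 2 - a" by (simp add: field_simps)
  show "(1 - a) / 2 < ly k" unfolding e6 using e4 e5 by linarith
  show "ly k \<le> 2" using gl(3)[OF d2] dn_Pu[OF ZP(3), of k] by simp
qed

lemma lg_bound: assumes "big k" "bounded_linear g" "onorm g \<le> 1" shows "\<bar>lg k g\<bar> \<le> 1"
proof -
  note gl = goodL_D[OF Lf_good[OF assms(1)]]
  have d1: "P k g (\<lambda>_. 0) \<in> ZD k" by (rule P_dual[OF assms(2) yfun_zero[of 0]]) simp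
  show ?thesis using gl(3)[OF d1] dn_Pg[OF assms(2), of k] assms(3) by linarith
qed

lemma lu_bound: assumes "big k" "yfun k u 1" shows "\<bar>lu k u\<bar> \<le> 2"
proof -
  note gl = goodL_D[OF Lf_good[OF assms(1)]]
  have bl0: "bounded_linear (\<lambda>_::'x. 0::real)" by simp
  have d2: "P k (\<lambda>_. 0) u \<in> ZD k" by (rule P_dual[OF bl0 assms(2)])
  show ?thesis using gl(3)[OF d2] dn_Pu[OF assms(2)] by simp
qed

end

(* from h/H.thy *)


context dn_space begin
lemma dn_lin2: assumes "bnd f" "bnd g"
  shows "dual_norm V n (\<lambda>v. c * f v + d * g v) \<le> \<bar>c\<bar> * dual_norm V n f + \<bar>d\<bar> * dual_norm V n g"
  using dn_add[OF bnd_scale[OF assms(1)] bnd_scale[OF assms(2)]] dn_scale[OF assms(1)] dn_scale[OF assms(2)]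
  by simp
end

context fset begin

lemma P_bnd0: "bounded_linear g \<Longrightarrow> Zs.bnd k (P k g (\<lambda>_. 0))"
  by (rule P_bnd[OF _ yfun_zero[of 0]]) auto
lemma P_bnd1: "yfun k u b \<Longrightarrow> Zs.bnd k (P k (\<lambda>_. 0) u)"
  by (rule P_bnd[OF _ _]) auto
lemma P_ZD0: "bounded_linear g \<Longrightarrow> P k g (\<lambda>_. 0) \<in> ZD k"
  by (rule P_dual[OF _ yfun_zero[of 0]]) auto
lemma P_ZD1: "yfun k u b \<Longrightarrow> P k (\<lambda>_. 0) u \<in> ZD k"
  by (rule P_dual[OF _ _]) auto

lemma ys1: "yfun k (ys k) 1" by (rule ZP(3))
lemma xs_bl: "bounded_linear xs" by (rule ZP(1))
lemma nn_phi_split: "\<phi> k = (\<lambda>v. P k xs (\<lambda>_. 0) v + P k (\<lambda>_. 0) (ys k) v)"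
  by (rule P_split)

lemma vv_yfun: assumes u: "yfun k u 1" and \<gamma>: "\<gamma> \<ge> 0" and \<alpha>: "\<alpha>' \<ge> 0" and \<beta>: "\<beta> \<ge> 0" and \<sigma>: "\<bar>\<sigma>\<bar> = 1" and t: "t \<ge> 0"
  shows "yfun k (\<lambda>y. (\<alpha>' * ys k y + \<sigma> * t * \<beta> * u y) / \<gamma>) ((\<alpha>' + t * \<beta>) / \<gamma>)"
proof -
  have "yfun k (\<lambda>y. (\<alpha>' / \<gamma>) * ys k y + (\<sigma> * t * \<beta> / \<gamma>) * u y) (\<bar>\<alpha>' / \<gamma>\<bar> * 1 + \<bar>\<sigma> * t * \<beta> / \<gamma>\<bar> * 1)"
    by (rule yfun_lin[OF ys1 u])
  moreover have "\<bar>\<alpha>' / \<gamma>\<bar> * 1 + \<bar>\<sigma> * t * \<beta> / \<gamma>\<bar> * 1 = (\<alpha>' + t * \<beta>) / \<gamma>"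
    using \<gamma> \<alpha> \<beta> \<sigma> t by (simp add: abs_mult add_divide_distrib)
  moreover have "(\<lambda>y. (\<alpha>' / \<gamma>) * ys k y + (\<sigma> * t * \<beta> / \<gamma>) * u y) = (\<lambda>y. (\<alpha>' * ys k y + \<sigma> * t * \<beta> * u y) / \<gamma>)"
    by (auto simp: add_divide_distrib)
  ultimately show ?thesis by simp
qed

lemma tail_regime:
  assumes g: "bounded_linear g" "onorm g \<le> 1" and u: "yfun k u 1" and \<beta>: "0 \<le> \<beta>" "\<beta> \<le> 1"
    and \<sigma>: "\<bar>\<sigma>\<bar> = 1" and t: "t > 0" and \<alpha>: "0 \<le> \<alpha> k" and \<rho>: "\<rho> > 0" "\<rho> \<le> 1" and c: "c > 0"
    and \<gamma>: "\<gamma> = \<alpha> k / \<rho> + t * c * \<beta>"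
    and h1: "\<rho> + (1 - \<rho>) * a \<le> 1 - t * (1 + BD)" and h2: "a + 2 / c \<le> 1 - t * (1 + BD)"
  shows "DN k (P k (\<lambda>x. xs x + \<sigma> * t * g x) (\<lambda>y. (\<alpha> k * ys k y + \<sigma> * t * \<beta> * u y) / \<gamma>)) \<le> 1 - t * BD"
proof -
  let ?F = "P k (\<lambda>x. xs x + \<sigma> * t * g x) (\<lambda>y. (\<alpha> k * ys k y + \<sigma> * t * \<beta> * u y) / \<gamma>)"
  have bx: "Zs.bnd k (P k xs (\<lambda>_. 0))" by (rule P_bnd0[OF xs_bl])
  have bg: "Zs.bnd k (P k g (\<lambda>_. 0))" by (rule P_bnd0[OF g(1)])
  have by': "Zs.bnd k (P k (\<lambda>_. 0) (ys k))" by (rule P_bnd1[OF ys1])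
  have bu: "Zs.bnd k (P k (\<lambda>_. 0) u)" by (rule P_bnd1[OF u])
  have dx: "DN k (P k xs (\<lambda>_. 0)) \<le> a" by (rule dn_Pg[OF xs_bl])
  have dg: "DN k (P k g (\<lambda>_. 0)) \<le> 1" using dn_Pg[OF g(1), of k] g(2) by linarith
  have du: "DN k (P k (\<lambda>_. 0) u) \<le> 2" using dn_Pu[OF u] by simp
  have \<gamma>0: "\<gamma> \<ge> 0" using \<gamma> \<alpha> \<rho> t c \<beta> by simp
  show ?thesis
  proof (cases "\<gamma> = 0")
    case True
    have "?F = (\<lambda>v. 1 * P k xs (\<lambda>_. 0) v + (\<sigma> * t) * P k g (\<lambda>_. 0) v)"
      using True by (auto simp: pair_fun_def)
    then have "DN k ?F \<le> \<bar>1\<bar> * DN k (P k xs (\<lambda>_. 0)) + \<bar>\<sigma> * t\<bar> * DN k (P k g (\<lambda>_. 0))"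
      using Zs.dn_lin2[OF bx bg, of 1 "\<sigma> * t"] by simp
    also have "\<dots> \<le> a + t * 1"
    proof -
      have "t * DN k (P k g (\<lambda>_. 0)) \<le> t * 1" using dg t by (intro mult_left_mono) auto
      moreover have "\<bar>\<sigma> * t\<bar> = t" using \<sigma> t by (simp add: abs_mult)
      ultimately show ?thesis using dx by (simp only: abs_one mult_1)
    qed
    also have "\<dots> \<le> 1 - t * BD"
    proof -
      have c2: "2 / c > 0" using c by simp
      have h2': "a + 2 / c \<le> 1 - t - t * BD" using h2 by (simp add: algebra_simps)
      show ?thesis using h2' c2 by linarith
    qed
    finally show ?thesis .
  next
    case False
    then have \<gamma>p: "\<gamma> > 0" using \<gamma>0 by simp
    define A where "A = (\<lambda>v. \<rho> * \<phi> k v + (1 - \<rho>) * P k xs (\<lambda>_. 0) v)"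
    define B where "B = (\<lambda>v. 1 * P k xs (\<lambda>_. 0) v + (\<sigma> / c) * P k (\<lambda>_. 0) u v)"
    have bphi: "Zs.bnd k (\<phi> k)" by (rule ZD_bnd[OF phi_ZD])
    have bA: "Zs.bnd k A" unfolding A_def by (intro Zs.bnd_add Zs.bnd_scale bphi bx)
    have bB: "Zs.bnd k B" unfolding B_def by (intro Zs.bnd_add Zs.bnd_scale bx bu)
    have dA: "DN k A \<le> \<rho> * nn k + (1 - \<rho>) * a"
    proof -
      have "DN k A \<le> \<bar>\<rho>\<bar> * nn k + \<bar>1 - \<rho>\<bar> * DN k (P k xs (\<lambda>_. 0))"
        unfolding A_def by (rule Zs.dn_lin2[OF bphi bx])
      also have "\<dots> \<le> \<rho> * nn k + (1 - \<rho>) * a" using \<rho> dx by (simp add: mult_left_mono)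
      finally show ?thesis .
    qed
    have dA1: "DN k A \<le> 1 - t * (1 + BD)"
    proof -
      have "\<rho> * nn k \<le> \<rho> * 1" using nn_le \<rho> by (intro mult_left_mono) auto
      then show ?thesis using dA h1 by linarith
    qed
    have dB: "DN k B \<le> 1 - t * (1 + BD)"
    proof -
      have "DN k B \<le> \<bar>1\<bar> * DN k (P k xs (\<lambda>_. 0)) + \<bar>\<sigma> / c\<bar> * DN k (P k (\<lambda>_. 0) u)"
        unfolding B_def by (rule Zs.dn_lin2[OF bx bu])
      also have "\<dots> = DN k (P k xs (\<lambda>_. 0)) + (1 / c) * DN k (P k (\<lambda>_. 0) u)" using \<sigma> c by simp
      also have "\<dots> \<le> a + (1 / c) * 2" using dx du c by (intro add_mono mult_left_mono) auto
      finally show ?thesis using h2 by simp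
    qed
    have eq: "(\<lambda>v. \<gamma> * ?F v) = (\<lambda>v. (\<alpha> k / \<rho>) * A v + (t * c * \<beta>) * B v + (\<sigma> * t * \<gamma>) * P k g (\<lambda>_. 0) v)"
    proof
      fix v :: "'x \<times> 'y"
      obtain x y where v: "v = (x, y)" by fastforce
      show "\<gamma> * ?F v = (\<alpha> k / \<rho>) * A v + (t * c * \<beta>) * B v + (\<sigma> * t * \<gamma>) * P k g (\<lambda>_. 0) v"
      proof (cases "y \<in> Yset k")
        case True
        have g0: "\<gamma> \<noteq> 0" using \<gamma>p by simp
        have e1: "\<gamma> * ((\<alpha> k * ys k y + \<sigma> * t * \<beta> * u y) / \<gamma>) = \<alpha> k * ys k y + \<sigma> * t * \<beta> * u y"
          using g0 by simp
        have e2: "(\<alpha> k / \<rho>) * (\<rho> * (xs x + ys k y) + (1 - \<rho>) * xs x) = (\<alpha> k / \<rho>) * xs x + \<alpha> k * ys k y"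
          using \<rho> by (simp add: field_simps)
        have e3: "(t * c * \<beta>) * (1 * xs x + (\<sigma> / c) * u y) = t * c * \<beta> * xs x + \<sigma> * t * \<beta> * u y"
          using c by (simp add: field_simps)
        have "\<gamma> * ?F v = \<gamma> * xs x + \<sigma> * t * \<gamma> * g x + (\<alpha> k * ys k y + \<sigma> * t * \<beta> * u y)"
          using True v e1 by (simp add: P_eq algebra_simps)
        also have "\<dots> = (\<alpha> k / \<rho>) * (\<rho> * (xs x + ys k y) + (1 - \<rho>) * xs x) + (t * c * \<beta>) * (1 * xs x + (\<sigma> / c) * u y) + \<sigma> * t * \<gamma> * g x"
          unfolding e2 e3 \<gamma> by (simp add: algebra_simps)
        finally show ?thesis using True v unfolding A_def B_def by (simp add: P_eq)
      next
        case False
        then show ?thesis using v unfolding A_def B_def by (simp add: P_out)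
      qed
    qed
    have bF: "Zs.bnd k ?F"
      by (rule P_bnd[OF bounded_linear_add[OF xs_bl bounded_linear_const_mult[OF g(1)]]
            vv_yfun[OF u \<gamma>0 \<alpha> \<beta>(1) \<sigma> less_imp_le[OF t]]])
    have "\<gamma> * DN k ?F = DN k (\<lambda>v. \<gamma> * ?F v)" using Zs.dn_scale[OF bF, of \<gamma>] \<gamma>p by simp
    also have "\<dots> \<le> (\<alpha> k / \<rho>) * DN k A + (t * c * \<beta>) * DN k B + t * \<gamma> * DN k (P k g (\<lambda>_. 0))"
    proof -
      have "DN k (\<lambda>v. (\<alpha> k / \<rho>) * A v + (t * c * \<beta>) * B v + (\<sigma> * t * \<gamma>) * P k g (\<lambda>_. 0) v)
         \<le> DN k (\<lambda>v. (\<alpha> k / \<rho>) * A v + (t * c * \<beta>) * B v) + DN k (\<lambda>v. (\<sigma> * t * \<gamma>) * P k g (\<lambda>_. 0) v)"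
        by (rule Zs.dn_add) (intro Zs.bnd_add Zs.bnd_scale bA bB bg)+
      also have "\<dots> \<le> (\<alpha> k / \<rho>) * DN k A + (t * c * \<beta>) * DN k B + t * \<gamma> * DN k (P k g (\<lambda>_. 0))"
        using Zs.dn_lin2[OF bA bB, of "\<alpha> k / \<rho>" "t * c * \<beta>"] Zs.dn_scale[OF bg, of "\<sigma> * t * \<gamma>"] \<alpha> \<rho> t c \<beta> \<sigma> \<gamma>p
        by (simp add: abs_mult)
      finally show ?thesis unfolding eq .
    qed
    also have "\<dots> \<le> (\<alpha> k / \<rho>) * (1 - t * (1 + BD)) + (t * c * \<beta>) * (1 - t * (1 + BD)) + t * \<gamma> * 1"
    proof -
      have p1: "\<alpha> k / \<rho> \<ge> 0" "t * c * \<beta> \<ge> 0" "t * \<gamma> \<ge> 0" using \<alpha> \<rho> t c \<beta> \<gamma>p by auto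
      show ?thesis using mult_left_mono[OF dA1 p1(1)] mult_left_mono[OF dB p1(2)] mult_left_mono[OF dg p1(3)]
        by linarith
    qed
    also have "\<dots> = \<gamma> * (1 - t * BD)" unfolding \<gamma> by (simp add: algebra_simps)
    finally show ?thesis using \<gamma>p by (simp add: mult_le_cancel_left_pos)
  qed
qed

end

(* from i/I.thy *)


context fset begin

lemma slack_regime:
  assumes g: "bounded_linear g" "onorm g \<le> 1" and u: "yfun k u 1" and \<beta>: "0 \<le> \<beta>" "\<beta> \<le> 1"
    and \<sigma>: "\<bar>\<sigma>\<bar> = 1" and t: "t > 0" and \<alpha>: "0 < \<alpha> k" and nb: "nn k \<le> (1 + a) / 2"
    and tc: "t * (1 + 2 / \<alpha> k) \<le> (1 - a) / 2 - t * BD"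
  shows "DN k (P k (\<lambda>x. xs x + \<sigma> * t * g x) (\<lambda>y. (\<alpha> k * ys k y + \<sigma> * t * \<beta> * u y) / \<alpha> k)) \<le> 1 - t * BD"
proof -
  let ?w = "\<lambda>y. (\<beta> / \<alpha> k) * u y"
  have yw: "yfun k ?w (\<bar>\<beta> / \<alpha> k\<bar> * 1)" by (rule yfun_scale[OF u])
  have bphi: "Zs.bnd k (\<phi> k)" by (rule ZD_bnd[OF phi_ZD])
  have bh: "Zs.bnd k (P k g ?w)" by (rule P_bnd[OF g(1) yw])
  have dh: "DN k (P k g ?w) \<le> 1 + 2 / \<alpha> k"
  proof -
    have "DN k (P k g ?w) \<le> DN k (P k g (\<lambda>_. 0)) + DN k (P k (\<lambda>_. 0) ?w)"
      by (subst P_split) (rule Zs.dn_add[OF P_bnd0[OF g(1)] P_bnd1[OF yw]])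
    also have "\<dots> \<le> 1 + 2 * (\<bar>\<beta> / \<alpha> k\<bar> * 1)"
    proof -
      have d1: "DN k (P k g (\<lambda>_. 0)) \<le> 1" using dn_Pg[OF g(1), of k] g(2) by linarith
      have d2: "DN k (P k (\<lambda>_. 0) ?w) \<le> 2 * (\<bar>\<beta> / \<alpha> k\<bar> * 1)" by (rule dn_Pu[OF yw]) simp
      show ?thesis using d1 d2 by linarith
    qed
    also have "\<dots> \<le> 1 + 2 / \<alpha> k" using \<beta> \<alpha> by (simp add: divide_right_mono)
    finally show ?thesis .
  qed
  have eq: "P k (\<lambda>x. xs x + \<sigma> * t * g x) (\<lambda>y. (\<alpha> k * ys k y + \<sigma> * t * \<beta> * u y) / \<alpha> k)
      = (\<lambda>v. 1 * \<phi> k v + (\<sigma> * t) * P k g ?w v)"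
  proof
    fix v :: "'x \<times> 'y"
    obtain x y where v: "v = (x, y)" by fastforce
    show "P k (\<lambda>x. xs x + \<sigma> * t * g x) (\<lambda>y. (\<alpha> k * ys k y + \<sigma> * t * \<beta> * u y) / \<alpha> k) v
        = 1 * \<phi> k v + (\<sigma> * t) * P k g ?w v"
      using v \<alpha> by (cases "y \<in> Yset k") (simp_all add: P_eq P_out field_simps)
  qed
  have "DN k (\<lambda>v. 1 * \<phi> k v + (\<sigma> * t) * P k g ?w v) \<le> \<bar>1\<bar> * nn k + \<bar>\<sigma> * t\<bar> * DN k (P k g ?w)"
    by (rule Zs.dn_lin2[OF bphi bh])
  also have "\<dots> = nn k + t * DN k (P k g ?w)" using \<sigma> t by (simp add: abs_mult)
  also have "\<dots> \<le> (1 + a) / 2 + t * (1 + 2 / \<alpha> k)"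
    using nb mult_left_mono[OF dh, of t] t by linarith
  also have "\<dots> \<le> 1 - t * BD" using tc by (simp add: field_simps)
  finally show ?thesis unfolding eq .
qed

lemma head_regime:
  assumes big: "big k" and g: "bounded_linear g" "onorm g \<le> 1" and u: "yfun k u 1" and \<beta>: "0 \<le> \<beta>" "\<beta> \<le> 1"
    and \<sigma>: "\<bar>\<sigma>\<bar> = 1" and t: "t > 0"
    and \<gamma>: "\<gamma> = \<alpha> k + \<sigma> * t * \<eta>" and \<gamma>pos: "\<gamma> \<ge> \<alpha> k / 2"
    and \<eta>: "\<eta> * ly k = \<alpha> k * (lg k g - D) + \<beta> * lu k u"
    and \<eta>b: "\<bar>\<eta>\<bar> \<le> B\<eta>" and Db: "\<bar>D\<bar> \<le> BD"
    and fr: "\<forall>h\<in>ZD k. DN k h < \<delta> \<longrightarrow> DN k (\<lambda>v. \<phi> k v + h v) \<le> nn k + Lf k h + \<epsilon>' * DN k h"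
    and \<epsilon>': "\<epsilon>' \<ge> 0"
    and t\<delta>: "t * (1 + 4 * (1 + B\<eta>) / \<alpha> k) < \<delta>"
  shows "DN k (P k (\<lambda>x. xs x + \<sigma> * t * g x) (\<lambda>y. (\<alpha> k * ys k y + \<sigma> * t * \<beta> * u y) / \<gamma>))
     \<le> 1 + \<sigma> * t * D + t\<^sup>2 * (2 * (1 + BD) * B\<eta> / \<alpha> k) + \<epsilon>' * (t * (1 + 4 * (1 + B\<eta>) / \<alpha> k))"
proof -
  note gl = goodL_D[OF Lf_good[OF big]]
  have \<alpha>: "\<alpha> k > 0" using big unfolding big_def by simp
  have \<gamma>p: "\<gamma> > 0" using \<gamma>pos \<alpha> by simp
  have B\<eta>0: "B\<eta> \<ge> 0" using \<eta>b by simp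
  let ?w = "\<lambda>y. (\<beta> / \<gamma>) * u y + (- \<eta> / \<gamma>) * ys k y"
  have yw: "yfun k ?w (\<bar>\<beta> / \<gamma>\<bar> * 1 + \<bar>- \<eta> / \<gamma>\<bar> * 1)" by (rule yfun_lin[OF u ys1])
  have bw: "\<bar>\<beta> / \<gamma>\<bar> * 1 + \<bar>- \<eta> / \<gamma>\<bar> * 1 \<le> 2 * (1 + B\<eta>) / \<alpha> k"
  proof -
    have "\<bar>\<beta> / \<gamma>\<bar> * 1 + \<bar>- \<eta> / \<gamma>\<bar> * 1 = (\<beta> + \<bar>\<eta>\<bar>) / \<gamma>" using \<beta> \<gamma>p by (simp add: add_divide_distrib)
    also have "\<dots> \<le> (1 + B\<eta>) / \<gamma>" using \<beta> \<eta>b \<gamma>p by (intro divide_right_mono) auto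
    also have "\<dots> \<le> (1 + B\<eta>) / (\<alpha> k / 2)" using \<gamma>pos \<alpha> B\<eta>0 by (intro divide_left_mono) auto
    also have "\<dots> = 2 * (1 + B\<eta>) / \<alpha> k" by simp
    finally show ?thesis .
  qed
  let ?h = "P k g ?w"
  have hZ: "?h \<in> ZD k" by (rule P_dual[OF g(1) yw])
  have hb: "Zs.bnd k ?h" by (rule P_bnd[OF g(1) yw])
  have dh: "DN k ?h \<le> 1 + 4 * (1 + B\<eta>) / \<alpha> k"
  proof -
    have "DN k ?h \<le> DN k (P k g (\<lambda>_. 0)) + DN k (P k (\<lambda>_. 0) ?w)"
      by (subst P_split) (rule Zs.dn_add[OF P_bnd0[OF g(1)] P_bnd1[OF yw]])
    also have "\<dots> \<le> 1 + 2 * (2 * (1 + B\<eta>) / \<alpha> k)"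
    proof -
      have d1: "DN k (P k g (\<lambda>_. 0)) \<le> 1" using dn_Pg[OF g(1), of k] g(2) by linarith
      have d2: "DN k (P k (\<lambda>_. 0) ?w) \<le> 2 * (\<bar>\<beta> / \<gamma>\<bar> * 1 + \<bar>- \<eta> / \<gamma>\<bar> * 1)" by (rule dn_Pu[OF yw]) simp
      have gen: "\<And>d1 d2 S A. d1 \<le> 1 \<Longrightarrow> d2 \<le> 2 * S \<Longrightarrow> S \<le> A \<Longrightarrow> d1 + d2 \<le> 1 + 2 * (A::real)" by linarith
      show ?thesis by (rule gen[OF d1 d2 bw])
    qed
    finally show ?thesis by simp
  qed
  have dh0: "DN k ?h \<ge> 0" by (rule Zs.dn_nonneg[OF hb])
  have eq: "P k (\<lambda>x. xs x + \<sigma> * t * g x) (\<lambda>y. (\<alpha> k * ys k y + \<sigma> * t * \<beta> * u y) / \<gamma>)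
      = (\<lambda>v. \<phi> k v + (\<sigma> * t) * ?h v)"
  proof
    fix v :: "'x \<times> 'y"
    obtain x y where v: "v = (x, y)" by fastforce
    have e: "(\<alpha> k * ys k y + \<sigma> * t * \<beta> * u y) / \<gamma> = ys k y + \<sigma> * t * ((\<beta> / \<gamma>) * u y + (- \<eta> / \<gamma>) * ys k y)"
    proof -
      have gen: "\<And>G Y U c b e. G \<noteq> (0::real) \<Longrightarrow>
          ((G - c * e) * Y + c * b * U) / G = Y + c * ((b / G) * U + (- e / G) * Y)"
        by (simp add: field_simps)
      have a: "\<alpha> k = \<gamma> - (\<sigma> * t) * \<eta>" unfolding \<gamma> by simp
      have "\<gamma> \<noteq> 0" using \<gamma>p by simp
      from gen[OF this, of "\<sigma> * t" \<eta> "ys k y" \<beta> "u y"] show ?thesis unfolding a[symmetric] by (simp add: mult.assoc)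
    qed
    show "P k (\<lambda>x. xs x + \<sigma> * t * g x) (\<lambda>y. (\<alpha> k * ys k y + \<sigma> * t * \<beta> * u y) / \<gamma>) v
        = \<phi> k v + (\<sigma> * t) * ?h v"
      using v e by (cases "y \<in> Yset k") (simp_all add: P_eq P_out algebra_simps)
  qed
  have sth: "(\<lambda>v. (\<sigma> * t) * ?h v) \<in> ZD k" by (rule ZD_scale[OF hZ])
  have dsth: "DN k (\<lambda>v. (\<sigma> * t) * ?h v) = t * DN k ?h" using Zs.dn_scale[OF hb, of "\<sigma> * t"] \<sigma> t by (simp add: abs_mult)
  have "t * DN k ?h \<le> t * (1 + 4 * (1 + B\<eta>) / \<alpha> k)" using dh t by (intro mult_left_mono) auto
  then have small: "DN k (\<lambda>v. (\<sigma> * t) * ?h v) < \<delta>" using t\<delta> dsth by linarith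
  have F1: "DN k (\<lambda>v. \<phi> k v + (\<sigma> * t) * ?h v) \<le> nn k + Lf k (\<lambda>v. (\<sigma> * t) * ?h v) + \<epsilon>' * (t * DN k ?h)"
    using fr sth small dsth by auto
  text \<open>Compute L h.\<close>
  have bl0: "bounded_linear (\<lambda>_::'x. 0::real)" by simp
  have Z1: "P k (\<lambda>_. 0) u \<in> ZD k" by (rule P_ZD1[OF u])
  have Z2: "P k (\<lambda>_. 0) (ys k) \<in> ZD k" by (rule P_ZD1[OF ys1])
  have Z0: "P k g (\<lambda>_. 0) \<in> ZD k" by (rule P_ZD0[OF g(1)])
  have Pw: "P k (\<lambda>_. 0) ?w = (\<lambda>v. (\<beta> / \<gamma>) * P k (\<lambda>_. 0) u v + (- \<eta> / \<gamma>) * P k (\<lambda>_. 0) (ys k) v)"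
    by (auto simp: pair_fun_def)
  have "Lf k (P k (\<lambda>_. 0) ?w) = (\<beta> / \<gamma>) * lu k u + (- \<eta> / \<gamma>) * ly k"
    unfolding Pw
  proof -
    have "Lf k (\<lambda>v. (\<beta> / \<gamma>) * P k (\<lambda>_. 0) u v + (- \<eta> / \<gamma>) * P k (\<lambda>_. 0) (ys k) v)
        = Lf k (\<lambda>v. (\<beta> / \<gamma>) * P k (\<lambda>_. 0) u v) + Lf k (\<lambda>v. (- \<eta> / \<gamma>) * P k (\<lambda>_. 0) (ys k) v)"
      by (rule gl(1)[OF ZD_scale[OF Z1] ZD_scale[OF Z2]])
    also have "\<dots> = (\<beta> / \<gamma>) * lu k u + (- \<eta> / \<gamma>) * ly k"
      by (simp only: gl(2)[OF Z1] gl(2)[OF Z2])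
    finally show "Lf k (\<lambda>v. (\<beta> / \<gamma>) * P k (\<lambda>_. 0) u v + (- \<eta> / \<gamma>) * P k (\<lambda>_. 0) (ys k) v)
        = (\<beta> / \<gamma>) * lu k u + (- \<eta> / \<gamma>) * ly k" .
  qed
  moreover have "Lf k ?h = lg k g + Lf k (P k (\<lambda>_. 0) ?w)"
    by (subst P_split) (rule gl(1)[OF Z0 P_ZD1[OF yw]])
  ultimately have Lh: "Lf k ?h = lg k g + (\<beta> * lu k u - \<eta> * ly k) / \<gamma>"
    by (simp add: diff_divide_distrib add_divide_distrib)
  have Lh2: "Lf k ?h = lg k g + \<alpha> k * (D - lg k g) / \<gamma>"
    unfolding Lh using \<eta> by (simp add: algebra_simps)
  have Lst: "Lf k (\<lambda>v. (\<sigma> * t) * ?h v) = \<sigma> * t * D + t\<^sup>2 * ((lg k g - D) * \<eta> / \<gamma>)"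
  proof -
    have "Lf k (\<lambda>v. (\<sigma> * t) * ?h v) = \<sigma> * t * Lf k ?h" using gl(2)[OF hZ] by simp
    also have "\<dots> = \<sigma> * t * D + \<sigma> * t * (lg k g - D) * ((\<gamma> - \<alpha> k) / \<gamma>)"
      unfolding Lh2 using \<gamma>p by (simp add: field_simps)
    also have "\<dots> = \<sigma> * t * D + (\<sigma> * \<sigma>) * t\<^sup>2 * ((lg k g - D) * \<eta> / \<gamma>)"
      unfolding \<gamma> by (simp add: power2_eq_square)
    also have "\<sigma> * \<sigma> = 1" using \<sigma> by (metis abs_mult_self_eq mult_1)
    finally show ?thesis by simp
  qed
  have rem: "t\<^sup>2 * ((lg k g - D) * \<eta> / \<gamma>) \<le> t\<^sup>2 * (2 * (1 + BD) * B\<eta> / \<alpha> k)"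
  proof (rule mult_left_mono)
    have lg: "\<bar>lg k g\<bar> \<le> 1" by (rule lg_bound[OF big g])
    have "(lg k g - D) * \<eta> / \<gamma> \<le> \<bar>(lg k g - D) * \<eta> / \<gamma>\<bar>" by (rule abs_ge_self)
    also have "\<dots> = \<bar>lg k g - D\<bar> * \<bar>\<eta>\<bar> / \<gamma>" using \<gamma>p by (simp add: abs_mult)
    also have "\<dots> \<le> (1 + BD) * B\<eta> / \<gamma>"
      using lg Db \<eta>b \<gamma>p by (intro divide_right_mono mult_mono) auto
    also have "\<dots> \<le> (1 + BD) * B\<eta> / (\<alpha> k / 2)"
      using \<gamma>pos \<alpha> B\<eta>0 Db by (intro divide_left_mono) auto
    also have "(1 + BD) * B\<eta> / (\<alpha> k / 2) = 2 * (1 + BD) * B\<eta> / \<alpha> k" using \<alpha> by (simp add: field_simps)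
    finally show "(lg k g - D) * \<eta> / \<gamma> \<le> 2 * (1 + BD) * B\<eta> / \<alpha> k" .
  qed simp
  have "\<epsilon>' * (t * DN k ?h) \<le> \<epsilon>' * (t * (1 + 4 * (1 + B\<eta>) / \<alpha> k))"
    using \<open>t * DN k ?h \<le> _\<close> \<epsilon>' by (rule mult_left_mono)
  note e2 = this
  have gen: "\<And>X n Lx e1 e2 R1 R2 S. X \<le> n + Lx + e1 \<Longrightarrow> Lx = S + R1 \<Longrightarrow> R1 \<le> R2 \<Longrightarrow> e1 \<le> e2 \<Longrightarrow> n \<le> 1
      \<Longrightarrow> X \<le> 1 + S + R2 + (e2::real)" by linarith
  show ?thesis unfolding eq by (rule gen[OF F1 Lst rem e2 nn_le])
qed

end

(* from j/J.thy *)


lemma finite_delta: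
  assumes "finite A" "\<And>k. k \<in> A \<Longrightarrow> \<exists>\<delta>>0. Q k \<delta>"
    and mono: "\<And>k \<delta> \<delta>'. Q k \<delta> \<Longrightarrow> 0 < \<delta>' \<Longrightarrow> \<delta>' \<le> \<delta> \<Longrightarrow> Q k \<delta>'"
  shows "\<exists>\<delta>>0. \<forall>k\<in>A. Q k (\<delta>::real)"
  using assms(1,2)
proof (induction A rule: finite_induct)
  case empty then show ?case by (intro exI[of _ 1]) auto
next
  case (insert x F)
  obtain \<delta>1 where d1: "\<delta>1 > 0" "\<forall>k\<in>F. Q k \<delta>1" using insert by auto
  obtain \<delta>2 where d2: "\<delta>2 > 0" "Q x \<delta>2" using insert by auto
  show ?case using d1 d2 mono by (intro exI[of _ "min \<delta>1 \<delta>2"]) auto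
qed

context fset begin

definition Hs :: "nat \<Rightarrow> nat set" where "Hs K = {k. k \<le> K \<and> big k}"
definition Ss :: "nat \<Rightarrow> nat set" where "Ss K = {k. k \<le> K \<and> \<alpha> k > 0 \<and> \<not> big k}"

lemma Hs_fin: "finite (Hs K)" unfolding Hs_def by auto
lemma Ss_fin: "finite (Ss K)" unfolding Ss_def by auto
lemma card_Hs: "card (Hs K) \<le> K + 1"
proof -
  have "Hs K \<subseteq> {..K}" unfolding Hs_def by auto
  then show ?thesis using card_mono[of "{..K}" "Hs K"] by simp
qed

definition Num :: "nat \<Rightarrow> ('x \<Rightarrow> real) \<Rightarrow> (nat \<Rightarrow> real) \<Rightarrow> (nat \<Rightarrow> 'y \<Rightarrow> real) \<Rightarrow> real" where
  "Num K g \<beta> u = (\<Sum>k\<in>Hs K. \<alpha> k * (\<alpha> k * lg k g + \<beta> k * lu k (u k)) / ly k)"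
definition Den :: "nat \<Rightarrow> real" where
  "Den K = (\<Sum>k\<in>Hs K. (\<alpha> k)\<^sup>2 / ly k)"
definition Dv :: "nat \<Rightarrow> ('x \<Rightarrow> real) \<Rightarrow> (nat \<Rightarrow> real) \<Rightarrow> (nat \<Rightarrow> 'y \<Rightarrow> real) \<Rightarrow> real" where
  "Dv K g \<beta> u = Num K g \<beta> u / Den K"
definition eta :: "nat \<Rightarrow> ('x \<Rightarrow> real) \<Rightarrow> (nat \<Rightarrow> real) \<Rightarrow> (nat \<Rightarrow> 'y \<Rightarrow> real) \<Rightarrow> nat \<Rightarrow> real" where
  "eta K g \<beta> u k = (\<alpha> k * (lg k g - Dv K g \<beta> u) + \<beta> k * lu k (u k)) / ly k"

lemma big_pos: "big k \<Longrightarrow> \<alpha> k > 0" unfolding big_def by simp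
lemma ly_pos: "big k \<Longrightarrow> ly k > 0"
proof -
  assume b: "big k"
  have "(1 - a) / 2 > 0" using xsmall by simp
  then show "ly k > 0" using ly_bounds(1)[OF b] by (rule less_trans)
qed

lemma eta_eq: "big k \<Longrightarrow> eta K g \<beta> u k * ly k = \<alpha> k * (lg k g - Dv K g \<beta> u) + \<beta> k * lu k (u k)"
  unfolding eta_def using ly_pos[of k] by simp

lemma Den_pos: assumes "k0 \<in> Hs K" shows "Den K \<ge> (\<alpha> k0)\<^sup>2 / 2"
proof -
  have nn: "\<forall>k\<in>Hs K - {k0}. 0 \<le> (\<alpha> k)\<^sup>2 / ly k" using ly_pos unfolding Hs_def
    by (auto intro!: divide_nonneg_nonneg intro: less_imp_le)
  have "(\<alpha> k0)\<^sup>2 / 2 \<le> (\<alpha> k0)\<^sup>2 / ly k0"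
    using ly_bounds(2)[of k0] ly_pos[of k0] assms unfolding Hs_def by (intro divide_left_mono) auto
  also have "\<dots> \<le> Den K"
  proof -
    have "Den K = (\<alpha> k0)\<^sup>2 / ly k0 + (\<Sum>k\<in>Hs K - {k0}. (\<alpha> k)\<^sup>2 / ly k)"
      unfolding Den_def using sum.remove[OF Hs_fin assms] by simp
    moreover have "(\<Sum>k\<in>Hs K - {k0}. (\<alpha> k)\<^sup>2 / ly k) \<ge> 0"
      using nn by (intro sum_nonneg) auto
    ultimately show ?thesis by simp
  qed
  finally show ?thesis .
qed

lemma sum_eta: "(\<Sum>k\<in>Hs K. \<alpha> k * eta K g \<beta> u k) = 0"
proof (cases "Hs K = {}")
  case True then show ?thesis by simp
next
  case False
  then obtain k0 where k0: "k0 \<in> Hs K" by auto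
  have "\<alpha> k0 > 0" using big_pos[of k0] k0 unfolding Hs_def by auto
  then have "(\<alpha> k0)\<^sup>2 / 2 > 0" by simp
  then have "Den K > 0" using Den_pos[OF k0] by (rule less_le_trans)
  have t: "\<alpha> k * eta K g \<beta> u k = \<alpha> k * (\<alpha> k * lg k g + \<beta> k * lu k (u k)) / ly k - Dv K g \<beta> u * ((\<alpha> k)\<^sup>2 / ly k)" for k
    unfolding eta_def by (simp add: divide_inverse algebra_simps power2_eq_square)
  have "(\<Sum>k\<in>Hs K. \<alpha> k * eta K g \<beta> u k) = Num K g \<beta> u - Dv K g \<beta> u * Den K"
    unfolding t Num_def Den_def by (simp add: sum_subtractf sum_distrib_left)
  also have "\<dots> = 0" using \<open>Den K > 0\<close> unfolding Dv_def by simp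
  finally show ?thesis .
qed

lemma finite_sq_le: fixes \<beta> :: "nat \<Rightarrow> real" assumes "summable (\<lambda>k. (\<beta> k)\<^sup>2)" "finite A" shows "(\<Sum>k\<in>A. (\<beta> k)\<^sup>2) \<le> (\<Sum>k. (\<beta> k)\<^sup>2)"
  using sum_le_suminf[OF assms] by simp

lemma Num_bound: assumes L: "Lam g \<beta> u" shows "\<bar>Num K g \<beta> u\<bar> \<le> 6 / (1 - a)"
proof -
  note LP = Lam_props[OF L]
  have a1: "1 - a > 0" using xsmall by simp
  have tb: "\<bar>\<alpha> k * (\<alpha> k * lg k g + \<beta> k * lu k (u k)) / ly k\<bar> \<le> (2 / (1 - a)) * (2 * (\<alpha> k)\<^sup>2 + (\<beta> k)\<^sup>2)"
    if k: "k \<in> Hs K" for k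
  proof -
    have bk: "big k" using k unfolding Hs_def by auto
    have al: "\<alpha> k \<ge> 0" using big_pos[OF bk] by simp
    have lg: "\<bar>lg k g\<bar> \<le> 1" by (rule lg_bound[OF bk LP(1) LP(2)])
    have lu: "\<bar>lu k (u k)\<bar> \<le> 2" by (rule lu_bound[OF bk LP(3)])
    have ly: "ly k > (1 - a) / 2" by (rule ly_bounds(1)[OF bk])
    have "\<bar>\<alpha> k * (\<alpha> k * lg k g + \<beta> k * lu k (u k))\<bar> \<le> \<alpha> k * (\<alpha> k * 1 + \<beta> k * 2)"
    proof -
      have "\<bar>\<alpha> k * lg k g\<bar> \<le> \<alpha> k * 1" unfolding abs_mult abs_of_nonneg[OF al] using al lg by (intro mult_left_mono) auto
      moreover have "\<bar>\<beta> k * lu k (u k)\<bar> \<le> \<beta> k * 2" unfolding abs_mult abs_of_nonneg[OF LP(4)[of k]] using LP(4)[of k] lu by (intro mult_left_mono) auto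
      ultimately have "\<bar>\<alpha> k * lg k g\<bar> + \<bar>\<beta> k * lu k (u k)\<bar> \<le> \<alpha> k * 1 + \<beta> k * 2" by (rule add_mono)
      then have "\<bar>\<alpha> k * lg k g + \<beta> k * lu k (u k)\<bar> \<le> \<alpha> k * 1 + \<beta> k * 2"
        by (rule order_trans[OF abs_triangle_ineq])
      then show ?thesis unfolding abs_mult abs_of_nonneg[OF al] using al by (rule mult_left_mono)
    qed
    also have "\<dots> \<le> 2 * (\<alpha> k)\<^sup>2 + (\<beta> k)\<^sup>2"
    proof -
      have "0 \<le> (\<alpha> k - \<beta> k)\<^sup>2" by simp
      then show ?thesis by (simp add: power2_eq_square algebra_simps)
    qed
    finally have n: "\<bar>\<alpha> k * (\<alpha> k * lg k g + \<beta> k * lu k (u k))\<bar> \<le> 2 * (\<alpha> k)\<^sup>2 + (\<beta> k)\<^sup>2" .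
    have "\<bar>\<alpha> k * (\<alpha> k * lg k g + \<beta> k * lu k (u k)) / ly k\<bar> = \<bar>\<alpha> k * (\<alpha> k * lg k g + \<beta> k * lu k (u k))\<bar> / ly k"
      using ly a1 by (simp add: abs_div)
    also have "\<dots> \<le> (2 * (\<alpha> k)\<^sup>2 + (\<beta> k)\<^sup>2) / ((1 - a) / 2)"
      using n ly a1 by (intro frac_le) auto
    finally show ?thesis by (simp add: field_simps)
  qed
  have "\<bar>Num K g \<beta> u\<bar> \<le> (\<Sum>k\<in>Hs K. (2 / (1 - a)) * (2 * (\<alpha> k)\<^sup>2 + (\<beta> k)\<^sup>2))"
    unfolding Num_def by (rule order_trans[OF sum_abs sum_mono]) (rule tb)
  also have "\<dots> = (2 / (1 - a)) * (2 * (\<Sum>k\<in>Hs K. (\<alpha> k)\<^sup>2) + (\<Sum>k\<in>Hs K. (\<beta> k)\<^sup>2))"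
    by (simp only: sum_distrib_left[symmetric] sum.distrib)
  also have "\<dots> \<le> (2 / (1 - a)) * (2 * 1 + 1)"
  proof -
    have h1: "(\<Sum>k\<in>Hs K. (\<alpha> k)\<^sup>2) \<le> 1"
      using finite_sq_le[OF ZP(6) Hs_fin, of K] ZP(7) by simp
    have h2: "(\<Sum>k\<in>Hs K. (\<beta> k)\<^sup>2) \<le> 1"
      using finite_sq_le[OF LP(6) Hs_fin, of K] LP(7) by simp
    have "2 * (\<Sum>k\<in>Hs K. (\<alpha> k)\<^sup>2) + (\<Sum>k\<in>Hs K. (\<beta> k)\<^sup>2) \<le> 2 * 1 + 1" using h1 h2 by simp
    then show ?thesis using a1 by (intro mult_left_mono) auto
  qed
  finally show ?thesis by simp
qed

definition k0 :: nat where "k0 = (SOME k. big k)"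
definition BD :: real where "BD = (if \<exists>k. big k then 12 / ((1 - a) * (\<alpha> k0)\<^sup>2) else 0)"

lemma BD_nonneg: "BD \<ge> 0"
  unfolding BD_def using xsmall by (auto intro!: divide_nonneg_nonneg mult_nonneg_nonneg)

lemma Dv_bound: assumes L: "Lam g \<beta> u" and K: "(\<exists>k. big k) \<longrightarrow> k0 \<le> K"
  shows "\<bar>Dv K g \<beta> u\<bar> \<le> BD"
proof (cases "\<exists>k. big k")
  case False
  then have "Hs K = {}" unfolding Hs_def by auto
  then show ?thesis unfolding Dv_def Num_def BD_def using False by auto
next
  case True
  have bk0: "big k0" unfolding k0_def using True by (rule someI_ex)
  have k0H: "k0 \<in> Hs K" using bk0 K True unfolding Hs_def by auto
  have a1: "1 - a > 0" using xsmall by simp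
  have apos: "(\<alpha> k0)\<^sup>2 / 2 > 0" using big_pos[OF bk0] by simp
  have "Den K > 0" using Den_pos[OF k0H] apos by linarith
  then have "\<bar>Dv K g \<beta> u\<bar> = \<bar>Num K g \<beta> u\<bar> / Den K" unfolding Dv_def by (simp add: abs_div)
  also have "\<dots> \<le> (6 / (1 - a)) / ((\<alpha> k0)\<^sup>2 / 2)"
    using Num_bound[OF L, of K] Den_pos[OF k0H] apos a1 by (intro frac_le) auto
  also have "\<dots> = BD" unfolding BD_def using True by (simp add: field_simps)
  finally show ?thesis .
qed

definition Beta :: real where "Beta = 2 * (3 + BD) / (1 - a)"

lemma eta_bound: assumes L: "Lam g \<beta> u" and K: "(\<exists>k. big k) \<longrightarrow> k0 \<le> K" and k: "k \<in> Hs K"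
  shows "\<bar>eta K g \<beta> u k\<bar> \<le> Beta"
proof -
  note LP = Lam_props[OF L]
  have bk: "big k" using k unfolding Hs_def by auto
  have a1: "1 - a > 0" using xsmall by simp
  have lg: "\<bar>lg k g\<bar> \<le> 1" by (rule lg_bound[OF bk LP(1) LP(2)])
  have lu: "\<bar>lu k (u k)\<bar> \<le> 2" by (rule lu_bound[OF bk LP(3)])
  have ly: "ly k > (1 - a) / 2" by (rule ly_bounds(1)[OF bk])
  have D: "\<bar>Dv K g \<beta> u\<bar> \<le> BD" by (rule Dv_bound[OF L K])
  have al: "0 \<le> \<alpha> k" "\<alpha> k \<le> 1" using ZP(4,5) by auto
  have "\<bar>\<alpha> k * (lg k g - Dv K g \<beta> u) + \<beta> k * lu k (u k)\<bar> \<le> 1 * (1 + BD) + 1 * 2"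
  proof -
    have "\<bar>\<alpha> k * (lg k g - Dv K g \<beta> u)\<bar> \<le> 1 * (1 + BD)"
      unfolding abs_mult using al lg D by (intro mult_mono) auto
    moreover have "\<bar>\<beta> k * lu k (u k)\<bar> \<le> 1 * 2"
      unfolding abs_mult using LP(4,5)[of k] lu by (intro mult_mono) auto
    ultimately show ?thesis by (rule order_trans[OF abs_triangle_ineq add_mono])
  qed
  then have n: "\<bar>\<alpha> k * (lg k g - Dv K g \<beta> u) + \<beta> k * lu k (u k)\<bar> \<le> 3 + BD" by simp
  have "\<bar>eta K g \<beta> u k\<bar> = \<bar>\<alpha> k * (lg k g - Dv K g \<beta> u) + \<beta> k * lu k (u k)\<bar> / ly k"
    unfolding eta_def using ly a1 by (simp add: abs_div)
  also have "\<dots> \<le> (3 + BD) / ((1 - a) / 2)" using n ly a1 by (intro frac_le) auto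
  also have "\<dots> = Beta" unfolding Beta_def using a1 by (simp add: field_simps)
  finally show ?thesis .
qed

end

(* from k/K.thy *)


context fset begin

definition c0 :: real where "c0 = 4 / (1 - a)"
definition rho :: "real \<Rightarrow> real" where "rho t = 1 - t * (1 + BD) / (1 - a)"
definition gam where
  "gam K g \<beta> u t \<sigma> k = (if k \<in> Hs K then \<alpha> k + \<sigma> * t * eta K g \<beta> u k
      else if k \<in> Ss K then \<alpha> k else \<alpha> k / rho t + t * c0 * \<beta> k)"
definition vv where
  "vv K g \<beta> u t \<sigma> k = (\<lambda>y. (\<alpha> k * ys k y + \<sigma> * t * \<beta> k * u k y) / gam K g \<beta> u t \<sigma> k)"
definition am :: "nat \<Rightarrow> real" where "am K = Min (insert 1 (\<alpha> ` (Hs K \<union> Ss K)))"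
definition EE :: "nat \<Rightarrow> real" where "EE K = 2 * (1 + BD) * Beta / am K"
definition BH :: "nat \<Rightarrow> real" where "BH K = 1 + 4 * (1 + Beta) / am K"

lemma a1: "1 - a > 0" using xsmall by simp

lemma am_pos: "am K > 0"
proof -
  have "finite (insert 1 (\<alpha> ` (Hs K \<union> Ss K)))" using Hs_fin Ss_fin by simp
  moreover have "\<forall>x\<in>insert 1 (\<alpha> ` (Hs K \<union> Ss K)). x > 0"
    using big_pos unfolding Hs_def Ss_def by auto
  ultimately show ?thesis unfolding am_def by (subst Min_gr_iff) auto
qed

lemma am_le: "k \<in> Hs K \<union> Ss K \<Longrightarrow> am K \<le> \<alpha> k"
  unfolding am_def using Hs_fin Ss_fin by (intro Min_le) auto

lemma Beta_ge: "Beta \<ge> 6"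
proof -
  have "6 * (1 - a) \<le> 2 * (3 + BD)" using BD_nonneg a_nonneg by simp
  then show ?thesis unfolding Beta_def using a1 by (simp add: field_simps)
qed

lemma c0_ge: "c0 \<ge> 4" unfolding c0_def using a1 a_nonneg by (simp add: field_simps)

lemma notHS: "k \<notin> Hs K \<Longrightarrow> k \<notin> Ss K \<Longrightarrow> k \<le> K \<Longrightarrow> \<alpha> k = 0"
  unfolding Hs_def Ss_def using ZP(4)[of k] by (cases "big k") (auto simp: big_def)

lemma rho_props: assumes T1: "t * (1 + BD) \<le> (1 - a) / 2" and t: "t > 0"
  shows "rho t \<ge> 1/2" "rho t \<le> 1" "rho t + (1 - rho t) * a = 1 - t * (1 + BD)"
proof -
  have "t * (1 + BD) / (1 - a) \<le> 1/2" using T1 a1 by (simp add: divide_le_eq)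
  then show "rho t \<ge> 1/2" unfolding rho_def by simp
  show "rho t \<le> 1" unfolding rho_def using t BD_nonneg a1 by simp
  have e1: "rho t + (1 - rho t) * a = 1 - (1 - rho t) * (1 - a)" by (simp add: algebra_simps)
  have e2: "(1 - rho t) * (1 - a) = t * (1 + BD)" unfolding rho_def using a1 by simp
  show "rho t + (1 - rho t) * a = 1 - t * (1 + BD)" using e1 e2 by simp
qed

context
  fixes K :: nat and g :: "'x \<Rightarrow> real" and \<beta> :: "nat \<Rightarrow> real" and u :: "nat \<Rightarrow> 'y \<Rightarrow> real"
    and t \<sigma> \<delta> \<epsilon>' :: real
  assumes L: "Lam g \<beta> u" and K0: "(\<exists>k. big k) \<longrightarrow> k0 \<le> K" and \<sigma>: "\<bar>\<sigma>\<bar> = 1" and t: "t > 0"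
    and T1: "t * (1 + BD) \<le> (1 - a) / 2"
    and T2: "t * Beta \<le> am K / 2"
    and T3: "t * (1 + 2 / am K) \<le> (1 - a) / 2 - t * BD"
    and T4: "t * BH K < \<delta>"
    and fr: "\<forall>k\<in>Hs K. \<forall>h\<in>ZD k. DN k h < \<delta> \<longrightarrow> DN k (\<lambda>v. \<phi> k v + h v) \<le> nn k + Lf k h + \<epsilon>' * DN k h"
    and \<epsilon>': "\<epsilon>' \<ge> 0"
begin

lemmas LP = Lam_props[OF L]

lemma head_gam: assumes k: "k \<in> Hs K" shows "gam K g \<beta> u t \<sigma> k \<ge> \<alpha> k / 2"
proof -
  have e: "\<bar>eta K g \<beta> u k\<bar> \<le> Beta" by (rule eta_bound[OF L K0 k])
  have "\<bar>\<sigma> * t * eta K g \<beta> u k\<bar> \<le> t * Beta" using e \<sigma> t by (simp add: abs_mult mult_left_mono)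
  moreover have "am K \<le> \<alpha> k" using am_le k by auto
  ultimately have "\<sigma> * t * eta K g \<beta> u k \<ge> - (\<alpha> k / 2)" using T2 abs_le_D2[of "\<sigma> * t * eta K g \<beta> u k" "t * Beta"] by linarith
  then show ?thesis unfolding gam_def using k by simp
qed

lemma tail_gam_nonneg: "gam K g \<beta> u t \<sigma> k \<ge> 0"
proof -
  have r: "rho t > 0" using rho_props(1)[OF T1 t] by simp
  show ?thesis
  proof (cases "k \<in> Hs K")
    case True
    then show ?thesis using head_gam[OF True] big_pos[of k] unfolding Hs_def by fastforce
  next
    case False
    then show ?thesis unfolding gam_def using ZP(4)[of k] LP(4)[of k] r t c0_ge by auto
  qed
qed

lemma vv_yf: "yfun k (vv K g \<beta> u t \<sigma> k) 4"
proof -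
  let ?\<gamma> = "gam K g \<beta> u t \<sigma> k"
  have y: "yfun k (vv K g \<beta> u t \<sigma> k) ((\<alpha> k + t * \<beta> k) / ?\<gamma>)"
    unfolding vv_def by (rule vv_yfun[OF LP(3) tail_gam_nonneg ZP(4) LP(4) \<sigma> less_imp_le[OF t]])
  have "(\<alpha> k + t * \<beta> k) / ?\<gamma> \<le> 4"
  proof (cases "k \<in> Hs K")
    case True
    have g2: "?\<gamma> \<ge> \<alpha> k / 2" by (rule head_gam[OF True])
    have ap: "\<alpha> k > 0" using True big_pos unfolding Hs_def by auto
    have "t * 6 \<le> t * Beta" using Beta_ge t by simp
    moreover have "am K \<le> \<alpha> k" using am_le[of k K] True by auto
    ultimately have "t \<le> \<alpha> k" using T2 ap by linarith
    then have "\<alpha> k + t * \<beta> k \<le> 2 * \<alpha> k" using LP(5)[of k] t by (smt (verit) mult_left_le)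
    then show ?thesis using g2 ap by (simp add: divide_le_eq)
  next
    case F1: False
    show ?thesis
    proof (cases "k \<in> Ss K")
      case True
      have ap: "\<alpha> k > 0" using True unfolding Ss_def by auto
      have "?\<gamma> = \<alpha> k" unfolding gam_def using F1 True by simp
      moreover have "t * Beta \<le> \<alpha> k" using T2 am_le[of k K] True am_pos[of K] by simp
      moreover have "t \<le> t * Beta" using Beta_ge t by simp
      moreover have "t * \<beta> k \<le> t" using LP(5)[of k] t by simp
      ultimately have "\<alpha> k + t * \<beta> k \<le> 2 * ?\<gamma>" by linarith
      then show ?thesis using ap \<open>?\<gamma> = \<alpha> k\<close> by (simp add: divide_le_eq)
    next
      case False
      have r: "rho t > 0" "rho t \<le> 1" using rho_props(1,2)[OF T1 t] by auto
      have g: "?\<gamma> = \<alpha> k / rho t + t * c0 * \<beta> k" unfolding gam_def using F1 False by simp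
      have "\<alpha> k \<le> \<alpha> k / rho t" using r ZP(4)[of k] by (simp add: le_divide_eq mult_left_le)
      moreover have "t * \<beta> k \<le> t * c0 * \<beta> k" using c0_ge t LP(4)[of k] by (simp add: mult_right_mono)
      ultimately have le: "\<alpha> k + t * \<beta> k \<le> ?\<gamma>" unfolding g by linarith
      show ?thesis
      proof (cases "?\<gamma> = 0")
        case True then show ?thesis by simp
      next
        case False
        then have "?\<gamma> > 0" using tail_gam_nonneg by (simp add: order_le_neq_trans)
        then have "(\<alpha> k + t * \<beta> k) / ?\<gamma> \<le> 1" using le by simp
        then show ?thesis by simp
      qed
    qed
  qed
  then show ?thesis by (rule yfun_mono[OF y])
qed

lemma per_k:
  "DN k (P k (\<lambda>x. xs x + \<sigma> * t * g x) (vv K g \<beta> u t \<sigma> k))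
     \<le> 1 + \<sigma> * t * Dv K g \<beta> u + t\<^sup>2 * EE K + \<epsilon>' * (t * BH K)"
proof -
  have D: "\<bar>Dv K g \<beta> u\<bar> \<le> BD" by (rule Dv_bound[OF L K0])
  have amp: "am K > 0" by (rule am_pos)
  have nonneg: "0 \<le> t\<^sup>2 * EE K + \<epsilon>' * (t * BH K)"
    unfolding EE_def BH_def using BD_nonneg Beta_ge amp t \<epsilon>' by (intro add_nonneg_nonneg mult_nonneg_nonneg) auto
  have lowD: "1 - t * BD \<le> 1 + \<sigma> * t * Dv K g \<beta> u"
  proof -
    have "\<bar>\<sigma> * t * Dv K g \<beta> u\<bar> \<le> t * BD" using D \<sigma> t by (simp add: abs_mult mult_left_mono)
    then show ?thesis by (simp add: abs_le_iff)
  qed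
  show ?thesis
  proof (cases "k \<in> Hs K")
    case True
    have bk: "big k" using True unfolding Hs_def by auto
    have ak: "am K \<le> \<alpha> k" "\<alpha> k > 0" using am_le[of k K] True big_pos[OF bk] by auto
    have Beta0: "Beta \<ge> 0" using Beta_ge by simp
    have BHk: "t * (1 + 4 * (1 + Beta) / \<alpha> k) \<le> t * BH K"
      unfolding BH_def using ak amp Beta0 t by (intro mult_left_mono add_left_mono divide_left_mono) auto
    have Ek: "2 * (1 + BD) * Beta / \<alpha> k \<le> EE K"
      unfolding EE_def using ak amp Beta0 BD_nonneg by (intro divide_left_mono) auto
    have hr: "DN k (P k (\<lambda>x. xs x + \<sigma> * t * g x) (\<lambda>y. (\<alpha> k * ys k y + \<sigma> * t * \<beta> k * u k y) / gam K g \<beta> u t \<sigma> k))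
     \<le> 1 + \<sigma> * t * Dv K g \<beta> u + t\<^sup>2 * (2 * (1 + BD) * Beta / \<alpha> k) + \<epsilon>' * (t * (1 + 4 * (1 + Beta) / \<alpha> k))"
    proof (rule head_regime[OF bk LP(1) LP(2) LP(3) LP(4) LP(5) \<sigma> t])
      show "gam K g \<beta> u t \<sigma> k = \<alpha> k + \<sigma> * t * eta K g \<beta> u k" unfolding gam_def using True by simp
      show "gam K g \<beta> u t \<sigma> k \<ge> \<alpha> k / 2" by (rule head_gam[OF True])
      show "eta K g \<beta> u k * ly k = \<alpha> k * (lg k g - Dv K g \<beta> u) + \<beta> k * lu k (u k)" by (rule eta_eq[OF bk])
      show "\<bar>eta K g \<beta> u k\<bar> \<le> Beta" by (rule eta_bound[OF L K0 True])
      show "\<bar>Dv K g \<beta> u\<bar> \<le> BD" by (rule D)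
      show "\<forall>h\<in>ZD k. DN k h < \<delta> \<longrightarrow> DN k (\<lambda>v. \<phi> k v + h v) \<le> nn k + Lf k h + \<epsilon>' * DN k h" using fr True by blast
      show "\<epsilon>' \<ge> 0" by (rule \<epsilon>')
      show "t * (1 + 4 * (1 + Beta) / \<alpha> k) < \<delta>" using BHk T4 by linarith
    qed
    have "t\<^sup>2 * (2 * (1 + BD) * Beta / \<alpha> k) \<le> t\<^sup>2 * EE K" using Ek by (intro mult_left_mono) auto
    moreover have "\<epsilon>' * (t * (1 + 4 * (1 + Beta) / \<alpha> k)) \<le> \<epsilon>' * (t * BH K)" using BHk \<epsilon>' by (rule mult_left_mono)
    ultimately show ?thesis using hr unfolding vv_def by linarith
  next
    case F1: False
    show ?thesis
    proof (cases "k \<in> Ss K")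
      case True
      have ak: "am K \<le> \<alpha> k" "\<alpha> k > 0" "\<not> big k" using am_le[of k K] True unfolding Ss_def by auto
      have nb: "nn k \<le> (1 + a) / 2" using ak(2,3) unfolding big_def by auto
      have g: "gam K g \<beta> u t \<sigma> k = \<alpha> k" unfolding gam_def using F1 True by simp
      have "2 / \<alpha> k \<le> 2 / am K" using ak amp by (intro divide_left_mono) auto
      then have "t * (1 + 2 / \<alpha> k) \<le> t * (1 + 2 / am K)" using t by (intro mult_left_mono) auto
      then have tc: "t * (1 + 2 / \<alpha> k) \<le> (1 - a) / 2 - t * BD" using T3 by linarith
      have "DN k (P k (\<lambda>x. xs x + \<sigma> * t * g x) (\<lambda>y. (\<alpha> k * ys k y + \<sigma> * t * \<beta> k * u k y) / \<alpha> k)) \<le> 1 - t * BD"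
        by (rule slack_regime[OF LP(1) LP(2) LP(3)[of k] LP(4)[of k] LP(5)[of k] \<sigma> t ak(2) nb tc])
      then show ?thesis unfolding vv_def g using lowD nonneg by linarith
    next
      case False
      have r: "rho t > 0" "rho t \<le> 1" "rho t + (1 - rho t) * a = 1 - t * (1 + BD)" using rho_props[OF T1 t] by auto
      have g: "gam K g \<beta> u t \<sigma> k = \<alpha> k / rho t + t * c0 * \<beta> k" unfolding gam_def using F1 False by simp
      have c0p: "c0 > 0" using c0_ge by simp
      have h2: "a + 2 / c0 \<le> 1 - t * (1 + BD)"
      proof -
        have "2 / c0 = (1 - a) / 2" unfolding c0_def using a1 by simp
        then show ?thesis using T1 by simp
      qed
      have h1: "rho t + (1 - rho t) * a \<le> 1 - t * (1 + BD)" using r(3) by simp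
      have "DN k (P k (\<lambda>x. xs x + \<sigma> * t * g x) (\<lambda>y. (\<alpha> k * ys k y + \<sigma> * t * \<beta> k * u k y) / gam K g \<beta> u t \<sigma> k)) \<le> 1 - t * BD"
        using tail_regime[OF LP(1) LP(2) LP(3)[of k] LP(4)[of k] LP(5)[of k] \<sigma> t ZP(4)[of k] r(1) r(2) c0p g h1 h2] .
      then show ?thesis unfolding vv_def using lowD nonneg by linarith
    qed
  qed
qed

end
end

(* from l/L.thy *)


lemma amgm_mu: fixes x y \<mu> :: real assumes "\<mu> > 0" shows "2 * x * y \<le> x\<^sup>2 / \<mu> + \<mu> * y\<^sup>2"
proof -
  have "0 \<le> (x - \<mu> * y)\<^sup>2" by simp
  then have "2 * x * y * \<mu> \<le> x\<^sup>2 + \<mu>\<^sup>2 * y\<^sup>2" by (simp add: power2_eq_square algebra_simps)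
  then have "2 * x * y \<le> (x\<^sup>2 + \<mu>\<^sup>2 * y\<^sup>2) / \<mu>" using assms by (simp add: le_divide_eq)
  then show ?thesis using assms by (simp add: add_divide_distrib power2_eq_square)
qed

context fset begin

definition WW :: "nat \<Rightarrow> real \<Rightarrow> real \<Rightarrow> real" where
  "WW K t \<mu> = t * (real K + 1) * Beta\<^sup>2 + 8 * \<mu>\<^sup>2 * (1 + BD) / (1 - a) + 4 * c0 * \<mu> + t * c0\<^sup>2"

lemma WW_nonneg: "t \<ge> 0 \<Longrightarrow> \<mu> \<ge> 0 \<Longrightarrow> WW K t \<mu> \<ge> 0"
  unfolding WW_def using BD_nonneg a1 c0_ge by (intro add_nonneg_nonneg mult_nonneg_nonneg divide_nonneg_nonneg) auto

lemma rho_q: assumes T1: "t * (1 + BD) \<le> (1 - a) / 2" and t: "t > 0"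
  shows "1 / (rho t)\<^sup>2 - 1 \<le> 8 * t * (1 + BD) / (1 - a)" "1 / rho t \<le> 2"
proof -
  have r: "rho t \<ge> 1/2" "rho t \<le> 1" using rho_props[OF T1 t] by auto
  have r1: "1 - rho t = t * (1 + BD) / (1 - a)" unfolding rho_def by simp
  have "1 / (rho t)\<^sup>2 - 1 = (1 - rho t) * (1 + rho t) / (rho t)\<^sup>2"
    using r by (simp add: field_simps power2_eq_square)
  also have "\<dots> \<le> (1 - rho t) * 2 / (1/4)"
  proof (rule frac_le)
    show "0 \<le> (1 - rho t) * 2" using r by simp
    show "(1 - rho t) * (1 + rho t) \<le> (1 - rho t) * 2" using r by (intro mult_left_mono) auto
    show "0 < (1::real) / 4" by simp
    have "(1/2)\<^sup>2 \<le> (rho t)\<^sup>2" using r by (intro power_mono) auto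
    then show "1 / 4 \<le> (rho t)\<^sup>2" by (simp add: power2_eq_square)
  qed
  also have "\<dots> = 8 * t * (1 + BD) / (1 - a)" unfolding r1 by simp
  finally show "1 / (rho t)\<^sup>2 - 1 \<le> 8 * t * (1 + BD) / (1 - a)" .
  show "1 / rho t \<le> 2" using r by (simp add: divide_le_eq)
qed

context
  fixes K :: nat and g :: "'x \<Rightarrow> real" and \<beta> :: "nat \<Rightarrow> real" and u :: "nat \<Rightarrow> 'y \<Rightarrow> real"
    and t \<sigma> \<delta> \<epsilon>' \<mu> :: real
  assumes L: "Lam g \<beta> u" and K0: "(\<exists>k. big k) \<longrightarrow> k0 \<le> K" and \<sigma>: "\<bar>\<sigma>\<bar> = 1" and t: "t > 0"
    and T1: "t * (1 + BD) \<le> (1 - a) / 2"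
    and T2: "t * Beta \<le> am K / 2"
    and T3: "t * (1 + 2 / am K) \<le> (1 - a) / 2 - t * BD"
    and T4: "t * BH K < \<delta>"
    and fr: "\<forall>k\<in>Hs K. \<forall>h\<in>ZD k. DN k h < \<delta> \<longrightarrow> DN k (\<lambda>v. \<phi> k v + h v) \<le> nn k + Lf k h + \<epsilon>' * DN k h"
    and \<epsilon>': "\<epsilon>' \<ge> 0"
    and \<mu>: "\<mu> > 0" "\<mu> \<le> 1"
    and tail: "(\<Sum>k. if K < k then (\<alpha> k)\<^sup>2 else 0) \<le> \<mu>\<^sup>2"
begin

lemmas LP2 = Lam_props[OF L]

abbreviation "\<gamma> \<equiv> gam K g \<beta> u t \<sigma>"

definition RR :: "nat \<Rightarrow> real" where
  "RR k = (if k \<in> Hs K then 2 * \<sigma> * t * \<alpha> k * eta K g \<beta> u k + t\<^sup>2 * Beta\<^sup>2 else 0)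
        + (if K < k then (\<alpha> k)\<^sup>2 * (1 / (rho t)\<^sup>2 - 1) + 2 * t * c0 * \<alpha> k * \<beta> k / rho t else 0)
        + t\<^sup>2 * c0\<^sup>2 * (\<beta> k)\<^sup>2"

lemma gam_pt: "(\<gamma> k)\<^sup>2 \<le> (\<alpha> k)\<^sup>2 + RR k"
proof -
  have r: "rho t > 0" using rho_props(1)[OF T1 t] by simp
  have b0: "0 \<le> t\<^sup>2 * c0\<^sup>2 * (\<beta> k)\<^sup>2" by simp
  show ?thesis
  proof (cases "k \<in> Hs K")
    case True
    have kK: "\<not> K < k" using True unfolding Hs_def by auto
    have e: "\<bar>eta K g \<beta> u k\<bar> \<le> Beta" by (rule eta_bound[OF L K0 True])
    have "(eta K g \<beta> u k)\<^sup>2 \<le> Beta\<^sup>2" using e by (metis abs_le_square_iff abs_of_nonneg Beta_ge order_trans zero_le_numeral abs_ge_zero)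
    moreover have "\<sigma>\<^sup>2 = 1" using \<sigma> by (metis abs_power2 power2_abs one_power2)
    ultimately have "(\<gamma> k)\<^sup>2 \<le> (\<alpha> k)\<^sup>2 + (2 * \<sigma> * t * \<alpha> k * eta K g \<beta> u k + t\<^sup>2 * Beta\<^sup>2)"
    proof -
      assume h1: "(eta K g \<beta> u k)\<^sup>2 \<le> Beta\<^sup>2" and h2: "\<sigma>\<^sup>2 = 1"
      have "(\<gamma> k)\<^sup>2 = (\<alpha> k)\<^sup>2 + 2 * (\<alpha> k) * (\<sigma> * t * eta K g \<beta> u k) + (\<sigma> * t * eta K g \<beta> u k)\<^sup>2"
        unfolding gam_def using True by (simp add: power2_sum)
      also have "(\<sigma> * t * eta K g \<beta> u k)\<^sup>2 = \<sigma>\<^sup>2 * (t\<^sup>2 * (eta K g \<beta> u k)\<^sup>2)" by (simp add: power_mult_distrib)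
      also have "\<dots> = t\<^sup>2 * (eta K g \<beta> u k)\<^sup>2" using h2 by simp
      finally have "(\<gamma> k)\<^sup>2 = (\<alpha> k)\<^sup>2 + 2 * \<sigma> * t * \<alpha> k * eta K g \<beta> u k + t\<^sup>2 * (eta K g \<beta> u k)\<^sup>2"
        by (simp add: algebra_simps)
      moreover have "t\<^sup>2 * (eta K g \<beta> u k)\<^sup>2 \<le> t\<^sup>2 * Beta\<^sup>2" using h1 by (intro mult_left_mono) auto
      ultimately show ?thesis by simp
    qed
    moreover have "RR k = (2 * \<sigma> * t * \<alpha> k * eta K g \<beta> u k + t\<^sup>2 * Beta\<^sup>2) + t\<^sup>2 * c0\<^sup>2 * (\<beta> k)\<^sup>2"
      unfolding RR_def using True kK by simp
    ultimately show ?thesis using b0 by linarith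
  next
    case F1: False
    show ?thesis
    proof (cases "k \<in> Ss K")
      case True
      have kK: "\<not> K < k" using True unfolding Ss_def by auto
      show ?thesis unfolding RR_def gam_def using True F1 kK b0 by simp
    next
      case False
      have g: "\<gamma> k = \<alpha> k / rho t + t * c0 * \<beta> k" unfolding gam_def using F1 False by simp
      have sq: "(\<gamma> k)\<^sup>2 = (\<alpha> k)\<^sup>2 * (1 / (rho t)\<^sup>2) + 2 * t * c0 * \<alpha> k * \<beta> k / rho t + t\<^sup>2 * c0\<^sup>2 * (\<beta> k)\<^sup>2"
        unfolding g using r by (simp add: power2_eq_square field_simps)
      show ?thesis
      proof (cases "K < k")
        case True
        show ?thesis unfolding RR_def sq using True F1 by (simp add: algebra_simps)
      next
        case kK: False
        have "\<alpha> k = 0" using notHS[OF F1 False] kK by simp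
        then show ?thesis unfolding RR_def sq using kK F1 by simp
      qed
    qed
  qed
qed

lemma summ_tailA: "summable (\<lambda>k. if K < k then (\<alpha> k)\<^sup>2 else 0)"
  by (rule summable_comparison_test[OF _ ZP(6)]) auto

lemma RR_summable: "summable RR"
proof -
  have s1: "summable (\<lambda>k. if k \<in> Hs K then 2 * \<sigma> * t * \<alpha> k * eta K g \<beta> u k + t\<^sup>2 * Beta\<^sup>2 else 0)"
    by (rule summable_finite[OF Hs_fin]) auto
  have s2: "summable (\<lambda>k. if K < k then (\<alpha> k)\<^sup>2 * (1 / (rho t)\<^sup>2 - 1) + 2 * t * c0 * \<alpha> k * \<beta> k / rho t else 0)"
  proof (rule summable_comparison_test)
    have "summable (\<lambda>k. (\<alpha> k)\<^sup>2 * \<bar>1 / (rho t)\<^sup>2 - 1\<bar> + \<bar>2 * t * c0 / rho t\<bar> * (((\<alpha> k)\<^sup>2 + (\<beta> k)\<^sup>2) / 2))"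
      by (intro summable_add summable_mult summable_mult2 summable_divide ZP(6) LP2(6))
    then show "summable (\<lambda>k. (\<alpha> k)\<^sup>2 * \<bar>1 / (rho t)\<^sup>2 - 1\<bar> + \<bar>2 * t * c0 / rho t\<bar> * (((\<alpha> k)\<^sup>2 + (\<beta> k)\<^sup>2) / 2))" .
    show "\<exists>N. \<forall>n\<ge>N. norm (if K < n then (\<alpha> n)\<^sup>2 * (1 / (rho t)\<^sup>2 - 1) + 2 * t * c0 * \<alpha> n * \<beta> n / rho t else 0)
        \<le> (\<alpha> n)\<^sup>2 * \<bar>1 / (rho t)\<^sup>2 - 1\<bar> + \<bar>2 * t * c0 / rho t\<bar> * (((\<alpha> n)\<^sup>2 + (\<beta> n)\<^sup>2) / 2)"
    proof (intro exI allI impI)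
      fix n :: nat
      have ab: "\<bar>\<alpha> n * \<beta> n\<bar> \<le> ((\<alpha> n)\<^sup>2 + (\<beta> n)\<^sup>2) / 2"
      proof -
        have "0 \<le> (\<bar>\<alpha> n\<bar> - \<bar>\<beta> n\<bar>)\<^sup>2" by simp
        then show ?thesis by (simp add: power2_eq_square abs_mult algebra_simps)
      qed
      have "\<bar>(\<alpha> n)\<^sup>2 * (1 / (rho t)\<^sup>2 - 1) + 2 * t * c0 * \<alpha> n * \<beta> n / rho t\<bar>
          \<le> \<bar>(\<alpha> n)\<^sup>2 * (1 / (rho t)\<^sup>2 - 1)\<bar> + \<bar>2 * t * c0 / rho t * (\<alpha> n * \<beta> n)\<bar>"
        by (rule order_trans[OF abs_triangle_ineq]) (simp add: algebra_simps)
      also have "\<dots> \<le> (\<alpha> n)\<^sup>2 * \<bar>1 / (rho t)\<^sup>2 - 1\<bar> + \<bar>2 * t * c0 / rho t\<bar> * (((\<alpha> n)\<^sup>2 + (\<beta> n)\<^sup>2) / 2)"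
        unfolding abs_mult[of "2 * t * c0 / rho t"] using ab
        by (intro add_mono mult_left_mono) (auto simp: abs_mult)
      finally show "norm (if K < n then (\<alpha> n)\<^sup>2 * (1 / (rho t)\<^sup>2 - 1) + 2 * t * c0 * \<alpha> n * \<beta> n / rho t else 0)
        \<le> (\<alpha> n)\<^sup>2 * \<bar>1 / (rho t)\<^sup>2 - 1\<bar> + \<bar>2 * t * c0 / rho t\<bar> * (((\<alpha> n)\<^sup>2 + (\<beta> n)\<^sup>2) / 2)"
        by (auto intro: add_nonneg_nonneg mult_nonneg_nonneg)
    qed
  qed
  have s3: "summable (\<lambda>k. t\<^sup>2 * c0\<^sup>2 * (\<beta> k)\<^sup>2)" by (intro summable_mult LP2(6))
  show ?thesis unfolding RR_def[abs_def] by (intro summable_add s1 s2 s3)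
qed

lemma gam_summable: "summable (\<lambda>k. (\<gamma> k)\<^sup>2)"
proof (rule summable_comparison_test)
  show "summable (\<lambda>k. (\<alpha> k)\<^sup>2 + RR k)" by (intro summable_add ZP(6) RR_summable)
  show "\<exists>N. \<forall>n\<ge>N. norm ((\<gamma> n)\<^sup>2) \<le> (\<alpha> n)\<^sup>2 + RR n" using gam_pt by auto
qed

lemma gam_sum: "(\<Sum>k. (\<gamma> k)\<^sup>2) \<le> 1 + t * WW K t \<mu>"
proof -
  define A where "A k = (if k \<in> Hs K then 2 * \<sigma> * t * \<alpha> k * eta K g \<beta> u k + t\<^sup>2 * Beta\<^sup>2 else 0)" for k
  define B where "B k = (if K < k then (\<alpha> k)\<^sup>2 * (1 / (rho t)\<^sup>2 - 1) + 2 * t * c0 * \<alpha> k * \<beta> k / rho t else 0)" for k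
  define C where "C k = t\<^sup>2 * c0\<^sup>2 * (\<beta> k)\<^sup>2" for k
  define T where "T k = (if K < k then (\<alpha> k)\<^sup>2 else 0)" for k
  define q where "q = 8 * t * (1 + BD) / (1 - a)"
  define B' where "B' k = T k * q + (t * c0 / rho t) * (T k / \<mu> + \<mu> * (\<beta> k)\<^sup>2)" for k
  have r: "rho t > 0" "1 / rho t \<le> 2" "1 / (rho t)\<^sup>2 - 1 \<le> q" using rho_props(1)[OF T1 t] rho_q[OF T1 t] unfolding q_def by auto
  have RRe: "RR = (\<lambda>k. A k + B k + C k)" unfolding RR_def A_def B_def C_def by auto
  have sA: "summable A" unfolding A_def by (rule summable_finite[OF Hs_fin]) auto
  have sC: "summable C" unfolding C_def by (intro summable_mult LP2(6))
  have sT: "summable T" unfolding T_def by (rule summ_tailA)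
  have sB': "summable B'" unfolding B'_def
    by (intro summable_add summable_mult summable_mult2 summable_divide sT LP2(6))
  have tc: "t * c0 / rho t \<ge> 0" using t c0_ge r by simp
  have BB': "B k \<le> B' k" for k
  proof (cases "K < k")
    case True
    have "(\<alpha> k)\<^sup>2 * (1 / (rho t)\<^sup>2 - 1) \<le> (\<alpha> k)\<^sup>2 * q" using r(3) by (intro mult_left_mono) auto
    moreover have "2 * t * c0 * \<alpha> k * \<beta> k / rho t \<le> (t * c0 / rho t) * ((\<alpha> k)\<^sup>2 / \<mu> + \<mu> * (\<beta> k)\<^sup>2)"
    proof -
      have "2 * t * c0 * \<alpha> k * \<beta> k / rho t = (t * c0 / rho t) * (2 * \<alpha> k * \<beta> k)" by simp
      also have "\<dots> \<le> (t * c0 / rho t) * ((\<alpha> k)\<^sup>2 / \<mu> + \<mu> * (\<beta> k)\<^sup>2)"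
        using amgm_mu[OF \<mu>(1)] tc by (intro mult_left_mono) auto
      finally show ?thesis .
    qed
    ultimately show ?thesis unfolding B_def B'_def T_def using True by simp
  next
    case False
    have "0 \<le> (t * c0 / rho t) * (0 / \<mu> + \<mu> * (\<beta> k)\<^sup>2)" by (rule mult_nonneg_nonneg[OF tc]) (use \<mu> in simp)
    then show ?thesis unfolding B_def B'_def T_def using False by simp
  qed
  have Be: "B = (\<lambda>k. RR k - A k - C k)" unfolding RRe by auto
  have sB: "summable B" unfolding Be by (intro summable_diff RR_summable sA sC)
  have "(\<Sum>k. (\<gamma> k)\<^sup>2) \<le> (\<Sum>k. (\<alpha> k)\<^sup>2 + RR k)"
    by (intro suminf_le gam_pt gam_summable summable_add ZP(6) RR_summable)
  also have "\<dots> = (\<Sum>k. (\<alpha> k)\<^sup>2) + ((\<Sum>k. A k) + (\<Sum>k. B k) + (\<Sum>k. C k))"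
    unfolding RRe using suminf_add[OF ZP(6) summable_add[OF summable_add[OF sA sB] sC]]
      suminf_add[OF summable_add[OF sA sB] sC] suminf_add[OF sA sB] by simp
  also have "(\<Sum>k. A k) \<le> t\<^sup>2 * Beta\<^sup>2 * (real K + 1)"
  proof -
    have "(\<Sum>k. A k) = (\<Sum>k\<in>Hs K. A k)" by (rule suminf_finite[OF Hs_fin]) (auto simp: A_def)
    also have "\<dots> = 2 * \<sigma> * t * (\<Sum>k\<in>Hs K. \<alpha> k * eta K g \<beta> u k) + t\<^sup>2 * Beta\<^sup>2 * card (Hs K)"
      unfolding A_def by (simp add: sum.distrib sum_distrib_left mult.assoc)
    also have "\<dots> = t\<^sup>2 * Beta\<^sup>2 * card (Hs K)" using sum_eta by simp
    also have "\<dots> \<le> t\<^sup>2 * Beta\<^sup>2 * (real K + 1)" using card_Hs[of K] by (intro mult_left_mono) auto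
    finally show ?thesis .
  qed
  also have "(\<Sum>k. B k) \<le> q * \<mu>\<^sup>2 + 4 * t * c0 * \<mu>"
  proof -
    have "(\<Sum>k. B k) \<le> (\<Sum>k. B' k)" by (rule suminf_le[OF BB' sB sB'])
    also have "\<dots> = (\<Sum>k. T k) * q + (t * c0 / rho t) * ((\<Sum>k. T k) / \<mu> + \<mu> * (\<Sum>k. (\<beta> k)\<^sup>2))"
    proof -
      have s1: "summable (\<lambda>k. T k * q)" by (rule summable_mult2[OF sT])
      have s2: "summable (\<lambda>k. T k / \<mu>)" by (rule summable_divide[OF sT])
      have s3: "summable (\<lambda>k. \<mu> * (\<beta> k)\<^sup>2)" by (rule summable_mult[OF LP2(6)])
      have s23: "summable (\<lambda>k. T k / \<mu> + \<mu> * (\<beta> k)\<^sup>2)" by (rule summable_add[OF s2 s3])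
      have "(\<Sum>k. B' k) = (\<Sum>k. T k * q) + (\<Sum>k. (t * c0 / rho t) * (T k / \<mu> + \<mu> * (\<beta> k)\<^sup>2))"
        unfolding B'_def by (rule suminf_add[OF s1 summable_mult[OF s23], symmetric])
      also have "(\<Sum>k. T k * q) = (\<Sum>k. T k) * q" by (rule suminf_mult2[OF sT, symmetric])
      also have "(\<Sum>k. (t * c0 / rho t) * (T k / \<mu> + \<mu> * (\<beta> k)\<^sup>2)) = (t * c0 / rho t) * (\<Sum>k. T k / \<mu> + \<mu> * (\<beta> k)\<^sup>2)"
        by (rule suminf_mult[OF s23])
      also have "(\<Sum>k. T k / \<mu> + \<mu> * (\<beta> k)\<^sup>2) = (\<Sum>k. T k / \<mu>) + (\<Sum>k. \<mu> * (\<beta> k)\<^sup>2)"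
        by (rule suminf_add[OF s2 s3, symmetric])
      also have "(\<Sum>k. T k / \<mu>) = (\<Sum>k. T k) / \<mu>" by (rule suminf_divide[OF sT])
      also have "(\<Sum>k. \<mu> * (\<beta> k)\<^sup>2) = \<mu> * (\<Sum>k. (\<beta> k)\<^sup>2)" by (rule suminf_mult[OF LP2(6)])
      finally show ?thesis .
    qed
    also have "\<dots> \<le> \<mu>\<^sup>2 * q + (t * c0 / rho t) * (\<mu>\<^sup>2 / \<mu> + \<mu> * 1)"
    proof -
      have T: "(\<Sum>k. T k) \<le> \<mu>\<^sup>2" using tail unfolding T_def .
      have q0: "q \<ge> 0" unfolding q_def using t BD_nonneg a1 by simp
      have "(\<Sum>k. T k) / \<mu> + \<mu> * (\<Sum>k. (\<beta> k)\<^sup>2) \<le> \<mu>\<^sup>2 / \<mu> + \<mu> * 1"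
        using T LP2(7) \<mu> by (intro add_mono divide_right_mono mult_left_mono) auto
      then have h2: "(t * c0 / rho t) * ((\<Sum>k. T k) / \<mu> + \<mu> * (\<Sum>k. (\<beta> k)\<^sup>2)) \<le> (t * c0 / rho t) * (\<mu>\<^sup>2 / \<mu> + \<mu> * 1)"
        using tc by (rule mult_left_mono)
      have h1: "(\<Sum>k. T k) * q \<le> \<mu>\<^sup>2 * q" using T q0 by (rule mult_right_mono)
      show ?thesis using add_mono[OF h1 h2] .
    qed
    also have "\<dots> = q * \<mu>\<^sup>2 + (t * c0 / rho t) * (2 * \<mu>)" using \<mu> by (simp add: power2_eq_square)
    also have "\<dots> \<le> q * \<mu>\<^sup>2 + 4 * t * c0 * \<mu>"
    proof -
      have "t * c0 / rho t = (t * c0) * (1 / rho t)" by simp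
      also have "\<dots> \<le> (t * c0) * 2" using r(2) t c0_ge by (intro mult_left_mono) auto
      finally have "t * c0 / rho t * (2 * \<mu>) \<le> (t * c0 * 2) * (2 * \<mu>)" using \<mu> by (intro mult_right_mono) auto
      then show ?thesis by simp
    qed
    finally show ?thesis .
  qed
  also have "(\<Sum>k. C k) \<le> t\<^sup>2 * c0\<^sup>2"
  proof -
    have "(\<Sum>k. C k) = t\<^sup>2 * c0\<^sup>2 * (\<Sum>k. (\<beta> k)\<^sup>2)" unfolding C_def by (rule suminf_mult[OF LP2(6)])
    also have "\<dots> \<le> t\<^sup>2 * c0\<^sup>2 * 1" using LP2(7) by (intro mult_left_mono) auto
    finally show ?thesis by simp
  qed
  also have "(\<Sum>k. (\<alpha> k)\<^sup>2) \<le> 1" by (rule ZP(7))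
  finally have "(\<Sum>k. (\<gamma> k)\<^sup>2) \<le> 1 + (t\<^sup>2 * Beta\<^sup>2 * (real K + 1) + (q * \<mu>\<^sup>2 + 4 * t * c0 * \<mu>) + t\<^sup>2 * c0\<^sup>2)"
    by simp
  also have "\<dots> = 1 + t * WW K t \<mu>"
  proof -
    have "q * \<mu>\<^sup>2 = t * (8 * \<mu>\<^sup>2 * (1 + BD) / (1 - a))" unfolding q_def by simp
    then show ?thesis unfolding WW_def by (simp add: algebra_simps power2_eq_square)
  qed
  finally show ?thesis .
qed

lemma gam_zero: "\<gamma> k = 0 \<Longrightarrow> \<alpha> k = 0 \<and> \<beta> k = 0"
proof -
  assume g0: "\<gamma> k = 0"
  have r: "rho t > 0" using rho_props(1)[OF T1 t] by simp
  have nH: "k \<notin> Hs K"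
  proof
    assume k: "k \<in> Hs K"
    have "\<gamma> k \<ge> \<alpha> k / 2" by (rule head_gam[OF L K0 \<sigma> t T1 T2 T3 T4 fr \<epsilon>' k])
    moreover have "\<alpha> k > 0" using k big_pos unfolding Hs_def by auto
    ultimately show False using g0 by simp
  qed
  have nS: "k \<notin> Ss K"
  proof
    assume k: "k \<in> Ss K"
    then have "\<gamma> k = \<alpha> k" "\<alpha> k > 0" unfolding gam_def Ss_def using nH by auto
    then show False using g0 by simp
  qed
  have "\<alpha> k / rho t + t * c0 * \<beta> k = 0" using g0 nH nS unfolding gam_def by simp
  moreover have "\<alpha> k / rho t \<ge> 0" using ZP(4)[of k] r by simp
  moreover have "t * c0 * \<beta> k \<ge> 0" using t c0_ge LP2(4)[of k] by simp
  ultimately have "\<alpha> k / rho t = 0" "t * c0 * \<beta> k = 0" by linarith+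
  then show ?thesis using r t c0_ge by auto
qed

lemma gam_vv: "\<gamma> k * vv K g \<beta> u t \<sigma> k y = \<alpha> k * ys k y + \<sigma> * t * \<beta> k * u k y"
proof (cases "\<gamma> k = 0")
  case True then show ?thesis using gam_zero by simp
next
  case False then show ?thesis unfolding vv_def by simp
qed

lemma assembly:
  assumes w: "(x, y) \<in> SS" "snorm (x, y) \<le> 1"
  shows "lam xs \<alpha> ys (x, y) + \<sigma> * t * lam g \<beta> u (x, y)
     \<le> 1 + \<sigma> * t * Dv K g \<beta> u + t * (t * EE K + \<epsilon>' * BH K + 4 * WW K t \<mu>)"
proof -
  let ?s2 = "(\<Sum>k. (\<gamma> k)\<^sup>2)"
  let ?sq = "sqrt ?s2"
  let ?s' = "max 1 ?sq"
  define W where "W = WW K t \<mu>"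
  define m where "m = 1 + \<sigma> * t * Dv K g \<beta> u + t * (t * EE K + \<epsilon>' * BH K + 4 * W)"
  have W0: "W \<ge> 0" unfolding W_def using WW_nonneg t \<mu> by simp
  have s20: "0 \<le> ?s2" by (rule suminf_nonneg[OF gam_summable]) simp
  have s2b: "?s2 \<le> 1 + t * W" unfolding W_def by (rule gam_sum)
  have s1: "?s' \<ge> 1" by simp
  have s2le: "?s2 \<le> ?s'\<^sup>2"
  proof -
    have "?s2 = ?sq\<^sup>2" using s20 by simp
    also have "\<dots> \<le> ?s'\<^sup>2" using s20 by (intro power_mono) auto
    finally show ?thesis .
  qed
  have sm1: "?s' - 1 \<le> t * W / 2"
  proof (cases "?sq \<le> 1")
    case True then show ?thesis using t W0 by simp
  next
    case False
    have "0 \<le> (?sq - 1)\<^sup>2" by simp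
    then have "2 * ?sq \<le> ?sq\<^sup>2 + 1" by (simp add: power2_eq_square algebra_simps)
    moreover have "?sq\<^sup>2 = ?s2" using s20 by simp
    ultimately have "?sq - 1 \<le> (?s2 - 1) / 2" by simp
    then show ?thesis using False s2b by simp
  qed
  have D: "\<bar>Dv K g \<beta> u\<bar> \<le> BD" by (rule Dv_bound[OF L K0])
  have mpos: "m > 0"
  proof -
    have "\<bar>\<sigma> * t * Dv K g \<beta> u\<bar> \<le> t * BD" using D \<sigma> t by (simp add: abs_mult mult_left_mono)
    then have "- (\<sigma> * t * Dv K g \<beta> u) \<le> t * BD" by (rule abs_le_D2)
    moreover have "t * BD \<le> 1/2"
    proof -
      have "t * BD \<le> t * (1 + BD)" using t by simp
      also have "\<dots> \<le> (1 - a) / 2" by (rule T1)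
      also have "\<dots> \<le> 1/2" using a_nonneg by simp
      finally show ?thesis .
    qed
    moreover have "0 \<le> t * (t * EE K + \<epsilon>' * BH K + 4 * W)"
      unfolding EE_def BH_def using t \<epsilon>' W0 BD_nonneg Beta_ge am_pos[of K]
      by (intro mult_nonneg_nonneg add_nonneg_nonneg divide_nonneg_nonneg) auto
    ultimately show ?thesis unfolding m_def by linarith
  qed
  let ?G = "\<lambda>x. xs x + \<sigma> * t * g x"
  have Gbl: "bounded_linear ?G"
    by (rule bounded_linear_add[OF xs_bl bounded_linear_const_mult[OF LP2(1)]])
  have g0: "\<And>k. 0 \<le> \<gamma> k" by (rule tail_gam_nonneg[OF L K0 \<sigma> t T1 T2 T3 T4 fr \<epsilon>'])
  note vy = vv_yf[OF L K0 \<sigma> t T1 T2 T3 T4 fr \<epsilon>']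
  have dnk: "DN k (P k ?G (\<lambda>y. ?s' * vv K g \<beta> u t \<sigma> k y)) \<le> m" for k
  proof -
    have eq: "P k ?G (\<lambda>y. ?s' * vv K g \<beta> u t \<sigma> k y)
        = (\<lambda>v. 1 * P k ?G (vv K g \<beta> u t \<sigma> k) v + (?s' - 1) * P k (\<lambda>_. 0) (vv K g \<beta> u t \<sigma> k) v)"
      by (auto simp: pair_fun_def algebra_simps)
    have b1: "Zs.bnd k (P k ?G (vv K g \<beta> u t \<sigma> k))" by (rule P_bnd[OF Gbl vy])
    have b2: "Zs.bnd k (P k (\<lambda>_. 0) (vv K g \<beta> u t \<sigma> k))" by (rule P_bnd1[OF vy])
    have "DN k (P k ?G (\<lambda>y. ?s' * vv K g \<beta> u t \<sigma> k y))
        \<le> \<bar>1\<bar> * DN k (P k ?G (vv K g \<beta> u t \<sigma> k)) + \<bar>?s' - 1\<bar> * DN k (P k (\<lambda>_. 0) (vv K g \<beta> u t \<sigma> k))"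
      unfolding eq by (rule Zs.dn_lin2[OF b1 b2])
    also have "\<dots> \<le> (1 + \<sigma> * t * Dv K g \<beta> u + t\<^sup>2 * EE K + \<epsilon>' * (t * BH K)) + (t * W / 2) * 8"
    proof -
      have p: "DN k (P k ?G (vv K g \<beta> u t \<sigma> k)) \<le> 1 + \<sigma> * t * Dv K g \<beta> u + t\<^sup>2 * EE K + \<epsilon>' * (t * BH K)"
        by (rule per_k[OF L K0 \<sigma> t T1 T2 T3 T4 fr \<epsilon>'])
      have d8: "DN k (P k (\<lambda>_. 0) (vv K g \<beta> u t \<sigma> k)) \<le> 2 * 4" by (rule dn_Pu[OF vy]) simp
      have "\<bar>?s' - 1\<bar> * DN k (P k (\<lambda>_. 0) (vv K g \<beta> u t \<sigma> k)) \<le> (t * W / 2) * 8"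
        using s1 sm1 d8 Zs.dn_nonneg[OF b2] by (intro mult_mono) auto
      then show ?thesis using p by simp
    qed
    also have "\<dots> = m" unfolding m_def by (simp add: algebra_simps power2_eq_square)
    finally show ?thesis .
  qed
  have LL: "Lam (\<lambda>x. (1/m) * ?G x) (\<lambda>k. \<gamma> k / ?s') (\<lambda>k y. (1/m) * (?s' * vv K g \<beta> u t \<sigma> k y))"
    by (rule Lam_construct[OF Gbl mpos s1 g0 gam_summable _ vy dnk]) (use s2le in simp)
  note cv = lam_construct_val[OF LL mpos s1 gam_summable vy w(1)]
  have "lam (\<lambda>x. (1/m) * ?G x) (\<lambda>k. \<gamma> k / ?s') (\<lambda>k y. (1/m) * (?s' * vv K g \<beta> u t \<sigma> k y)) (x, y) \<le> 1"
    using lam_le_snorm[OF LL, of "(x, y)"] w(2) by simp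
  then have "(1/m) * (?G x + (\<Sum>k. \<gamma> k * vv K g \<beta> u t \<sigma> k (y k))) \<le> 1" using cv(2) by simp
  then have main: "?G x + (\<Sum>k. \<gamma> k * vv K g \<beta> u t \<sigma> k (y k)) \<le> m" using mpos by (simp add: divide_le_eq mult.commute)
  have sa: "summable (\<lambda>k. \<alpha> k * ys k (y k))" by (rule ser_summable(1)[OF w(1) ZP(6) ZP(3)])
  have sb: "summable (\<lambda>k. \<beta> k * u k (y k))" by (rule ser_summable(1)[OF w(1) LP2(6) LP2(3)])
  have "(\<Sum>k. \<gamma> k * vv K g \<beta> u t \<sigma> k (y k)) = (\<Sum>k. \<alpha> k * ys k (y k) + (\<sigma> * t) * (\<beta> k * u k (y k)))"
    using gam_vv by (simp add: mult.assoc)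
  also have "\<dots> = (\<Sum>k. \<alpha> k * ys k (y k)) + (\<sigma> * t) * (\<Sum>k. \<beta> k * u k (y k))"
    using suminf_add[OF sa summable_mult[OF sb, of "\<sigma> * t"]] suminf_mult[OF sb, of "\<sigma> * t"] by simp
  finally have "?G x + (\<Sum>k. \<gamma> k * vv K g \<beta> u t \<sigma> k (y k))
      = lam xs \<alpha> ys (x, y) + \<sigma> * t * lam g \<beta> u (x, y)"
    using w(1) by (simp add: lam_val algebra_simps)
  with main show ?thesis unfolding m_def W_def by simp
qed

end
end

(* from m/M.thy *)


lemma tail_shift:
  fixes f :: "nat \<Rightarrow> real" assumes "summable f"
  shows "(\<Sum>k. if K < k then f k else 0) = (\<Sum>i. f (i + Suc K))"
proof -
  define g where "g k = (if K < k then f k else 0)" for k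
  have "(\<lambda>i. g (i + Suc K)) = (\<lambda>i. f (i + Suc K))" unfolding g_def by auto
  moreover have "summable (\<lambda>i. f (i + Suc K))" by (rule iffD2[OF summable_iff_shift assms])
  ultimately have "(\<lambda>i. g (i + Suc K)) sums (\<Sum>i. f (i + Suc K))" by (simp add: summable_sums)
  then have "g sums ((\<Sum>i. f (i + Suc K)) + (\<Sum>i<Suc K. g i))" by (rule iffD1[OF sums_iff_shift])
  moreover have "(\<Sum>i<Suc K. g i) = 0" unfolding g_def by (intro sum.neutral) auto
  ultimately have "g sums (\<Sum>i. f (i + Suc K))" by simp
  then show ?thesis unfolding g_def[abs_def] by (rule sums_unique[symmetric])
qed

context fset begin

abbreviation "ff \<equiv> lam xs \<alpha> ys"

lemma P_final:
  assumes \<epsilon>: "\<epsilon> > 0"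
  shows "\<exists>t>0. \<forall>g \<beta> u. Lam g \<beta> u \<longrightarrow> (\<exists>D. \<forall>w\<in>SS. snorm w \<le> 1 \<longrightarrow>
           ff w + t * lam g \<beta> u w \<le> 1 + t * D + t * \<epsilon> \<and> ff w - t * lam g \<beta> u w \<le> 1 - t * D + t * \<epsilon>)"
proof -
  define C1 where "C1 = 8 * (1 + BD) / (1 - a) + 4 * c0"
  have C1p: "C1 > 0"
  proof -
    have "8 * (1 + BD) / (1 - a) \<ge> 0" using BD_nonneg a1 by simp
    moreover have "4 * c0 > 0" using c0_ge by simp
    ultimately show ?thesis unfolding C1_def by simp
  qed
  define \<mu> where "\<mu> = min 1 (\<epsilon> / (12 * C1))"
  have \<mu>: "\<mu> > 0" "\<mu> \<le> 1" unfolding \<mu>_def using \<epsilon> C1p by auto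
  have \<mu>C: "4 * (8 * \<mu>\<^sup>2 * (1 + BD) / (1 - a) + 4 * c0 * \<mu>) \<le> \<epsilon> / 3"
  proof -
    have "\<mu>\<^sup>2 \<le> \<mu>" using \<mu> by (simp add: power2_eq_square mult_left_le)
    then have "8 * \<mu>\<^sup>2 * (1 + BD) / (1 - a) \<le> 8 * \<mu> * (1 + BD) / (1 - a)"
      using BD_nonneg a1 by (intro divide_right_mono mult_right_mono) auto
    then have "4 * (8 * \<mu>\<^sup>2 * (1 + BD) / (1 - a) + 4 * c0 * \<mu>) \<le> 4 * (8 * \<mu> * (1 + BD) / (1 - a) + 4 * c0 * \<mu>)"
    proof -
      have gen: "\<And>A B c. A \<le> B \<Longrightarrow> 4 * (A + c) \<le> 4 * (B + (c::real))" by simp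
      show ?thesis using gen[OF \<open>8 * \<mu>\<^sup>2 * (1 + BD) / (1 - a) \<le> 8 * \<mu> * (1 + BD) / (1 - a)\<close>] .
    qed
    also have "\<dots> = 4 * \<mu> * C1" unfolding C1_def by (simp add: algebra_simps)
    also have "\<dots> \<le> 4 * (\<epsilon> / (12 * C1)) * C1" using C1p unfolding \<mu>_def by (intro mult_right_mono) auto
    also have "\<dots> = \<epsilon> / 3" using C1p by simp
    finally show ?thesis .
  qed
  obtain N where N: "\<forall>n\<ge>N. norm (\<Sum>i. (\<alpha> (i + n))\<^sup>2) < \<mu>\<^sup>2"
    using suminf_exist_split[of "\<mu>\<^sup>2" "\<lambda>k. (\<alpha> k)\<^sup>2"] \<mu> ZP(6) by auto
  define K where "K = max N k0"
  have K0: "(\<exists>k. big k) \<longrightarrow> k0 \<le> K" unfolding K_def by simp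
  have tail: "(\<Sum>k. if K < k then (\<alpha> k)\<^sup>2 else 0) \<le> \<mu>\<^sup>2"
  proof -
    have "(\<Sum>k. if K < k then (\<alpha> k)\<^sup>2 else 0) = (\<Sum>i. (\<alpha> (i + Suc K))\<^sup>2)" by (rule tail_shift[OF ZP(6)])
    also have "\<dots> \<le> norm (\<Sum>i. (\<alpha> (i + Suc K))\<^sup>2)" by simp
    also have "\<dots> < \<mu>\<^sup>2"
    proof -
      have "Suc K \<ge> N" unfolding K_def by simp
      then show ?thesis using N by blast
    qed
    finally show ?thesis by simp
  qed
  have BHp: "BH K > 0" unfolding BH_def using Beta_ge am_pos[of K] by (simp add: add_pos_nonneg)
  define \<epsilon>' where "\<epsilon>' = \<epsilon> / (3 * BH K)"
  have \<epsilon>': "\<epsilon>' > 0" "\<epsilon>' * BH K = \<epsilon> / 3" unfolding \<epsilon>'_def using \<epsilon> BHp by auto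
  have "\<exists>\<delta>>0. \<forall>k\<in>Hs K. \<forall>h\<in>ZD k. DN k h < \<delta> \<longrightarrow> DN k (\<lambda>v. \<phi> k v + h v) \<le> nn k + Lf k h + \<epsilon>' * DN k h"
  proof (rule finite_delta[OF Hs_fin])
    fix k assume "k \<in> Hs K"
    then have "big k" unfolding Hs_def by auto
    then show "\<exists>\<delta>>0. \<forall>h\<in>ZD k. DN k h < \<delta> \<longrightarrow> DN k (\<lambda>v. \<phi> k v + h v) \<le> nn k + Lf k h + \<epsilon>' * DN k h"
      using goodL_D(5)[OF Lf_good \<epsilon>'(1)] by blast
  qed auto
  then obtain \<delta> where \<delta>: "\<delta> > 0"
    and fr: "\<forall>k\<in>Hs K. \<forall>h\<in>ZD k. DN k h < \<delta> \<longrightarrow> DN k (\<lambda>v. \<phi> k v + h v) \<le> nn k + Lf k h + \<epsilon>' * DN k h" by blast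
  define C2 where "C2 = EE K + 4 * (real K + 1) * Beta\<^sup>2 + 4 * c0\<^sup>2 + 1"
  have EE0: "EE K \<ge> 0" unfolding EE_def using BD_nonneg Beta_ge am_pos[of K] by simp
  have C2p: "C2 > 0"
  proof -
    have "0 \<le> 4 * (real K + 1) * Beta\<^sup>2" by simp
    moreover have "0 \<le> 4 * c0\<^sup>2" by simp
    ultimately show ?thesis unfolding C2_def using EE0 by linarith
  qed
  define t1 where "t1 = (1 - a) / (2 * (1 + BD))"
  define t2 where "t2 = am K / (2 * Beta)"
  define t3 where "t3 = (1 - a) / (2 * (1 + 2 / am K + BD))"
  define t4 where "t4 = \<delta> / (2 * BH K)"
  define t5 where "t5 = \<epsilon> / (3 * C2)"
  define t where "t = min (min (min t1 t2) (min t3 t4)) t5"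
  have pos: "t1 > 0" "t2 > 0" "t3 > 0" "t4 > 0" "t5 > 0"
    unfolding t1_def t2_def t3_def t4_def t5_def using a1 BD_nonneg Beta_ge am_pos[of K] \<delta> BHp \<epsilon> C2p
    by (auto intro!: divide_pos_pos add_pos_nonneg)
  have t: "t > 0" unfolding t_def using pos by simp
  have tle: "t \<le> t1" "t \<le> t2" "t \<le> t3" "t \<le> t4" "t \<le> t5" unfolding t_def by (simp_all add: min_le_iff_disj)
  have T1: "t * (1 + BD) \<le> (1 - a) / 2"
  proof -
    have p: "1 + BD > 0" using BD_nonneg by simp
    have "t * (1 + BD) \<le> t1 * (1 + BD)" using tle(1) p by (intro mult_right_mono) auto
    also have "\<dots> = (1 - a) / 2" unfolding t1_def using p by (simp add: field_simps)
    finally show ?thesis .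
  qed
  have T2: "t * Beta \<le> am K / 2"
  proof -
    have p: "Beta > 0" using Beta_ge by simp
    have "t * Beta \<le> t2 * Beta" using tle(2) p by (intro mult_right_mono) auto
    also have "\<dots> = am K / 2" unfolding t2_def using p by (simp add: field_simps)
    finally show ?thesis .
  qed
  have T3: "t * (1 + 2 / am K) \<le> (1 - a) / 2 - t * BD"
  proof -
    have p: "1 + 2 / am K + BD > 0" using am_pos[of K] BD_nonneg by (simp add: add_pos_nonneg)
    have "t * (1 + 2 / am K + BD) \<le> t3 * (1 + 2 / am K + BD)" using tle(3) p by (intro mult_right_mono) auto
    also have "\<dots> = (1 - a) / 2" unfolding t3_def
    proof -
      have gen: "\<And>X Q. (Q::real) > 0 \<Longrightarrow> X / (2 * Q) * Q = X / 2" by (simp add: field_simps)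
      show "(1 - a) / (2 * (1 + 2 / am K + BD)) * (1 + 2 / am K + BD) = (1 - a) / 2" by (rule gen[OF p])
    qed
    finally show ?thesis by (simp add: algebra_simps)
  qed
  have T4: "t * BH K < \<delta>"
  proof -
    have "t * BH K \<le> t4 * BH K" using tle(4) BHp by (intro mult_right_mono) auto
    also have "\<dots> = \<delta> / 2" unfolding t4_def using BHp by (simp add: field_simps)
    finally show ?thesis using \<delta> by simp
  qed
  have T5: "t * C2 \<le> \<epsilon> / 3"
  proof -
    have "t * C2 \<le> t5 * C2" using tle(5) C2p by (intro mult_right_mono) auto
    also have "\<dots> = \<epsilon> / 3" unfolding t5_def using C2p by (simp add: field_simps)
    finally show ?thesis .
  qed
  have X: "t * EE K + \<epsilon>' * BH K + 4 * WW K t \<mu> \<le> \<epsilon>"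
  proof -
    have "4 * WW K t \<mu> = t * (4 * (real K + 1) * Beta\<^sup>2 + 4 * c0\<^sup>2) + 4 * (8 * \<mu>\<^sup>2 * (1 + BD) / (1 - a) + 4 * c0 * \<mu>)"
      unfolding WW_def by (simp add: algebra_simps)
    moreover have "t * EE K + t * (4 * (real K + 1) * Beta\<^sup>2 + 4 * c0\<^sup>2) \<le> t * C2"
      unfolding C2_def using t by (simp add: algebra_simps)
    ultimately show ?thesis using T5 \<mu>C \<epsilon>'(2) by linarith
  qed
  show ?thesis
  proof (rule exI[of _ t], rule conjI[OF t], intro allI impI)
    fix g \<beta> u assume L: "Lam g \<beta> u"
    show "\<exists>D. \<forall>w\<in>SS. snorm w \<le> 1 \<longrightarrow>
           ff w + t * lam g \<beta> u w \<le> 1 + t * D + t * \<epsilon> \<and> ff w - t * lam g \<beta> u w \<le> 1 - t * D + t * \<epsilon>"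
    proof (rule exI[of _ "Dv K g \<beta> u"], intro ballI impI conjI)
      fix w assume w: "w \<in> SS" "snorm w \<le> 1"
      obtain x y where xy: "w = (x, y)" by fastforce
      have tX: "t * (t * EE K + \<epsilon>' * BH K + 4 * WW K t \<mu>) \<le> t * \<epsilon>" using X t by (intro mult_left_mono) auto
      have "ff (x, y) + 1 * t * lam g \<beta> u (x, y) \<le> 1 + 1 * t * Dv K g \<beta> u + t * (t * EE K + \<epsilon>' * BH K + 4 * WW K t \<mu>)"
        by (rule assembly[OF L K0 _ t T1 T2 T3 T4 fr less_imp_le[OF \<epsilon>'(1)] \<mu> tail]) (use w xy in auto)
      then show "ff w + t * lam g \<beta> u w \<le> 1 + t * Dv K g \<beta> u + t * \<epsilon>" using tX xy by simp
      have "ff (x, y) + (-1) * t * lam g \<beta> u (x, y) \<le> 1 + (-1) * t * Dv K g \<beta> u + t * (t * EE K + \<epsilon>' * BH K + 4 * WW K t \<mu>)"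
        by (rule assembly[OF L K0 _ t T1 T2 T3 T4 fr less_imp_le[OF \<epsilon>'(1)] \<mu> tail]) (use w xy in auto)
      then show "ff w - t * lam g \<beta> u w \<le> 1 - t * Dv K g \<beta> u + t * \<epsilon>" using tX xy by simp
    qed
  qed
qed

lemma Q_cond:
  assumes \<epsilon>: "\<epsilon> > 0"
  shows "\<exists>\<delta>>0. \<forall>w w'. w \<in> SS \<longrightarrow> snorm w \<le> 1 \<longrightarrow> w' \<in> SS \<longrightarrow> snorm w' \<le> 1 \<longrightarrow>
              ff w \<ge> 1 - \<delta> \<longrightarrow> ff w' \<ge> 1 - \<delta> \<longrightarrow> snorm (sadd w (sscale (-1) w')) \<le> \<epsilon>"
proof -
  obtain t where t: "t > 0" and P: "\<forall>g \<beta> u. Lam g \<beta> u \<longrightarrow> (\<exists>D. \<forall>w\<in>SS. snorm w \<le> 1 \<longrightarrow>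
           ff w + t * lam g \<beta> u w \<le> 1 + t * D + t * (\<epsilon>/4) \<and> ff w - t * lam g \<beta> u w \<le> 1 - t * D + t * (\<epsilon>/4))"
    using P_final[of "\<epsilon>/4"] \<epsilon> by auto
  show ?thesis
  proof (intro exI[of _ "t * \<epsilon> / 4"] conjI allI impI)
    show "t * \<epsilon> / 4 > 0" using t \<epsilon> by simp
    fix w w' assume w: "w \<in> SS" "snorm w \<le> 1" and w': "w' \<in> SS" "snorm w' \<le> 1"
      and fw: "ff w \<ge> 1 - t * \<epsilon> / 4" and fw': "ff w' \<ge> 1 - t * \<epsilon> / 4"
    have one: "lam g \<beta> u v - lam g \<beta> u v' \<le> \<epsilon>"
      if L: "Lam g \<beta> u" and v: "v \<in> SS" "snorm v \<le> 1" "ff v \<ge> 1 - t * \<epsilon> / 4"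
        and v': "v' \<in> SS" "snorm v' \<le> 1" "ff v' \<ge> 1 - t * \<epsilon> / 4" for g \<beta> u v v'
    proof -
      obtain D where D: "\<forall>w\<in>SS. snorm w \<le> 1 \<longrightarrow>
           ff w + t * lam g \<beta> u w \<le> 1 + t * D + t * (\<epsilon>/4) \<and> ff w - t * lam g \<beta> u w \<le> 1 - t * D + t * (\<epsilon>/4)"
        using P L by blast
      have a1: "ff v + t * lam g \<beta> u v \<le> 1 + t * D + t * (\<epsilon>/4)" using D v by auto
      have a2: "ff v' - t * lam g \<beta> u v' \<le> 1 - t * D + t * (\<epsilon>/4)" using D v' by auto
      have "t * (lam g \<beta> u v - lam g \<beta> u v') \<le> t * \<epsilon>" using a1 a2 v(3) v'(3) by (simp add: algebra_simps)
      then show ?thesis using t by simp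
    qed
    show "snorm (sadd w (sscale (-1) w')) \<le> \<epsilon>"
    proof (rule snorm_least)
      fix g \<beta> u assume L: "Lam g \<beta> u"
      have "lam g \<beta> u (sadd w (sscale (-1) w')) = lam g \<beta> u w - lam g \<beta> u w'"
        using lam_add[OF L w(1) SS_sc[OF w'(1)]] lam_sc[OF L w'(1), of "-1"] by simp
      moreover have "lam g \<beta> u w - lam g \<beta> u w' \<le> \<epsilon>" by (rule one[OF L w fw w' fw'])
      moreover have "lam g \<beta> u w' - lam g \<beta> u w \<le> \<epsilon>" by (rule one[OF L w' fw' w fw])
      ultimately show "\<bar>lam g \<beta> u (sadd w (sscale (-1) w'))\<bar> \<le> \<epsilon>" by simp
    qed
  qed
qed

lemma main: "frechet_diff_dual_norm sadd sscale SS snorm ff"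
proof (rule frechet_from_Q)
  show "Ss.bnd ff"
    unfolding Ss.bnd_def using lam_sc[OF zLam] lam_le_snorm[OF zLam]
    by (intro conjI allI ballI exI[of _ 1]) auto
  show "DS ff = 1" by (rule zS)
  show "\<And>\<epsilon>. \<epsilon> > 0 \<Longrightarrow> \<exists>\<delta>>0. \<forall>w w'. w \<in> SS \<longrightarrow> snorm w \<le> 1 \<longrightarrow> w' \<in> SS \<longrightarrow> snorm w' \<le> 1 \<longrightarrow>
              ff w \<ge> 1 - \<delta> \<longrightarrow> ff w' \<ge> 1 - \<delta> \<longrightarrow> snorm (sadd w (sscale (-1) w')) \<le> \<epsilon>"
    by (rule Q_cond)
qed

end

theorem lemma3p4:
  fixes Yset :: "nat \<Rightarrow> 'y::real_vector set"
    and N :: "nat \<Rightarrow> 'x::banach \<times> 'y \<Rightarrow> real"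
    and xs :: "'x \<Rightarrow> real" and \<alpha> :: "nat \<Rightarrow> real" and ys :: "nat \<Rightarrow> 'y \<Rightarrow> real"
  assumes Ysub: "\<And>k. subspace (Yset k)"
    and Nnorm: "\<And>k. is_norm_on (UNIV \<times> Yset k) (N k)"
    and Ycomplete: "\<And>k. complete_norm_on (Yset k) (Ynorm N k)"
    and NX: "\<And>k x. N k (x, 0) = norm x"
    and Nmono: "\<And>k x y. y \<in> Yset k \<Longrightarrow> N k (x, y) \<ge> norm x"
    and smooth: "\<And>k. dual_frechet_smooth (+) (*\<^sub>R) (UNIV \<times> Yset k) (N k)"
    and zLam: "in_Lambda Yset N xs \<alpha> ys"
    and zS: "dual_norm (SigmaSet Yset N) (sigma_norm Yset N) (lam_fun Yset N xs \<alpha> ys) = 1"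
    and xsmall: "onorm xs < 1"
  shows "frechet_diff_dual_norm sadd sscale (SigmaSet Yset N) (sigma_norm Yset N)
           (lam_fun Yset N xs \<alpha> ys)"
proof -
  interpret fset Yset N xs \<alpha> ys
    by unfold_locales (fact Ysub Nnorm NX Nmono smooth zLam zS xsmall)+
  show ?thesis by (rule main)
qed


end
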